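(* Let $G/P\hookrightarrow\mathbb P\mathfrak g$ be the adjoint variety of a complex simple Lie algebra $\mathfrak g$, with associated grading element $E$, and let $U$ be an irreducible $\mathfrak g$-representation of highest weight $\lambda$ (simple roots and fundamental weights $\omega_i$ numbered as in Bourbaki). Then $\lambda(E)=1$ if and only if $\lambda$ is among the following: (a) $\mathfrak g=\mathfrak{sl}_{r+1}\mathbb C$, $E=S^1+S^r$: $\lambda=\omega_i$ for any $1\le i\le r$ (so $U=\bigwedge^i\mathbb C^{r+1}$); (b) $\mathfrak g=\mathfrak{so}_{2r+1}\mathbb C$, $E=S^2$: $\lambda=\omega_1$ (standard representation) or $\lambda=\omega_r$ (spin representation); (c) $\mathfrak g=\mathfrak{sp}_{2r}\mathbb C$, $E=S^1$: $\lambda=\omega_i$ for any $1\le i\le r$; (d) $\mathfrak g=\mathfrak{so}_{2r}\mathbb C$, $E=S^2$: $\lambda=\omega_1$ (standard representation) or $\lambda=\omega_{r-1},\omega_r$ (spin representations); (e) $\mathfrak g=\mathfrak e_6$, $E=S^2$: $\lambda=\omega_1,\omega_6$; $\mathfrak g=\mathfrak e_7$, $E=S^1$: $\lambda=\omega_7$; for $\mathfrak g=\mathfrak e_8$, $E=S^8$, one has $\lambda(E)>1$ for all (nonzero) $\lambda$; (f) $\mathfrak g=\mathfrak f_4$, $E=S^1$: $\lambda=\omega_4$; (g) $\mathfrak g=\mathfrak g_2$, $E=S^2$: $\lambda=\omega_1$ ($U=\mathbb C^7$ the standard representation). Moreover, in each of these cases one also has $\lambda^*(E)=1$, where $\lambda^*$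 is the highest weight of the dual representation $U^*$.
   Context: The adjoint variety of $\mathfrak g$ is the $G$-orbit ($G$ the adjoint group) of the highest root line $[\mathfrak g^{\tilde\alpha}]\in\mathbb P\mathfrak g$, written $G/P$; its grading element is $E=\sum_{i\in I}S^i$ where $\tilde\alpha=\sum_{i\in I}\omega_i$ and $S^1,\dots,S^r$ is the basis of the Cartan subalgebra dual to the simple roots $\alpha_1,\dots,\alpha_r$ (i.e. $\alpha_i(S^j)=\delta_i^j$). *)

theory Defs
  imports Complex_Main
begin

text \<open>Simple Lie algebras are encoded by their Cartan type and rank, with the
Bourbaki numbering of simple roots.  Type E with rank 6, 7, 8 gives e6, e7, e8.\<close>

datatype ltype = TA | TB | TC | TD | TE | TF | TG

definition valid_type :: "ltype \<Rightarrow> nat \<Rightarrow> bool" where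
  "valid_type t r = (case t of
      TA \<Rightarrow> r \<ge> 2 | TB \<Rightarrow> r \<ge> 2 | TC \<Rightarrow> r \<ge> 2 | TD \<Rightarrow> r \<ge> 4
    | TE \<Rightarrow> r \<in> {6,7,8} | TF \<Rightarrow> r = 4 | TG \<Rightarrow> r = 2)"

definition adj :: "nat \<Rightarrow> nat \<Rightarrow> nat \<Rightarrow> nat \<Rightarrow> bool" where
  "adj a b i j = ((i = a \<and> j = b) \<or> (i = b \<and> j = a))"

text \<open>cartan t r i j is the Cartan integer < alpha_j , alpha_i^vee >
  (for 1 <= i, j <= r), Bourbaki numbering.\<close>
definition cartan :: "ltype \<Rightarrow> nat \<Rightarrow> nat \<Rightarrow> nat \<Rightarrow> int" where
  "cartan t r i j =
    (if i = j then 2 else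
     (case t of
        TA \<Rightarrow> (if i = j + 1 \<or> j = i + 1 then -1 else 0)
      | TB \<Rightarrow> (if i = r \<and> j = r - 1 then -2
               else if i = j + 1 \<or> j = i + 1 then -1 else 0)
      | TC \<Rightarrow> (if i = r - 1 \<and> j = r then -2
               else if i = j + 1 \<or> j = i + 1 then -1 else 0)
      | TD \<Rightarrow> (if ((i = j + 1 \<or> j = i + 1) \<and> i \<le> r - 1 \<and> j \<le> r - 1)
                  \<or> adj (r - 2) r i j then -1 else 0)
      | TE \<Rightarrow> (if adj 1 3 i j \<or> adj 3 4 i j \<or> adj 4 5 i j \<or> adj 5 6 i j
                  \<or> adj 6 7 i j \<or> adj 7 8 i j \<or> adj 2 4 i j then -1 else 0)
      | TF \<Rightarrow> (if i = 3 \<and> j = 2 then -2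
               else if adj 1 2 i j \<or> adj 2 3 i j \<or> adj 3 4 i j then -1 else 0)
      | TG \<Rightarrow> (if i = 1 \<and> j = 2 then -3
               else if i = 2 \<and> j = 1 then -1 else 0)))"

text \<open>Indicator vector: the simple root alpha_i in root coordinates, or the
  fundamental weight omega_i in Dynkin-label coordinates.\<close>
definition unitv :: "nat \<Rightarrow> nat \<Rightarrow> int" where
  "unitv i = (\<lambda>j. if j = i then 1 else 0)"

text \<open>Root system, in coordinates w.r.t. the simple roots: the orbit of the
  simple roots under the simple reflections
  s_i(beta) = beta - <beta, alpha_i^vee> alpha_i.\<close>
definition refl_root :: "ltype \<Rightarrow> nat \<Rightarrow> nat \<Rightarrow> (nat \<Rightarrow> int) \<Rightarrow> (nat \<Rightarrow> int)" where
  "refl_root t r i \<beta> =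
     (\<lambda>k. \<beta> k - (\<Sum>j\<in>{1..r}. \<beta> j * cartan t r i j) * unitv i k)"

inductive_set roots :: "ltype \<Rightarrow> nat \<Rightarrow> (nat \<Rightarrow> int) set" for t r where
  simple: "i \<in> {1..r} \<Longrightarrow> unitv i \<in> roots t r"
| refl: "\<beta> \<in> roots t r \<Longrightarrow> i \<in> {1..r} \<Longrightarrow> refl_root t r i \<beta> \<in> roots t r"

definition highest_root :: "ltype \<Rightarrow> nat \<Rightarrow> (nat \<Rightarrow> int)" where
  "highest_root t r = (THE \<theta>. \<theta> \<in> roots t r \<and> (\<forall>\<beta>\<in>roots t r. \<forall>j. \<beta> j \<le> \<theta> j))"

text \<open>Dynkin label < beta, alpha_i^vee > of an element given in root coordinates.\<close>
definition label :: "ltype \<Rightarrow> nat \<Rightarrow> (nat \<Rightarrow> int) \<Rightarrow> nat \<Rightarrow> int" where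
  "label t r \<beta> i = (\<Sum>j\<in>{1..r}. \<beta> j * cartan t r i j)"

text \<open>The index set I of the grading element E = sum_{i in I} S^i: the
  support of the highest root written in fundamental weights.\<close>
definition grading_set :: "ltype \<Rightarrow> nat \<Rightarrow> nat set" where
  "grading_set t r = {i \<in> {1..r}. label t r (highest_root t r) i \<noteq> 0}"

text \<open>Weights are given by their Dynkin labels (coefficients w.r.t. the
  fundamental weights).  Dominant integral weights = highest weights of
  irreducible finite-dimensional representations.\<close>
definition dominant :: "nat \<Rightarrow> (nat \<Rightarrow> int) \<Rightarrow> bool" where
  "dominant r c = (\<forall>i. (i \<in> {1..r} \<longrightarrow> c i \<ge> 0) \<and> (i \<notin> {1..r} \<longrightarrow> c i = 0))"

text \<open>Coordinates of a weight (given by Dynkin labels) w.r.t. the simple roots.\<close>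
definition root_coords :: "ltype \<Rightarrow> nat \<Rightarrow> (nat \<Rightarrow> int) \<Rightarrow> (nat \<Rightarrow> real)" where
  "root_coords t r c = (THE x. (\<forall>j. j \<notin> {1..r} \<longrightarrow> x j = 0) \<and>
      (\<forall>i\<in>{1..r}. (\<Sum>j\<in>{1..r}. x j * of_int (cartan t r i j)) = of_int (c i)))"

text \<open>lambda(E) = sum_{i in I} lambda(S^i), where lambda(S^i) is the
  alpha_i-coordinate of lambda.\<close>
definition eval_E :: "ltype \<Rightarrow> nat \<Rightarrow> (nat \<Rightarrow> int) \<Rightarrow> real" where
  "eval_E t r c = (\<Sum>i\<in>grading_set t r. root_coords t r c i)"

text \<open>Simple reflections on weights in Dynkin-label coordinates:
  s_i(mu) = mu - mu_i alpha_i, with (alpha_i)_k = < alpha_i, alpha_k^vee >.\<close>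
definition refl_wt :: "ltype \<Rightarrow> nat \<Rightarrow> nat \<Rightarrow> (nat \<Rightarrow> int) \<Rightarrow> (nat \<Rightarrow> int)" where
  "refl_wt t r i \<mu> = (\<lambda>k. \<mu> k - \<mu> i * (if k \<in> {1..r} then cartan t r k i else 0))"

inductive_set weyl_orbit :: "ltype \<Rightarrow> nat \<Rightarrow> (nat \<Rightarrow> int) \<Rightarrow> (nat \<Rightarrow> int) set"
  for t r \<mu> where
  base: "\<mu> \<in> weyl_orbit t r \<mu>"
| refl: "\<nu> \<in> weyl_orbit t r \<mu> \<Longrightarrow> i \<in> {1..r} \<Longrightarrow> refl_wt t r i \<nu> \<in> weyl_orbit t r \<mu>"

text \<open>Highest weight of the dual representation: lambda^* = - w_0 lambda,
  the unique dominant weight in the Weyl orbit of - lambda.\<close>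
definition dual_hw :: "ltype \<Rightarrow> nat \<Rightarrow> (nat \<Rightarrow> int) \<Rightarrow> (nat \<Rightarrow> int)" where
  "dual_hw t r c = (THE \<nu>. \<nu> \<in> weyl_orbit t r (\<lambda>k. - c k) \<and> dominant r \<nu>)"

definition expected_I :: "ltype \<Rightarrow> nat \<Rightarrow> nat set" where
  "expected_I t r = (case t of
      TA \<Rightarrow> {1, r} | TB \<Rightarrow> {2} | TC \<Rightarrow> {1} | TD \<Rightarrow> {2}
    | TE \<Rightarrow> (if r = 6 then {2} else if r = 7 then {1} else {8})
    | TF \<Rightarrow> {1} | TG \<Rightarrow> {2})"

definition listed :: "ltype \<Rightarrow> nat \<Rightarrow> (nat \<Rightarrow> int) \<Rightarrow> bool" where
  "listed t r c = (case t of
      TA \<Rightarrow> (\<exists>i\<in>{1..r}. c = unitv i)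
    | TB \<Rightarrow> c = unitv 1 \<or> c = unitv r
    | TC \<Rightarrow> (\<exists>i\<in>{1..r}. c = unitv i)
    | TD \<Rightarrow> c = unitv 1 \<or> c = unitv (r - 1) \<or> c = unitv r
    | TE \<Rightarrow> (if r = 6 then c = unitv 1 \<or> c = unitv 6
             else if r = 7 then c = unitv 7 else False)
    | TF \<Rightarrow> c = unitv 4
    | TG \<Rightarrow> c = unitv 1)"

end

theory Submission
  imports Defs
begin


lemma roots_supp: "\<beta> \<in> roots t r \<Longrightarrow> k \<notin> {1..r} \<Longrightarrow> \<beta> k = 0"
  by (induction rule: roots.induct) (auto simp: unitv_def refl_root_def)

lemma highest_root_eq:
  assumes "\<theta> \<in> roots t r" "\<And>\<beta> j. \<beta> \<in> roots t r \<Longrightarrow> \<beta> j \<le> \<theta> j"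
  shows "highest_root t r = \<theta>"
  unfolding highest_root_def
proof (rule the_equality)
  show "\<theta> \<in> roots t r \<and> (\<forall>\<beta>\<in>roots t r. \<forall>j. \<beta> j \<le> \<theta> j)" using assms by auto
next
  fix \<theta>' assume h: "\<theta>' \<in> roots t r \<and> (\<forall>\<beta>\<in>roots t r. \<forall>j. \<beta> j \<le> \<theta>' j)"
  show "\<theta>' = \<theta>"
  proof
    fix j show "\<theta>' j = \<theta> j" using h assms by (meson antisym)
  qed
qed

lemma root_coords_eq:
  fixes M :: "nat \<Rightarrow> nat \<Rightarrow> real"
  assumes CM: "\<And>i j. i \<in> {1..r} \<Longrightarrow> j \<in> {1..r} \<Longrightarrow>
      (\<Sum>k\<in>{1..r}. of_int (cartan t r i k) * M k j) = (if i = j then 1 else 0)"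
  and MC: "\<And>i j. i \<in> {1..r} \<Longrightarrow> j \<in> {1..r} \<Longrightarrow>
      (\<Sum>k\<in>{1..r}. M i k * of_int (cartan t r k j)) = (if i = j then 1 else 0)"
  shows "root_coords t r c = (\<lambda>j. if j \<in> {1..r} then \<Sum>k\<in>{1..r}. M j k * of_int (c k) else 0)"
  unfolding root_coords_def
proof (rule the_equality)
  let ?x = "(\<lambda>j. if j \<in> {1..r} then \<Sum>k\<in>{1..r}. M j k * of_int (c k) else 0)"
  have "(\<Sum>j\<in>{1..r}. ?x j * of_int (cartan t r i j)) = of_int (c i)" if i: "i \<in> {1..r}" for i
  proof -
    have "(\<Sum>j\<in>{1..r}. ?x j * of_int (cartan t r i j))
        = (\<Sum>j\<in>{1..r}. \<Sum>k\<in>{1..r}. of_int (cartan t r i j) * M j k * of_int (c k))"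
      by (simp add: sum_distrib_left sum_distrib_right mult.commute mult.left_commute)
    also have "\<dots> = (\<Sum>k\<in>{1..r}. (\<Sum>j\<in>{1..r}. of_int (cartan t r i j) * M j k) * of_int (c k))"
      by (subst sum.swap) (simp add: sum_distrib_right)
    also have "\<dots> = (\<Sum>k\<in>{1..r}. (if i = k then of_int (c k) else 0))"
      by (rule sum.cong) (use CM i in auto)
    also have "\<dots> = of_int (c i)" using i by simp
    finally show ?thesis .
  qed
  then show "(\<forall>j. j \<notin> {1..r} \<longrightarrow> ?x j = 0) \<and>
    (\<forall>i\<in>{1..r}. (\<Sum>j\<in>{1..r}. ?x j * of_int (cartan t r i j)) = of_int (c i))" by auto
next
  fix x :: "nat \<Rightarrow> real"
  assume h: "(\<forall>j. j \<notin> {1..r} \<longrightarrow> x j = 0) \<and>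
    (\<forall>i\<in>{1..r}. (\<Sum>j\<in>{1..r}. x j * of_int (cartan t r i j)) = of_int (c i))"
  show "x = (\<lambda>j. if j \<in> {1..r} then \<Sum>k\<in>{1..r}. M j k * of_int (c k) else 0)"
  proof
    fix j
    show "x j = (if j \<in> {1..r} then \<Sum>k\<in>{1..r}. M j k * of_int (c k) else 0)"
    proof (cases "j \<in> {1..r}")
      case False then show ?thesis using h by auto
    next
      case True
      have "(\<Sum>k\<in>{1..r}. M j k * of_int (c k))
          = (\<Sum>k\<in>{1..r}. M j k * (\<Sum>l\<in>{1..r}. x l * of_int (cartan t r k l)))"
        using h by simp
      also have "\<dots> = (\<Sum>l\<in>{1..r}. (\<Sum>k\<in>{1..r}. M j k * of_int (cartan t r k l)) * x l)"
        by (simp add: sum_distrib_left sum_distrib_right mult.commute mult.left_commute)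
           (rule sum.swap)
      also have "\<dots> = (\<Sum>l\<in>{1..r}. (if j = l then x l else 0))"
        by (rule sum.cong) (use MC True in auto)
      also have "\<dots> = x j" using True by simp
      finally show ?thesis using True by simp
    qed
  qed
qed

lemma eval_E_eq:
  fixes M :: "nat \<Rightarrow> nat \<Rightarrow> real"
  assumes "root_coords t r c = (\<lambda>j. if j \<in> {1..r} then \<Sum>k\<in>{1..r}. M j k * of_int (c k) else 0)"
  shows "eval_E t r c = (\<Sum>k\<in>{1..r}. (\<Sum>i\<in>grading_set t r. M i k) * of_int (c k))"
proof -
  have G: "grading_set t r \<subseteq> {1..r}" unfolding grading_set_def by auto
  have "eval_E t r c = (\<Sum>i\<in>grading_set t r. \<Sum>k\<in>{1..r}. M i k * of_int (c k))"
    unfolding eval_E_def assms using G by (intro sum.cong) auto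
  also have "\<dots> = (\<Sum>k\<in>{1..r}. (\<Sum>i\<in>grading_set t r. M i k) * of_int (c k))"
    by (subst sum.swap) (simp add: sum_distrib_right)
  finally show ?thesis .
qed

lemma sum_unitv: "k \<in> {1..r} \<Longrightarrow> (\<Sum>j\<in>{1..r}. m j * of_int (unitv k j)) = (m k :: real)"
proof -
  assume k: "k \<in> {1..r}"
  have "(\<Sum>j\<in>{1..r}. m j * of_int (unitv k j)) = (\<Sum>j\<in>{1..r}. if j = k then m j else 0)"
    by (intro sum.cong) (auto simp: unitv_def)
  then show ?thesis using k by simp
qed

lemma eval_iff:
  fixes m :: "nat \<Rightarrow> real"
  assumes dom: "dominant r c" and m1: "\<And>k. k \<in> {1..r} \<Longrightarrow> m k \<ge> 1"
  shows "(\<Sum>k\<in>{1..r}. m k * of_int (c k)) = 1 \<longleftrightarrow> (\<exists>k\<in>{1..r}. c = unitv k \<and> m k = 1)"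
proof
  assume S: "(\<Sum>k\<in>{1..r}. m k * of_int (c k)) = 1"
  have cnn: "\<And>k. k \<in> {1..r} \<Longrightarrow> c k \<ge> 0" and cz: "\<And>k. k \<notin> {1..r} \<Longrightarrow> c k = 0"
    using dom unfolding dominant_def by auto
  have "(\<Sum>k\<in>{1..r}. of_int (c k)) \<le> (\<Sum>k\<in>{1..r}. m k * of_int (c k) :: real)"
  proof (rule sum_mono)
    fix k assume k: "k \<in> {1..r}"
    have "1 * of_int (c k) \<le> m k * (of_int (c k) :: real)"
      by (rule mult_right_mono) (use m1[OF k] cnn[OF k] in auto)
    then show "of_int (c k) \<le> m k * (of_int (c k) :: real)" by simp
  qed
  then have "real_of_int (\<Sum>k\<in>{1..r}. c k) \<le> 1" using S by simp
  then have sc: "(\<Sum>k\<in>{1..r}. c k) \<le> 1" by linarith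
  have "\<exists>k\<in>{1..r}. c k \<noteq> 0"
  proof (rule ccontr)
    assume "\<not> ?thesis" then have "(\<Sum>k\<in>{1..r}. m k * of_int (c k)) = 0" by simp
    with S show False by simp
  qed
  then obtain k where k: "k \<in> {1..r}" "c k \<noteq> 0" by blast
  have le: "c j + c l \<le> (\<Sum>k\<in>{1..r}. c k)" if "j \<in> {1..r}" "l \<in> {1..r}" "j \<noteq> l" for j l
  proof -
    have "(\<Sum>k\<in>{j,l}. c k) \<le> (\<Sum>k\<in>{1..r}. c k)"
      by (rule sum_mono2) (use that cnn in auto)
    then show ?thesis using that by simp
  qed
  have "c k \<le> (\<Sum>k\<in>{1..r}. c k)" by (rule member_le_sum) (use k cnn in auto)
  then have ck: "c k = 1" using k cnn[of k] sc by linarith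
  have cu: "c = unitv k"
  proof
    fix j show "c j = unitv k j"
    proof (cases "j \<in> {1..r}")
      case False then show ?thesis using cz k by (auto simp: unitv_def)
    next
      case True then show ?thesis using le[of j k] ck cnn[of j] sc k by (auto simp: unitv_def)
    qed
  qed
  then show "\<exists>k\<in>{1..r}. c = unitv k \<and> m k = 1" using S k sum_unitv[of k r m] by auto
next
  assume "\<exists>k\<in>{1..r}. c = unitv k \<and> m k = 1"
  then show "(\<Sum>k\<in>{1..r}. m k * of_int (c k)) = 1" using sum_unitv by auto
qed

lemma eval_gt:
  fixes m :: "nat \<Rightarrow> real"
  assumes dom: "dominant r c" and m2: "\<And>k. k \<in> {1..r} \<Longrightarrow> m k \<ge> 2" and nz: "c \<noteq> (\<lambda>_. 0)"
  shows "(\<Sum>k\<in>{1..r}. m k * of_int (c k)) > 1"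
proof -
  have cnn: "\<And>k. k \<in> {1..r} \<Longrightarrow> c k \<ge> 0" and cz: "\<And>k. k \<notin> {1..r} \<Longrightarrow> c k = 0"
    using dom unfolding dominant_def by auto
  obtain k where "c k \<noteq> 0" using nz by auto
  then have k1: "k \<in> {1..r}" using cz by auto
  then have k: "k \<in> {1..r}" "c k \<ge> 1" using cnn[OF k1] \<open>c k \<noteq> 0\<close> by auto
  have "m k * of_int (c k) \<le> (\<Sum>k\<in>{1..r}. m k * of_int (c k))"
    proof (rule member_le_sum)
    fix x assume "x \<in> {1..r} - {k}"
    then show "0 \<le> m x * of_int (c x)" using m2[of x] cnn[of x] by (auto intro!: mult_nonneg_nonneg)
  qed (use k in auto)
  moreover have "m k * of_int (c k) \<ge> 2 * 1"
    by (rule mult_mono) (use k m2[of k] in auto)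
  ultimately show ?thesis by linarith
qed

lemma weyl_orbit_supp:
  assumes "\<nu> \<in> weyl_orbit t r \<mu>" "\<And>k. k \<notin> {1..r} \<Longrightarrow> \<mu> k = 0" "k \<notin> {1..r}"
  shows "\<nu> k = 0"
  using assms by (induction rule: weyl_orbit.induct) (auto simp: refl_wt_def)

lemma dual_hw_eq:
  fixes w :: "nat \<Rightarrow> real"
  assumes w: "\<And>i. i \<in> {1..r} \<Longrightarrow> (\<Sum>k\<in>{1..r}. w k * of_int (cartan t r k i)) > 0"
    and S0: "(\<lambda>k. - c k) \<in> S"
    and Sc: "\<And>\<mu> i. \<mu> \<in> S \<Longrightarrow> i \<in> {1..r} \<Longrightarrow> refl_wt t r i \<mu> \<in> S"
    and fin: "finite S"
    and uniq: "\<And>\<nu>. \<nu> \<in> S \<Longrightarrow> dominant r \<nu> \<Longrightarrow> \<nu> = \<nu>0"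
    and cz: "\<And>k. k \<notin> {1..r} \<Longrightarrow> c k = 0"
  shows "dual_hw t r c = \<nu>0"
proof -
  let ?O = "weyl_orbit t r (\<lambda>k. - c k)"
  have OS: "?O \<subseteq> S"
  proof
    fix \<nu> assume "\<nu> \<in> ?O" then show "\<nu> \<in> S"
      by (induction rule: weyl_orbit.induct) (use S0 Sc in auto)
  qed
  have finO: "finite ?O" using OS fin finite_subset by blast
  have neO: "(\<lambda>k. - c k) \<in> ?O" by (rule weyl_orbit.base)
  let ?h = "\<lambda>\<nu>. (\<Sum>k\<in>{1..r}. w k * of_int (\<nu> k))"
  have "Max (?h ` ?O) \<in> ?h ` ?O" using finO neO by (intro Max_in) auto
  then obtain \<nu> where \<nu>1: "\<nu> \<in> ?O" "?h \<nu> = Max (?h ` ?O)" by auto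
  have \<nu>: "\<nu> \<in> ?O" "\<And>\<mu>. \<mu> \<in> ?O \<Longrightarrow> ?h \<mu> \<le> ?h \<nu>"
    using \<nu>1 finO by auto
  have domn: "dominant r \<nu>"
    unfolding dominant_def
  proof (intro allI conjI impI)
    fix i assume i: "i \<in> {1..r}"
    show "0 \<le> \<nu> i"
    proof (rule ccontr)
      assume neg: "\<not> 0 \<le> \<nu> i"
      have mem: "refl_wt t r i \<nu> \<in> ?O" using \<nu>(1) i by (rule weyl_orbit.refl)
      have "?h (refl_wt t r i \<nu>) = ?h \<nu> - of_int (\<nu> i) * (\<Sum>k\<in>{1..r}. w k * of_int (cartan t r k i))"
        by (simp add: refl_wt_def algebra_simps sum_subtractf sum_distrib_left)
      moreover have "of_int (\<nu> i) * (\<Sum>k\<in>{1..r}. w k * of_int (cartan t r k i)) < 0"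
        using neg w[OF i] by (simp add: mult_neg_pos)
      ultimately have "?h (refl_wt t r i \<nu>) > ?h \<nu>" by linarith
      with \<nu>(2)[OF mem] show False by linarith
    qed
  next
    fix i assume "i \<notin> {1..r}"
    then show "\<nu> i = 0" using weyl_orbit_supp[OF \<nu>(1)] cz by auto
  qed
  have eq: "\<nu> = \<nu>0" using uniq domn OS \<nu>(1) by auto
  show ?thesis unfolding dual_hw_def
  proof (rule the_equality)
    show "\<nu>0 \<in> ?O \<and> dominant r \<nu>0" using eq \<nu>(1) domn by simp
  next
    fix \<nu>' assume "\<nu>' \<in> ?O \<and> dominant r \<nu>'" then show "\<nu>' = \<nu>0" using uniq OS by auto
  qed
qed

lemma w_from_M:
  fixes M :: "nat \<Rightarrow> nat \<Rightarrow> real"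
  assumes MC: "\<And>i j. i \<in> {1..r} \<Longrightarrow> j \<in> {1..r} \<Longrightarrow>
      (\<Sum>k\<in>{1..r}. M i k * of_int (cartan t r k j)) = (if i = j then 1 else 0)"
    and j: "j \<in> {1..r}"
  shows "(\<Sum>k\<in>{1..r}. (\<Sum>i\<in>{1..r}. M i k) * of_int (cartan t r k j)) > 0"
proof -
  have "(\<Sum>k\<in>{1..r}. (\<Sum>i\<in>{1..r}. M i k) * of_int (cartan t r k j))
     = (\<Sum>i\<in>{1..r}. \<Sum>k\<in>{1..r}. M i k * of_int (cartan t r k j))"
    by (subst sum.swap) (simp add: sum_distrib_right)
  also have "\<dots> = (\<Sum>i\<in>{1..r}. if i = j then 1 else 0)" using MC j by (intro sum.cong) auto
  also have "\<dots> = 1" using j by simp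
  finally show ?thesis by simp
qed


lemma finish:
  fixes m :: "nat \<Rightarrow> real"
  assumes g: "grading_set t r = expected_I t r"
    and ev: "\<And>c. eval_E t r c = (\<Sum>k\<in>{1..r}. m k * of_int (c k))"
    and m1: "\<And>k. k \<in> {1..r} \<Longrightarrow> m k \<ge> 1"
    and lst: "\<And>c. listed t r c \<longleftrightarrow> (\<exists>k\<in>{1..r}. c = unitv k \<and> m k = 1)"
    and du: "\<And>k. k \<in> {1..r} \<Longrightarrow> m k = 1 \<Longrightarrow> (\<exists>k'\<in>{1..r}. m k' = 1 \<and> dual_hw t r (unitv k) = unitv k')"
    and e8: "t = TE \<and> r = 8 \<Longrightarrow> (\<forall>k\<in>{1..r}. m k \<ge> 2)"
    and dom: "dominant r c"
  shows "grading_set t r = expected_I t r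
    \<and> (eval_E t r c = 1 \<longleftrightarrow> listed t r c)
    \<and> (listed t r c \<longrightarrow> eval_E t r (dual_hw t r c) = 1)
    \<and> (t = TE \<and> r = 8 \<and> c \<noteq> (\<lambda>_. 0) \<longrightarrow> eval_E t r c > 1)"
proof (intro conjI impI)
  show "grading_set t r = expected_I t r" by (rule g)
  show "eval_E t r c = 1 \<longleftrightarrow> listed t r c" unfolding ev lst by (rule eval_iff[OF dom m1])
  show "eval_E t r (dual_hw t r c) = 1" if L: "listed t r c"
  proof -
    obtain k where k: "k \<in> {1..r}" "c = unitv k" "m k = 1" using L lst by auto
    obtain k' where k': "k' \<in> {1..r}" "m k' = 1" "dual_hw t r (unitv k) = unitv k'" using du[OF k(1,3)] by auto
    show ?thesis unfolding ev k(2) k'(3) using sum_unitv[OF k'(1), of m] k'(2) by simp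
  qed
  show "eval_E t r c > 1" if "t = TE \<and> r = 8 \<and> c \<noteq> (\<lambda>_. 0)"
    unfolding ev using eval_gt[OF dom _, of m] e8 that by auto
qed



lemma sum_deltas:
  fixes f :: "nat \<Rightarrow> 'a::comm_ring_1"
  assumes i: "i \<in> {1..r}"
    and g: "\<And>k. k \<in> {1..r} \<Longrightarrow> g k = (if k = i then x else 0) + (if k = Suc i then y else 0)
         + (if Suc k = i then z else 0) + (if k = p then u else 0) + (if k = q then v else 0)"
  shows "(\<Sum>k\<in>{1..r}. f k * g k) = x * f i + (if i < r then y * f (Suc i) else 0)
      + (if 2 \<le> i then z * f (i - 1) else 0) + (if p \<in> {1..r} then u * f p else 0)
      + (if q \<in> {1..r} then v * f q else 0)"
proof -
  have e: "Suc k = i \<longleftrightarrow> k = i - 1" for k using i by auto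
  have "(\<Sum>k\<in>{1..r}. f k * g k) = (\<Sum>k\<in>{1..r}. (if k = i then x * f k else 0) + (if k = Suc i then y * f k else 0)
         + (if k = i - 1 then z * f k else 0) + (if k = p then u * f k else 0) + (if k = q then v * f k else 0))"
  proof (rule sum.cong[OF HOL.refl])
    fix k assume k: "k \<in> {1..r}"
    show "f k * g k = (if k = i then x * f k else 0) + (if k = Suc i then y * f k else 0)
         + (if k = i - 1 then z * f k else 0) + (if k = p then u * f k else 0) + (if k = q then v * f k else 0)"
      unfolding g[OF k] e by (simp add: distrib_left mult.commute)
  qed
  also have "\<dots> = x * f i + (if i < r then y * f (Suc i) else 0)
      + (if 2 \<le> i then z * f (i - 1) else 0) + (if p \<in> {1..r} then u * f p else 0)
      + (if q \<in> {1..r} then v * f q else 0)"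
    using i by (auto simp: sum.distrib mult.commute)
  finally show ?thesis .
qed


lemma cartan_A: "k \<in> {1..r} \<Longrightarrow> (of_int (cartan TA r i k) :: 'a::comm_ring_1) =
   (if k = i then 2 else 0) + (if k = Suc i then -1 else 0) + (if Suc k = i then -1 else 0)
   + (if k = 0 then 0 else 0) + (if k = 0 then 0 else 0)"
  unfolding cartan_def by auto

lemma cartan_B: "k \<in> {1..r} \<Longrightarrow> (of_int (cartan TB r i k) :: 'a::comm_ring_1) =
   (if k = i then 2 else 0) + (if k = Suc i then -1 else 0) + (if Suc k = i then (if i = r then -2 else -1) else 0)
   + (if k = 0 then 0 else 0) + (if k = 0 then 0 else 0)"
  unfolding cartan_def by auto

lemma cartan_B_col: "k \<in> {1..r} \<Longrightarrow> (of_int (cartan TB r k i) :: 'a::comm_ring_1) =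
   (if k = i then 2 else 0) + (if k = Suc i then (if Suc i = r then -2 else -1) else 0) + (if Suc k = i then -1 else 0)
   + (if k = 0 then 0 else 0) + (if k = 0 then 0 else 0)"
  unfolding cartan_def by auto

lemma cartan_C: "k \<in> {1..r} \<Longrightarrow> (of_int (cartan TC r i k) :: 'a::comm_ring_1) =
   (if k = i then 2 else 0) + (if k = Suc i then (if i = r - 1 then -2 else -1) else 0) + (if Suc k = i then -1 else 0)
   + (if k = 0 then 0 else 0) + (if k = 0 then 0 else 0)"
  unfolding cartan_def by auto

lemma cartan_C_col: "k \<in> {1..r} \<Longrightarrow> (of_int (cartan TC r k i) :: 'a::comm_ring_1) =
   (if k = i then 2 else 0) + (if k = Suc i then -1 else 0) + (if Suc k = i then (if i = r then -2 else -1) else 0)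
   + (if k = 0 then 0 else 0) + (if k = 0 then 0 else 0)"
  unfolding cartan_def by auto

lemma cartan_D: "r \<ge> 4 \<Longrightarrow> k \<in> {1..r} \<Longrightarrow> i \<in> {1..r} \<Longrightarrow> (of_int (cartan TD r i k) :: 'a::comm_ring_1) =
   (if k = i then 2 else 0) + (if k = Suc i then (if Suc i \<le> r - 1 then -1 else 0) else 0)
   + (if Suc k = i then (if i \<le> r - 1 then -1 else 0) else 0)
   + (if k = r then (if i = r - 2 then -1 else 0) else 0) + (if k = r - 2 then (if i = r then -1 else 0) else 0)"
  unfolding cartan_def adj_def by auto

lemma cartan_D_sym: "cartan TD r i k = cartan TD r k i"
  unfolding cartan_def adj_def by auto

lemma cartan_A_sym: "cartan TA r i k = cartan TA r k i"
  unfolding cartan_def by auto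

lemma row_A: "i \<in> {1..r} \<Longrightarrow> (\<Sum>k\<in>{1..r}. f k * of_int (cartan TA r i k)) =
    2 * f i - (if i < r then f (Suc i) else 0) - (if 2 \<le> i then f (i - 1) else (0::'a::comm_ring_1))"
  by (subst sum_deltas[where x=2 and y="-1" and z="-1" and p=0 and u=0 and q=0 and v=0]) (auto simp: cartan_A)

lemma col_A: "i \<in> {1..r} \<Longrightarrow> (\<Sum>k\<in>{1..r}. f k * of_int (cartan TA r k i)) =
    2 * f i - (if i < r then f (Suc i) else 0) - (if 2 \<le> i then f (i - 1) else (0::'a::comm_ring_1))"
  using row_A[of i r f] by (simp add: cartan_A_sym)

lemma row_B: "i \<in> {1..r} \<Longrightarrow> (\<Sum>k\<in>{1..r}. f k * of_int (cartan TB r i k)) =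
    2 * f i - (if i < r then f (Suc i) else 0) - (if 2 \<le> i then (if i = r then 2 else 1) * f (i - 1) else (0::'a::comm_ring_1))"
  by (subst sum_deltas[where x=2 and y="-1" and z="if i = r then -2 else -1" and p=0 and u=0 and q=0 and v=0]) (auto simp: cartan_B)

lemma col_B: "i \<in> {1..r} \<Longrightarrow> (\<Sum>k\<in>{1..r}. f k * of_int (cartan TB r k i)) =
    2 * f i - (if i < r then (if Suc i = r then 2 else 1) * f (Suc i) else 0) - (if 2 \<le> i then f (i - 1) else (0::'a::comm_ring_1))"
  by (subst sum_deltas[where x=2 and y="if Suc i = r then -2 else -1" and z="-1" and p=0 and u=0 and q=0 and v=0]) (auto simp: cartan_B_col)

lemma row_C: "i \<in> {1..r} \<Longrightarrow> (\<Sum>k\<in>{1..r}. f k * of_int (cartan TC r i k)) =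
    2 * f i - (if i < r then (if i = r - 1 then 2 else 1) * f (Suc i) else 0) - (if 2 \<le> i then f (i - 1) else (0::'a::comm_ring_1))"
  by (subst sum_deltas[where x=2 and y="if i = r - 1 then -2 else -1" and z="-1" and p=0 and u=0 and q=0 and v=0]) (auto simp: cartan_C)

lemma col_C: "i \<in> {1..r} \<Longrightarrow> (\<Sum>k\<in>{1..r}. f k * of_int (cartan TC r k i)) =
    2 * f i - (if i < r then f (Suc i) else 0) - (if 2 \<le> i then (if i = r then 2 else 1) * f (i - 1) else (0::'a::comm_ring_1))"
  by (subst sum_deltas[where x=2 and y="-1" and z="if i = r then -2 else -1" and p=0 and u=0 and q=0 and v=0]) (auto simp: cartan_C_col)

lemma row_D: "r \<ge> 4 \<Longrightarrow> i \<in> {1..r} \<Longrightarrow> (\<Sum>k\<in>{1..r}. f k * of_int (cartan TD r i k)) =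
    2 * f i - (if Suc i \<le> r - 1 then f (Suc i) else 0) - (if 2 \<le> i \<and> i \<le> r - 1 then f (i - 1) else 0)
    - (if i = r - 2 then f r else 0) - (if i = r then f (r - 2) else (0::'a::comm_ring_1))"
  by (subst sum_deltas[where x=2 and y="if Suc i \<le> r - 1 then -1 else 0" and z="if i \<le> r - 1 then -1 else 0"
        and p=r and u="if i = r - 2 then -1 else 0" and q="r-2" and v="if i = r then -1 else 0"]) (auto simp: cartan_D)

lemma col_D: "r \<ge> 4 \<Longrightarrow> i \<in> {1..r} \<Longrightarrow> (\<Sum>k\<in>{1..r}. f k * of_int (cartan TD r k i)) =
    2 * f i - (if Suc i \<le> r - 1 then f (Suc i) else 0) - (if 2 \<le> i \<and> i \<le> r - 1 then f (i - 1) else 0)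
    - (if i = r - 2 then f r else 0) - (if i = r then f (r - 2) else (0::'a::comm_ring_1))"
  using row_D[of r i f] by (simp add: cartan_D_sym)



definition MA :: "nat \<Rightarrow> nat \<Rightarrow> nat \<Rightarrow> real" where
  "MA r i j = real (min i j) * (real r + 1 - real (max i j)) / (real r + 1)"

definition MB :: "nat \<Rightarrow> nat \<Rightarrow> nat \<Rightarrow> real" where
  "MB r i j = (if j = r then real i / 2 else real (min i j))"

definition MC :: "nat \<Rightarrow> nat \<Rightarrow> nat \<Rightarrow> real" where
  "MC r i j = (if i = r then real j / 2 else real (min i j))"

definition MD :: "nat \<Rightarrow> nat \<Rightarrow> nat \<Rightarrow> real" where
  "MD r i j = (if i \<le> r - 2 \<and> j \<le> r - 2 then real (min i j) else if i \<le> r - 2 then real i / 2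
     else if j \<le> r - 2 then real j / 2 else if i = j then real r / 4 else (real r - 2) / 4)"

lemma MA_le: "a \<le> j \<Longrightarrow> MA r a j = real a * ((real r + 1 - real j) / (real r + 1))"
  by (simp add: MA_def min_def max_def)

lemma MA_ge: "j \<le> a \<Longrightarrow> MA r a j = real j / (real r + 1) * (real r + 1 - real a)"
  by (simp add: MA_def min_def max_def)

lemma MA_sym: "MA r i j = MA r j i"
  by (simp add: MA_def min.commute max.commute)

lemma CM_A: assumes "i \<in> {1..r}" "j \<in> {1..r}"
  shows "(\<Sum>k\<in>{1..r}. MA r k j * of_int (cartan TA r i k)) = (if i = j then 1 else 0)"
proof -
  have "(\<Sum>k\<in>{1..r}. MA r k j * of_int (cartan TA r i k)) =
     2 * MA r i j - (if i < r then MA r (Suc i) j else 0) - (if 2 \<le> i then MA r (i - 1) j else 0)"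
    by (rule row_A[OF assms(1)])
  also have "\<dots> = (if i = j then 1 else 0)"
  proof -
    have r: "real r + 1 > 0" by simp
    consider "i < j" | "i = j" | "j < i" by arith
    then show ?thesis
    proof cases
      case 1
      define K where "K = (real r + 1 - real j) / (real r + 1)"
      have e1: "MA r i j = real i * K" using 1 by (simp add: MA_le K_def)
      have e2: "(if i < r then MA r (Suc i) j else 0) = real (Suc i) * K" using 1 assms by (simp add: MA_le K_def)
      have e3: "(if 2 \<le> i then MA r (i - 1) j else 0) = (real i - 1) * K"
        using 1 assms by (cases "2 \<le> i") (auto simp: MA_le K_def of_nat_diff)
      show ?thesis unfolding e1 e2 e3 using 1 by (simp add: algebra_simps)
    next
      case 2
      have e1: "MA r i j = real j * (real r + 1 - real j) / (real r + 1)" using 2 by (simp add: MA_le)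
      have e2: "(if i < r then MA r (Suc i) j else 0) = real j * (real r - real j) / (real r + 1)"
        using 2 assms by (auto simp: MA_ge)
      have e3: "(if 2 \<le> i then MA r (i - 1) j else 0) = (real j - 1) * (real r + 1 - real j) / (real r + 1)"
        using 2 assms by (cases "2 \<le> i") (auto simp: MA_le of_nat_diff)
      have num: "2 * (real j * (real r + 1 - real j)) - real j * (real r - real j) - (real j - 1) * (real r + 1 - real j) = real r + 1"
        by (simp add: algebra_simps)
      have "2 * (real j * (real r + 1 - real j) / (real r + 1)) - real j * (real r - real j) / (real r + 1)
          - (real j - 1) * (real r + 1 - real j) / (real r + 1)
         = (2 * (real j * (real r + 1 - real j)) - real j * (real r - real j) - (real j - 1) * (real r + 1 - real j)) / (real r + 1)"
        by (simp add: diff_divide_distrib)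
      also have "\<dots> = 1" using num r by simp
      finally show ?thesis unfolding e1 e2 e3 using 2 by simp
    next
      case 3
      define K where "K = real j / (real r + 1)"
      have e1: "MA r i j = K * (real r + 1 - real i)" using 3 by (simp add: MA_ge K_def)
      have e2: "(if i < r then MA r (Suc i) j else 0) = K * (real r - real i)" using 3 assms
        by (auto simp: MA_ge K_def)
      have e3: "(if 2 \<le> i then MA r (i - 1) j else 0) = K * (real r + 2 - real i)"
        using 3 assms by (auto simp: MA_ge K_def of_nat_diff)
      show ?thesis unfolding e1 e2 e3 using 3 by (simp add: algebra_simps)
    qed
  qed
  finally show ?thesis .
qed

lemma MC_A: assumes "i \<in> {1..r}" "j \<in> {1..r}"
  shows "(\<Sum>k\<in>{1..r}. MA r i k * of_int (cartan TA r k j)) = (if i = j then 1 else 0)"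
proof -
  have "(\<Sum>k\<in>{1..r}. MA r i k * of_int (cartan TA r k j)) = (\<Sum>k\<in>{1..r}. MA r k i * of_int (cartan TA r j k))"
    by (simp add: MA_sym cartan_A_sym)
  also have "\<dots> = (if j = i then 1 else 0)" by (rule CM_A[OF assms(2,1)])
  finally show ?thesis by auto
qed


lemmas ds = add_divide_distrib diff_divide_distrib
lemma CM_B: assumes "i \<in> {1..r}" "j \<in> {1..r}"
  shows "(\<Sum>k\<in>{1..r}. MB r k j * of_int (cartan TB r i k)) = (if i = j then 1 else 0)"
  unfolding row_B[OF assms(1)] using assms
  by (auto simp: MB_def min_def of_nat_diff ds)

lemma MC_B: assumes "i \<in> {1..r}" "j \<in> {1..r}"
  shows "(\<Sum>k\<in>{1..r}. MB r i k * of_int (cartan TB r k j)) = (if i = j then 1 else 0)"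
  unfolding col_B[OF assms(2)] using assms
  by (auto simp: MB_def min_def of_nat_diff ds)

lemma CM_C: assumes "i \<in> {1..r}" "j \<in> {1..r}"
  shows "(\<Sum>k\<in>{1..r}. MC r k j * of_int (cartan TC r i k)) = (if i = j then 1 else 0)"
  unfolding row_C[OF assms(1)] using assms
  by (auto simp: MC_def min_def of_nat_diff ds)

lemma MC_C: assumes "i \<in> {1..r}" "j \<in> {1..r}"
  shows "(\<Sum>k\<in>{1..r}. MC r i k * of_int (cartan TC r k j)) = (if i = j then 1 else 0)"
  unfolding col_C[OF assms(2)] using assms
  by (auto simp: MC_def min_def of_nat_diff ds)
lemma MD_ll: "i \<le> r - 2 \<Longrightarrow> j \<le> r - 2 \<Longrightarrow> MD r i j = real (min i j)" by (simp add: MD_def)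
lemma MD_lh: "i \<le> r - 2 \<Longrightarrow> \<not> j \<le> r - 2 \<Longrightarrow> MD r i j = real i / 2" by (simp add: MD_def)
lemma MD_hl: "\<not> i \<le> r - 2 \<Longrightarrow> j \<le> r - 2 \<Longrightarrow> MD r i j = real j / 2" by (simp add: MD_def)
lemma MD_hh: "\<not> i \<le> r - 2 \<Longrightarrow> \<not> j \<le> r - 2 \<Longrightarrow> MD r i j = (if i = j then real r / 4 else (real r - 2) / 4)"
  by (simp add: MD_def)

lemma CM_D: assumes r4: "r \<ge> 4" and ij: "i \<in> {1..r}" "j \<in> {1..r}"
  shows "(\<Sum>k\<in>{1..r}. MD r k j * of_int (cartan TD r i k)) = (if i = j then 1 else 0)"
proof -
  have R: "(\<Sum>k\<in>{1..r}. MD r k j * of_int (cartan TD r i k)) =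
    2 * MD r i j - (if Suc i \<le> r - 1 then MD r (Suc i) j else 0) - (if 2 \<le> i \<and> i \<le> r - 1 then MD r (i - 1) j else 0)
    - (if i = r - 2 then MD r r j else 0) - (if i = r then MD r (r - 2) j else 0)"
    by (rule row_D[OF r4 ij(1)])
  consider (a) "i < r - 2" | (b) "i = r - 2" | (c) "i = r - 1" | (d) "i = r" using ij by fastforce
  then show ?thesis
  proof cases
    case a
    have R2: "(\<Sum>k\<in>{1..r}. MD r k j * of_int (cartan TD r i k)) =
       2 * MD r i j - MD r (Suc i) j - (if 2 \<le> i then MD r (i - 1) j else 0)"
      unfolding R using a r4 by auto
    show ?thesis
    proof (cases "j \<le> r - 2")
      case True
      show ?thesis unfolding R2 using a True ij
        by (auto simp: MD_ll min_def of_nat_diff)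
    next
      case False
      show ?thesis unfolding R2 using a False ij
        by (auto simp: MD_lh of_nat_diff ds)
    qed
  next
    case b
    have R2: "(\<Sum>k\<in>{1..r}. MD r k j * of_int (cartan TD r i k)) =
       2 * MD r (r - 2) j - MD r (r - 1) j - MD r (r - 3) j - MD r r j"
    proof -
      have e: "Suc (r - 2) = r - 1" "r - 2 - 1 = r - 3" using r4 by auto
      show ?thesis unfolding R unfolding b e using r4 by auto
    qed
    have n: "\<not> r - 1 \<le> r - 2" "\<not> r \<le> r - 2" "r - 3 \<le> r - 2" "r - 2 \<le> r - 2" using r4 by auto
    consider "j \<le> r - 2" | "j = r - 1" | "j = r" using ij by fastforce
    then show ?thesis
    proof cases
      case 1 then show ?thesis unfolding R2 MD_hl[OF n(1) 1] MD_hl[OF n(2) 1] MD_ll[OF n(3) 1] MD_ll[OF n(4) 1]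
        using b r4 by (auto simp: min_def of_nat_diff)
    next
      case 2
      have m: "\<not> j \<le> r - 2" using 2 r4 by auto
      show ?thesis unfolding R2 MD_hh[OF n(1) m] MD_hh[OF n(2) m] MD_lh[OF n(3) m] MD_lh[OF n(4) m]
        using b r4 2 by (auto simp: of_nat_diff ds)
    next
      case 3
      have m: "\<not> j \<le> r - 2" using 3 r4 by auto
      show ?thesis unfolding R2 MD_hh[OF n(1) m] MD_hh[OF n(2) m] MD_lh[OF n(3) m] MD_lh[OF n(4) m]
        using b r4 3 by (auto simp: of_nat_diff ds)
    qed
  next
    case c
    have R2: "(\<Sum>k\<in>{1..r}. MD r k j * of_int (cartan TD r i k)) = 2 * MD r (r - 1) j - MD r (r - 2) j"
    proof -
      have e: "r - 1 - 1 = r - 2" using r4 by auto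
      show ?thesis unfolding R unfolding c e using r4 by auto
    qed
    have n: "\<not> r - 1 \<le> r - 2" "r - 2 \<le> r - 2" using r4 by auto
    consider "j \<le> r - 2" | "j = r - 1" | "j = r" using ij by fastforce
    then show ?thesis
    proof cases
      case 1 then show ?thesis unfolding R2 MD_hl[OF n(1) 1] MD_ll[OF n(2) 1]
        using c r4 by (auto simp: min_def)
    next
      case 2
      have m: "\<not> j \<le> r - 2" using 2 r4 by auto
      show ?thesis unfolding R2 MD_hh[OF n(1) m] MD_lh[OF n(2) m]
        using c r4 2 by (auto simp: of_nat_diff ds)
    next
      case 3
      have m: "\<not> j \<le> r - 2" using 3 r4 by auto
      show ?thesis unfolding R2 MD_hh[OF n(1) m] MD_lh[OF n(2) m]
        using c r4 3 by (auto simp: of_nat_diff ds)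
    qed
  next
    case d
    have R2: "(\<Sum>k\<in>{1..r}. MD r k j * of_int (cartan TD r i k)) = 2 * MD r r j - MD r (r - 2) j"
      unfolding R using d r4 by auto
    have n: "\<not> r \<le> r - 2" "r - 2 \<le> r - 2" using r4 by auto
    consider "j \<le> r - 2" | "j = r - 1" | "j = r" using ij by fastforce
    then show ?thesis
    proof cases
      case 1 then show ?thesis unfolding R2 MD_hl[OF n(1) 1] MD_ll[OF n(2) 1]
        using d r4 by (auto simp: min_def)
    next
      case 2
      have m: "\<not> j \<le> r - 2" using 2 r4 by auto
      show ?thesis unfolding R2 MD_hh[OF n(1) m] MD_lh[OF n(2) m]
        using d r4 2 by (auto simp: of_nat_diff ds)
    next
      case 3
      have m: "\<not> j \<le> r - 2" using 3 r4 by auto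
      show ?thesis unfolding R2 MD_hh[OF n(1) m] MD_lh[OF n(2) m]
        using d r4 3 by (auto simp: of_nat_diff ds)
    qed
  qed
qed

lemma MD_sym: "MD r i j = MD r j i"
  by (auto simp: MD_def min.commute)

lemma MC_D: assumes "r \<ge> 4" "i \<in> {1..r}" "j \<in> {1..r}"
  shows "(\<Sum>k\<in>{1..r}. MD r i k * of_int (cartan TD r k j)) = (if i = j then 1 else 0)"
proof -
  have "(\<Sum>k\<in>{1..r}. MD r i k * of_int (cartan TD r k j)) = (\<Sum>k\<in>{1..r}. MD r k i * of_int (cartan TD r j k))"
    by (simp add: MD_sym cartan_D_sym)
  also have "\<dots> = (if j = i then 1 else 0)" by (rule CM_D[OF assms(1,3,2)])
  finally show ?thesis by auto
qed



definition pr :: "ltype \<Rightarrow> nat \<Rightarrow> (nat \<Rightarrow> real) \<Rightarrow> nat \<Rightarrow> real" where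
  "pr t r y i = (if i = r then (case t of TA \<Rightarrow> y r - y (Suc r) | TB \<Rightarrow> 2 * y r | TC \<Rightarrow> y r
      | TD \<Rightarrow> y (r - 1) + y r | _ \<Rightarrow> 0) else y i - y (Suc i))"

definition ep :: "ltype \<Rightarrow> nat \<Rightarrow> (nat \<Rightarrow> real) \<Rightarrow> nat \<Rightarrow> real" where
  "ep t r \<beta> j = (case t of
     TA \<Rightarrow> if 1 \<le> j \<and> j \<le> Suc r then \<beta> j - \<beta> (j - 1) else 0
   | TB \<Rightarrow> if 1 \<le> j \<and> j \<le> r then \<beta> j - \<beta> (j - 1) else 0
   | TC \<Rightarrow> if 1 \<le> j \<and> j < r then \<beta> j - \<beta> (j - 1) else if j = r then 2 * \<beta> r - \<beta> (r - 1) else 0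
   | TD \<Rightarrow> if 1 \<le> j \<and> j \<le> r - 2 then \<beta> j - \<beta> (j - 1) else if j = r - 1 then \<beta> (r - 1) + \<beta> r - \<beta> (r - 2)
           else if j = r then \<beta> r - \<beta> (r - 1) else 0
   | _ \<Rightarrow> 0)"

definition cl :: "ltype \<Rightarrow> bool" where "cl t = (t \<in> {TA, TB, TC, TD})"

lemma L1:
  assumes "cl t" "valid_type t r" "\<And>k. k \<notin> {1..r} \<Longrightarrow> \<beta> k = 0" "i \<in> {1..r}"
  shows "(\<Sum>k\<in>{1..r}. \<beta> k * of_int (cartan t r i k)) = pr t r (ep t r \<beta>) i"
proof -
  have b0: "\<beta> 0 = 0" "\<beta> (Suc r) = 0" using assms(3) by auto
  consider "t = TA" | "t = TB" | "t = TC" | "t = TD" using assms(1) by (auto simp: cl_def)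
  then show ?thesis
  proof cases
    case 1 then show ?thesis unfolding 1 row_A[OF assms(4)] using assms b0
      by (auto simp: pr_def ep_def valid_type_def)
  next
    case 2 then show ?thesis unfolding 2 row_B[OF assms(4)] using assms b0
      by (auto simp: pr_def ep_def valid_type_def)
  next
    case 3 then show ?thesis unfolding 3 row_C[OF assms(4)] using assms b0
      by (auto simp: pr_def ep_def valid_type_def)
  next
    case 4
    then have r4: "r \<ge> 4" using assms by (simp add: valid_type_def)
    have e: "r - Suc (Suc 0) = r - 2" "Suc (r - 2) = r - 1" "Suc (r - 1) = r" "r - 1 - 1 = r - 2" using r4 by auto
    consider "i < r - 2" | "i = r - 2" | "i = r - 1" | "i = r" using assms(4) by fastforce
    then show ?thesis
    proof cases
      case 1 then show ?thesis unfolding 4 row_D[OF r4 assms(4)] using assms b0 r4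
        by (auto simp: pr_def ep_def e)
    next
      case 2 then show ?thesis unfolding 4 row_D[OF r4 assms(4)] using assms b0 r4
        by (auto simp: pr_def ep_def e)
    next
      case 3 then show ?thesis unfolding 4 row_D[OF r4 assms(4)] using assms b0 r4
        by (auto simp: pr_def ep_def e)
    next
      case 5: 4 then show ?thesis unfolding \<open>t = TD\<close> row_D[OF r4 assms(4)] using assms b0 r4
        by (auto simp: pr_def ep_def e)
    qed
  qed
qed



definition uv :: "nat \<Rightarrow> nat \<Rightarrow> real" where "uv i = (\<lambda>k. of_int (unitv i k))"

lemma uv_eq: "uv i k = (if k = i then 1 else 0)" by (simp add: uv_def unitv_def)

lemma ep_uv_A: "i \<in> {1..r} \<Longrightarrow> ep TA r (uv i) j = (if j = i then 1 else if j = Suc i then -1 else 0)"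
  by (auto simp: ep_def uv_eq)

lemma ep_uv_B: "i \<in> {1..r} \<Longrightarrow> ep TB r (uv i) j = (if j = i then 1 else if j = Suc i \<and> i < r then -1 else 0)"
  by (auto simp: ep_def uv_eq)

lemma ep_uv_C: "i \<in> {1..r} \<Longrightarrow> r \<ge> 2 \<Longrightarrow> ep TC r (uv i) j = (if j = i then (if i = r then 2 else 1) else if j = Suc i \<and> i < r then -1 else 0)"
  by (auto simp: ep_def uv_eq)

lemma ep_uv_D: assumes i: "i \<in> {1..r}" and r4: "r \<ge> 4"
  shows "ep TD r (uv i) j = (if i = r then (if j = r \<or> j = r - 1 then 1 else 0)
   else if j = i then 1 else if j = Suc i then -1 else 0)"
proof -
  have e: "ep TD r (uv i) j = (if 1 \<le> j \<and> j \<le> r - 2 then uv i j - uv i (j - 1) else if j = r - 1 then uv i (r - 1) + uv i r - uv i (r - 2)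
           else if j = r then uv i r - uv i (r - 1) else 0)" by (simp add: ep_def)
  consider (a) "1 \<le> j \<and> j \<le> r - 2" | (b) "j = r - 1" | (c) "j = r" | (d) "j = 0 \<or> j > r" using r4 by fastforce
  then show ?thesis
  proof cases
    case a
    then have "j \<noteq> r - 1" "j \<noteq> r" using r4 by auto
    then show ?thesis unfolding e using a i by (auto simp: uv_eq)
  next
    case b
    then have "j \<noteq> r" "1 \<le> j" "\<not> j \<le> r - 2" using r4 by auto
    then show ?thesis unfolding e using b i r4 by (auto simp: uv_eq)
  next
    case c
    then have "j \<noteq> r - 1" "1 \<le> j" "\<not> j \<le> r - 2" using r4 by auto
    then show ?thesis unfolding e using c i r4 by (auto simp: uv_eq)
  next
    case d
    then have "\<not> (1 \<le> j \<and> j \<le> r - 2)" "j \<noteq> r - 1" "j \<noteq> r" using r4 by auto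
    then show ?thesis unfolding e using d i r4 by auto
  qed
qed

definition act :: "ltype \<Rightarrow> nat \<Rightarrow> nat \<Rightarrow> (nat \<Rightarrow> real) \<Rightarrow> nat \<Rightarrow> real" where
  "act t r i y = (\<lambda>j. y j - pr t r y i * ep t r (uv i) j)"

definition sw :: "nat \<Rightarrow> nat \<Rightarrow> nat \<Rightarrow> nat" where
  "sw a b j = (if j = a then b else if j = b then a else j)"

definition dm :: "ltype \<Rightarrow> nat \<Rightarrow> nat set" where
  "dm t r = (if t = TA then {1..Suc r} else {1..r})"

lemma ep_uv_std:
  assumes "cl t" "valid_type t r" "i \<in> {1..r}" "t = TA \<or> i < r"
  shows "ep t r (uv i) j = (if j = i then 1 else if j = Suc i then -1 else 0)"
proof -
  have r2: "r \<ge> 2" using assms(1,2) by (auto simp: cl_def valid_type_def)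
  consider "t = TA" | "t = TB" | "t = TC" | "t = TD" using assms(1) by (auto simp: cl_def)
  then show ?thesis
  proof cases
    case 1 then show ?thesis using ep_uv_A[OF assms(3)] by simp
  next
    case 2 then show ?thesis using ep_uv_B[OF assms(3)] assms(4) by simp
  next
    case 3 then show ?thesis using ep_uv_C[OF assms(3) r2] assms(4) by simp
  next
    case 4
    then have r4: "r \<ge> 4" using assms(2) by (simp add: valid_type_def)
    show ?thesis using 4 ep_uv_D[OF assms(3) r4] assms(4) by simp
  qed
qed

lemma act_swap:
  assumes "cl t" "valid_type t r" "i \<in> {1..r}" "t = TA \<or> i < r"
  shows "act t r i y = (\<lambda>j. y (sw i (Suc i) j))"
proof
  fix j
  have p: "pr t r y i = y i - y (Suc i)" using assms by (auto simp: pr_def)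
  show "act t r i y j = y (sw i (Suc i) j)"
    unfolding act_def p ep_uv_std[OF assms] by (auto simp: sw_def)
qed

lemma act_neg:
  assumes "t = TB \<or> t = TC" "valid_type t r"
  shows "act t r r y = (\<lambda>j. if j = r then - y j else y j)"
proof
  fix j
  have r2: "r \<ge> 2" using assms by (auto simp: valid_type_def)
  have i: "r \<in> {1..r}" using r2 by auto
  show "act t r r y j = (if j = r then - y j else y j)"
    using assms(1)
  proof
    assume B: "t = TB"
    show ?thesis unfolding act_def B ep_uv_B[OF i] by (auto simp: pr_def)
  next
    assume C: "t = TC"
    show ?thesis unfolding act_def C ep_uv_C[OF i r2] by (auto simp: pr_def)
  qed
qed

lemma act_D:
  assumes "valid_type TD r"
  shows "act TD r r y = (\<lambda>j. if j = r - 1 then - y r else if j = r then - y (r - 1) else y j)"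
proof
  fix j
  have r4: "r \<ge> 4" using assms by (auto simp: valid_type_def)
  have i: "r \<in> {1..r}" using r4 by auto
  show "act TD r r y j = (if j = r - 1 then - y r else if j = r then - y (r - 1) else y j)"
    unfolding act_def ep_uv_D[OF i r4] using r4 by (auto simp: pr_def)
qed

definition spm :: "nat set \<Rightarrow> (nat \<Rightarrow> real) \<Rightarrow> (nat \<Rightarrow> real) \<Rightarrow> bool" where
  "spm D y y' = (\<exists>\<sigma> s. bij_betw \<sigma> D D \<and> (\<forall>j. j \<notin> D \<longrightarrow> \<sigma> j = j \<and> s j = 1)
      \<and> (\<forall>j. s j = 1 \<or> s j = -1) \<and> y' = (\<lambda>j. s j * y (\<sigma> j)))"

definition pm :: "nat set \<Rightarrow> (nat \<Rightarrow> real) \<Rightarrow> (nat \<Rightarrow> real) \<Rightarrow> bool" where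
  "pm D y y' = (\<exists>\<sigma>. bij_betw \<sigma> D D \<and> (\<forall>j. j \<notin> D \<longrightarrow> \<sigma> j = j) \<and> y' = (\<lambda>j. y (\<sigma> j)))"

lemma pm_spm: "pm D y y' \<Longrightarrow> spm D y y'"
proof -
  assume "pm D y y'"
  then obtain \<sigma> where h: "bij_betw \<sigma> D D" "\<forall>j. j \<notin> D \<longrightarrow> \<sigma> j = j" "y' = (\<lambda>j. y (\<sigma> j))"
    unfolding pm_def by blast
  show ?thesis unfolding spm_def
    by (rule exI[where x=\<sigma>], rule exI[where x="\<lambda>_. 1"]) (use h in auto)
qed

lemma spm_abs_sum: "spm D y y' \<Longrightarrow> (\<Sum>j\<in>D. g \<bar>y' j\<bar>) = (\<Sum>j\<in>D. g \<bar>y j\<bar>)"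
proof -
  assume "spm D y y'"
  then obtain \<sigma> s where h: "bij_betw \<sigma> D D" "\<forall>j. s j = 1 \<or> s j = -1" "y' = (\<lambda>j. s j * y (\<sigma> j))"
    unfolding spm_def by blast
  have "(\<Sum>j\<in>D. g \<bar>y' j\<bar>) = (\<Sum>j\<in>D. g \<bar>y (\<sigma> j)\<bar>)"
  proof (rule sum.cong[OF HOL.refl])
    fix j show "g \<bar>y' j\<bar> = g \<bar>y (\<sigma> j)\<bar>" using h(2)[rule_format, of j] h(3) by (auto simp: abs_mult)
  qed
  also have "\<dots> = (\<Sum>j\<in>D. g \<bar>y j\<bar>)" using sum.reindex_bij_betw[OF h(1), of "\<lambda>j. g \<bar>y j\<bar>"] by simp
  finally show ?thesis .
qed

lemma pm_sum: "pm D y y' \<Longrightarrow> (\<Sum>j\<in>D. g (y' j)) = (\<Sum>j\<in>D. g (y j))"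
proof -
  assume "pm D y y'"
  then obtain \<sigma> where h: "bij_betw \<sigma> D D" "y' = (\<lambda>j. y (\<sigma> j))" unfolding pm_def by blast
  show ?thesis using sum.reindex_bij_betw[OF h(1), of "\<lambda>j. g (y j)"] h(2) by simp
qed

lemma spm_out: "spm D y y' \<Longrightarrow> j \<notin> D \<Longrightarrow> y' j = y j"
  unfolding spm_def by auto

lemma spm_vals: "spm D y y' \<Longrightarrow> (\<forall>j. y j \<in> V) \<Longrightarrow> (\<forall>v\<in>V. - v \<in> V) \<Longrightarrow> y' j \<in> V"
proof -
  assume h: "spm D y y'" "\<forall>j. y j \<in> V" "\<forall>v\<in>V. - v \<in> V"
  then obtain \<sigma> s where o: "\<forall>j. s j = 1 \<or> s j = -1" "y' = (\<lambda>j. s j * y (\<sigma> j))"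
    unfolding spm_def by blast
  show "y' j \<in> V" using o(1)[rule_format, of j]
  proof
    assume "s j = 1" then show ?thesis using o(2) h(2) by simp
  next
    assume "s j = -1" then show ?thesis using o(2) h(2,3) by simp
  qed
qed

lemma spm_vals_D: "spm D y y' \<Longrightarrow> (\<forall>j\<in>D. y j \<in> V) \<Longrightarrow> (\<forall>v\<in>V. - v \<in> V) \<Longrightarrow> j \<in> D \<Longrightarrow> y' j \<in> V"
proof -
  assume h: "spm D y y'" "\<forall>j\<in>D. y j \<in> V" "\<forall>v\<in>V. - v \<in> V" "j \<in> D"
  then obtain \<sigma> s where o: "bij_betw \<sigma> D D" "\<forall>j. s j = 1 \<or> s j = -1" "y' = (\<lambda>j. s j * y (\<sigma> j))"
    unfolding spm_def by blast
  have m: "\<sigma> j \<in> D" using o(1) h(4) by (auto simp: bij_betw_def)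
  show "y' j \<in> V" using o(2)[rule_format, of j]
  proof
    assume "s j = 1" then show ?thesis using o(3) h(2) m by simp
  next
    assume "s j = -1" then show ?thesis using o(3) h(2,3) m by simp
  qed
qed

lemma pm_vals_D: "pm D y y' \<Longrightarrow> (\<forall>j\<in>D. y j \<in> V) \<Longrightarrow> j \<in> D \<Longrightarrow> y' j \<in> V"
proof -
  assume h: "pm D y y'" "\<forall>j\<in>D. y j \<in> V" "j \<in> D"
  then obtain \<sigma> where o: "bij_betw \<sigma> D D" "y' = (\<lambda>j. y (\<sigma> j))" unfolding pm_def by blast
  have m: "\<sigma> j \<in> D" using o(1) h(3) by (auto simp: bij_betw_def)
  show ?thesis using o(2) h(2) m by simp
qed

lemma bij_sw: "a \<in> D \<Longrightarrow> b \<in> D \<Longrightarrow> bij_betw (sw a b) D D"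
  by (rule bij_betw_byWitness[where f'="sw a b"]) (auto simp: sw_def)

lemma act_pm:
  assumes "cl t" "valid_type t r" "i \<in> {1..r}" "t = TA \<or> i < r"
  shows "pm (dm t r) y (act t r i y)"
  unfolding pm_def act_swap[OF assms]
  by (rule exI[where x="sw i (Suc i)"]) (use assms in \<open>auto simp: bij_sw dm_def sw_def\<close>)

lemma act_spm:
  assumes "cl t" "valid_type t r" "i \<in> {1..r}"
  shows "spm (dm t r) y (act t r i y)"
proof -
  have r2: "r \<ge> 2" using assms by (auto simp: cl_def valid_type_def)
  consider "t = TA \<or> i < r" | "t = TB \<or> t = TC" "i = r" | "t = TD" "i = r" using assms(1,3)
    unfolding cl_def by (cases "i < r") auto
  then show ?thesis
  proof cases
    case 1 then show ?thesis using act_pm[OF assms 1] pm_spm by blast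
  next
    case 2
    show ?thesis unfolding spm_def 2(2) act_neg[OF 2(1) assms(2)]
      by (rule exI[where x=id], rule exI[where x="\<lambda>j. if j = r then -1 else 1"])
         (use 2 r2 in \<open>auto simp: dm_def\<close>)
  next
    case 3
    have r4: "r \<ge> 4" using assms 3 by (auto simp: valid_type_def)
    show ?thesis unfolding spm_def 3 act_D[OF assms(2)[unfolded 3]]
      by (rule exI[where x="sw (r - 1) r"], rule exI[where x="\<lambda>j. if j = r - 1 \<or> j = r then -1 else 1"])
         (use r4 in \<open>auto simp: dm_def bij_sw sw_def\<close>)
  qed
qed



definition Pr :: "ltype \<Rightarrow> nat \<Rightarrow> (nat \<Rightarrow> real) \<Rightarrow> bool" where
  "Pr t r y = ((\<forall>j. j \<notin> dm t r \<longrightarrow> y j = 0) \<and> (\<Sum>j\<in>dm t r. \<bar>y j\<bar>) \<le> 2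
     \<and> ((t = TB \<or> t = TD) \<longrightarrow> (\<forall>j. \<bar>y j\<bar> \<le> 1)) \<and> (t = TA \<longrightarrow> (\<Sum>j\<in>dm t r. y j) = 0))"

lemma ep_lin: "ep t r (\<lambda>k. b k - a * u k) = (\<lambda>j. ep t r b j - a * ep t r u j)"
  by (rule ext) (cases t; simp add: ep_def algebra_simps)

lemma pr_lin: "pr t r (\<lambda>k. b k - a * u k) i = pr t r b i - a * pr t r u i"
  by (cases t; simp add: pr_def algebra_simps)

lemma ep_refl:
  assumes "cl t" "valid_type t r" "i \<in> {1..r}" "\<And>k. k \<notin> {1..r} \<Longrightarrow> \<beta> k = 0"
  shows "ep t r (\<lambda>k. of_int (refl_root t r i \<beta> k)) = act t r i (ep t r (\<lambda>k. of_int (\<beta> k)))"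
proof -
  have "of_int (\<Sum>j\<in>{1..r}. \<beta> j * cartan t r i j) = (\<Sum>j\<in>{1..r}. (of_int (\<beta> j) :: real) * of_int (cartan t r i j))"
    by simp
  also have "\<dots> = pr t r (ep t r (\<lambda>k. of_int (\<beta> k))) i" by (rule L1) (use assms in auto)
  finally have l: "of_int (\<Sum>j\<in>{1..r}. \<beta> j * cartan t r i j) = pr t r (ep t r (\<lambda>k. of_int (\<beta> k))) i" .
  have h1: "(\<lambda>k. (of_int (refl_root t r i \<beta> k) :: real)) = (\<lambda>k. of_int (\<beta> k) - of_int (\<Sum>j\<in>{1..r}. \<beta> j * cartan t r i j) * uv i k)"
    unfolding refl_root_def uv_def of_int_diff of_int_mult by (rule HOL.refl)
  show ?thesis unfolding h1 l act_def ep_lin by (rule HOL.refl)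
qed

lemma sum_two:
  fixes g :: "real \<Rightarrow> real"
  assumes "finite D" "a \<in> D" "b \<in> D" "a \<noteq> b" "g 0 = 0"
  shows "(\<Sum>j\<in>D. g (if j = a then c1 else if j = b then c2 else 0)) = g c1 + g c2"
proof -
  have "(\<Sum>j\<in>D. g (if j = a then c1 else if j = b then c2 else 0))
      = (\<Sum>j\<in>D. (if j = a then g c1 else 0) + (if j = b then g c2 else 0))"
    by (rule sum.cong[OF HOL.refl]) (use assms in auto)
  also have "\<dots> = g c1 + g c2" using assms by (simp add: sum.distrib)
  finally show ?thesis .
qed

lemma Pr_simple:
  assumes "cl t" "valid_type t r" "i \<in> {1..r}"
  shows "Pr t r (ep t r (uv i))"
proof -
  have r2: "r \<ge> 2" using assms by (auto simp: cl_def valid_type_def)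
  consider "t = TA \<or> i < r" | "t = TB" "i = r" | "t = TC" "i = r" | "t = TD" "i = r"
    using assms(1,3) unfolding cl_def by (cases "i < r") auto
  then show ?thesis
  proof cases
    case 1
    have e: "ep t r (uv i) = (\<lambda>j. if j = i then 1 else if j = Suc i then -1 else 0)"
      using ep_uv_std[OF assms 1] by (intro ext) simp
    have d: "i \<in> dm t r" "Suc i \<in> dm t r" using 1 assms by (auto simp: dm_def)
    have s1: "(\<Sum>j\<in>dm t r. \<bar>if j = i then 1 else if j = Suc i then -1 else 0 :: real\<bar>) = 2"
      using sum_two[of "dm t r" i "Suc i" abs 1 "-1"] d by (simp add: dm_def)
    have s2: "(\<Sum>j\<in>dm t r. (if j = i then 1 else if j = Suc i then -1 else 0 :: real)) = 0"
      using sum_two[of "dm t r" i "Suc i" "\<lambda>x. x" 1 "-1"] d by (simp add: dm_def)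
    show ?thesis unfolding Pr_def e using s1 s2 d by auto
  next
    case 2
    have e: "ep t r (uv i) = (\<lambda>j. if j = r then 1 else 0)"
      using 2 ep_uv_B[OF assms(3)] by (intro ext) simp
    show ?thesis unfolding Pr_def e using 2 r2 by (auto simp: dm_def)
  next
    case 3
    have e: "ep t r (uv i) = (\<lambda>j. if j = r then 2 else 0)"
      using 3 ep_uv_C[OF assms(3) r2] by (intro ext) simp
    show ?thesis unfolding Pr_def e using 3 r2 by (auto simp: dm_def)
  next
    case 4
    have r4: "r \<ge> 4" using 4 assms by (simp add: valid_type_def)
    have e: "ep t r (uv i) = (\<lambda>j. if j = r then 1 else if j = r - 1 then 1 else 0)"
      using 4 ep_uv_D[OF assms(3) r4] by (intro ext) simp
    have d: "r \<in> dm t r" "r - 1 \<in> dm t r" using 4 r4 by (auto simp: dm_def)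
    have s1: "(\<Sum>j\<in>dm t r. \<bar>if j = r then 1 else if j = r - 1 then 1 else 0 :: real\<bar>) = 2"
      using sum_two[of "dm t r" r "r - 1" abs 1 1] d r4 by (simp add: dm_def)
    show ?thesis unfolding Pr_def e using s1 d 4 by auto
  qed
qed

lemma Pr_act:
  assumes "cl t" "valid_type t r" "i \<in> {1..r}" "Pr t r y"
  shows "Pr t r (act t r i y)"
proof -
  have sp: "spm (dm t r) y (act t r i y)" by (rule act_spm[OF assms(1-3)])
  have a: "(\<Sum>j\<in>dm t r. \<bar>act t r i y j\<bar>) \<le> 2" using spm_abs_sum[OF sp, of "\<lambda>x. x"] assms(4)
    by (simp add: Pr_def)
  have b: "\<forall>j. j \<notin> dm t r \<longrightarrow> act t r i y j = 0" using spm_out[OF sp] assms(4) by (simp add: Pr_def)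
  have c: "(t = TB \<or> t = TD) \<longrightarrow> (\<forall>j. \<bar>act t r i y j\<bar> \<le> 1)"
  proof (intro impI allI)
    fix j assume "t = TB \<or> t = TD"
    then have "\<forall>j. y j \<in> {x. \<bar>x\<bar> \<le> 1}" using assms(4) by (simp add: Pr_def)
    then show "\<bar>act t r i y j\<bar> \<le> 1" using spm_vals[OF sp, of "{x. \<bar>x\<bar> \<le> 1}" j] by auto
  qed
  have d: "t = TA \<longrightarrow> (\<Sum>j\<in>dm t r. act t r i y j) = 0"
  proof
    assume A: "t = TA"
    have "pm (dm t r) y (act t r i y)" by (rule act_pm) (use assms A in auto)
    then show "(\<Sum>j\<in>dm t r. act t r i y j) = 0" using pm_sum[of "dm t r" y _ "\<lambda>x. x"] assms(4) A
      by (simp add: Pr_def)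
  qed
  show ?thesis unfolding Pr_def using a b c d by blast
qed

lemma roots_Pr:
  assumes "cl t" "valid_type t r"
  shows "\<beta> \<in> roots t r \<Longrightarrow> Pr t r (ep t r (\<lambda>k. of_int (\<beta> k)))"
proof (induction rule: roots.induct)
  case (simple i)
  have "(\<lambda>k. of_int (unitv i k)) = uv i" by (simp add: uv_def)
  then show ?case using Pr_simple[OF assms simple] by simp
next
  case (refl \<beta> i)
  have "ep t r (\<lambda>k. of_int (refl_root t r i \<beta> k)) = act t r i (ep t r (\<lambda>k. of_int (\<beta> k)))"
    by (rule ep_refl[OF assms refl.hyps(2)]) (use roots_supp[OF refl.hyps(1)] in auto)
  then show ?case using Pr_act[OF assms refl.hyps(2) refl.IH] by simp
qed



lemma telesc: "(\<And>j. j \<in> {1..k::nat} \<Longrightarrow> e j = b j - b (j - 1)) \<Longrightarrow> b 0 = 0 \<Longrightarrow> (\<Sum>j\<in>{1..k}. e j) = (b k :: real)"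
proof (induction k)
  case 0 then show ?case by simp
next
  case (Suc k)
  have "(\<Sum>j\<in>{1..Suc k}. e j) = (\<Sum>j\<in>{1..k}. e j) + e (Suc k)" by simp
  also have "\<dots> = b k + (b (Suc k) - b k)" using Suc by auto
  finally show ?case by simp
qed

lemma sum_le_abs: "finite A \<Longrightarrow> A \<subseteq> D \<Longrightarrow> finite D \<Longrightarrow> (\<Sum>j\<in>A. y j) \<le> (\<Sum>j\<in>D. \<bar>y j :: real\<bar>)"
proof -
  assume "finite A" "A \<subseteq> D" "finite D"
  have "(\<Sum>j\<in>A. y j) \<le> (\<Sum>j\<in>A. \<bar>y j\<bar>)" by (rule sum_mono) simp
  also have "\<dots> \<le> (\<Sum>j\<in>D. \<bar>y j\<bar>)" by (rule sum_mono2) (use \<open>A \<subseteq> D\<close> \<open>finite D\<close> in auto)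
  finally show ?thesis .
qed

lemma label_int: "label t r \<beta> i = (\<Sum>k\<in>{1..r}. \<beta> k * of_int (cartan t r i k))"
  by (simp add: label_def)

lemma labA: "i \<in> {1..r} \<Longrightarrow> label TA r \<beta> i = 2 * \<beta> i - (if i < r then \<beta> (Suc i) else 0) - (if 2 \<le> i then \<beta> (i - 1) else 0)"
  unfolding label_int by (rule row_A)
lemma labB: "i \<in> {1..r} \<Longrightarrow> label TB r \<beta> i = 2 * \<beta> i - (if i < r then \<beta> (Suc i) else 0) - (if 2 \<le> i then (if i = r then 2 else 1) * \<beta> (i - 1) else 0)"
  unfolding label_int by (rule row_B)
lemma labC: "i \<in> {1..r} \<Longrightarrow> label TC r \<beta> i = 2 * \<beta> i - (if i < r then (if i = r - 1 then 2 else 1) * \<beta> (Suc i) else 0) - (if 2 \<le> i then \<beta> (i - 1) else 0)"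
  unfolding label_int by (rule row_C)
lemma labD: "r \<ge> 4 \<Longrightarrow> i \<in> {1..r} \<Longrightarrow> label TD r \<beta> i = 2 * \<beta> i - (if Suc i \<le> r - 1 then \<beta> (Suc i) else 0) - (if 2 \<le> i \<and> i \<le> r - 1 then \<beta> (i - 1) else 0)
    - (if i = r - 2 then \<beta> r else 0) - (if i = r then \<beta> (r - 2) else 0)"
  unfolding label_int by (rule row_D)

lemma add_root: "\<beta> \<in> roots t r \<Longrightarrow> i \<in> {1..r} \<Longrightarrow> label t r \<beta> i = - n \<Longrightarrow> (\<lambda>k. \<beta> k + n * unitv i k) \<in> roots t r"
proof -
  assume h: "\<beta> \<in> roots t r" "i \<in> {1..r}" "label t r \<beta> i = - n"
  have "refl_root t r i \<beta> = (\<lambda>k. \<beta> k + n * unitv i k)"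
    using h(3) unfolding refl_root_def label_def by auto
  then show ?thesis using roots.refl[OF h(1,2)] by simp
qed

definition iv :: "nat \<Rightarrow> nat \<Rightarrow> nat \<Rightarrow> int" where "iv a b k = (if a \<le> k \<and> k \<le> b then 1 else 0)"

lemma iv_roots_A: "k \<in> {1..r} \<Longrightarrow> t = TA \<or> (t = TB \<and> k < r) \<or> (t = TC \<and> k < r) \<or> (t = TD \<and> k < r - 1) \<Longrightarrow> valid_type t r
   \<Longrightarrow> iv 1 k \<in> roots t r"
proof (induction k)
  case 0 then show ?case by simp
next
  case (Suc k)
  show ?case
  proof (cases "k = 0")
    case True
    then have "iv 1 (Suc k) = unitv 1" by (auto simp: iv_def unitv_def)
    then show ?thesis using roots.simple[of 1 r t] Suc.prems by auto
  next
    case False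
    have r2: "r \<ge> 2" using Suc.prems by (auto simp: valid_type_def)
    have IH: "iv 1 k \<in> roots t r" using Suc False by auto
    have i: "Suc k \<in> {1..r}" using Suc.prems by auto
    have "label t r (iv 1 k) (Suc k) = - 1"
      using Suc.prems False r2
      by (auto simp: labA[OF i] labB[OF i] labC[OF i] labD[OF _ i] iv_def valid_type_def)
    then have "(\<lambda>j. iv 1 k j + 1 * unitv (Suc k) j) \<in> roots t r" by (rule add_root[OF IH i])
    moreover have "(\<lambda>j. iv 1 k j + 1 * unitv (Suc k) j) = iv 1 (Suc k)"
      by (auto simp: iv_def unitv_def)
    ultimately show ?thesis by simp
  qed
qed


lemma down_ind:
  assumes "P a" "\<And>m. lo < m \<Longrightarrow> m \<le> a \<Longrightarrow> P m \<Longrightarrow> P (m - 1)" "lo \<le> (a::nat)"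
  shows "P lo"
proof -
  have "\<forall>n. n \<le> a - lo \<longrightarrow> P (a - n)"
  proof
    fix n show "n \<le> a - lo \<longrightarrow> P (a - n)"
    proof (induction n)
      case 0 then show ?case using assms(1) by simp
    next
      case (Suc n)
      show ?case
      proof
        assume n: "Suc n \<le> a - lo"
        then have "P (a - n)" using Suc by simp
        then have "P (a - n - 1)" using assms(2)[of "a - n"] n by simp
        then show "P (a - Suc n)" by simp
      qed
    qed
  qed
  then show ?thesis using assms(3) by (metis diff_diff_cancel order_refl)
qed

lemma bound_A:
  assumes v: "valid_type TA r" and b: "\<beta> \<in> roots TA r"
  shows "\<beta> j \<le> iv 1 r j"
proof (cases "j \<in> {1..r}")
  case False then show ?thesis using roots_supp[OF b False] by (auto simp: iv_def)
next
  case True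
  let ?b = "\<lambda>k. (of_int (\<beta> k) :: real)"
  let ?y = "ep TA r ?b"
  have P: "Pr TA r ?y" by (rule roots_Pr[OF _ v b]) (simp add: cl_def)
  have b0: "?b 0 = 0" using roots_supp[OF b, of 0] by simp
  have t1: "(\<Sum>k\<in>{1..j}. ?y k) = ?b j" by (rule telesc) (use True b0 in \<open>auto simp: ep_def\<close>)
  have D: "dm TA r = {1..j} \<union> {Suc j..Suc r}" "{1..j} \<inter> {Suc j..Suc r} = {}" using True by (auto simp: dm_def)
  have s0: "(\<Sum>k\<in>dm TA r. ?y k) = 0" using P by (simp add: Pr_def)
  then have "(\<Sum>k\<in>{1..j}. ?y k) + (\<Sum>k\<in>{Suc j..Suc r}. ?y k) = 0" unfolding D(1) by (subst (asm) sum.union_disjoint) (use D in auto)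
  then have t2: "(\<Sum>k\<in>{Suc j..Suc r}. - ?y k) = ?b j" using t1 by (simp add: sum_negf)
  have a: "(\<Sum>k\<in>dm TA r. \<bar>?y k\<bar>) = (\<Sum>k\<in>{1..j}. \<bar>?y k\<bar>) + (\<Sum>k\<in>{Suc j..Suc r}. \<bar>?y k\<bar>)"
    unfolding D(1) by (subst sum.union_disjoint) (use D in auto)
  have "(\<Sum>k\<in>{1..j}. ?y k) \<le> (\<Sum>k\<in>{1..j}. \<bar>?y k\<bar>)" by (rule sum_le_abs) auto
  moreover have "(\<Sum>k\<in>{Suc j..Suc r}. - ?y k) \<le> (\<Sum>k\<in>{Suc j..Suc r}. \<bar>?y k\<bar>)"
    using sum_le_abs[of "{Suc j..Suc r}" "{Suc j..Suc r}" "\<lambda>k. - ?y k"] by simp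
  moreover have "(\<Sum>k\<in>dm TA r. \<bar>?y k\<bar>) \<le> 2" using P by (simp add: Pr_def)
  ultimately have "2 * ?b j \<le> 2" using t1 t2 a by linarith
  then show ?thesis using True by (simp add: iv_def)
qed

lemma hr_A: "valid_type TA r \<Longrightarrow> highest_root TA r = iv 1 r"
proof (rule highest_root_eq)
  assume v: "valid_type TA r"
  then show "iv 1 r \<in> roots TA r" using iv_roots_A[of r r TA] by (auto simp: valid_type_def)
  show "\<And>\<beta> j. \<beta> \<in> roots TA r \<Longrightarrow> \<beta> j \<le> iv 1 r j" using bound_A[OF v] by blast
qed

lemma gr_A: "valid_type TA r \<Longrightarrow> grading_set TA r = {1, r}"
proof -
  assume v: "valid_type TA r"
  then have r2: "r \<ge> 2" by (simp add: valid_type_def)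
  have L: "label TA r (iv 1 r) i \<noteq> 0 \<longleftrightarrow> i = 1 \<or> i = r" if i: "i \<in> {1..r}" for i
    unfolding labA[OF i] using i r2 by (auto simp: iv_def)
  show ?thesis unfolding grading_set_def hr_A[OF v]
  proof (rule set_eqI)
    fix i show "i \<in> {i \<in> {1..r}. label TA r (iv 1 r) i \<noteq> 0} \<longleftrightarrow> i \<in> {1, r}"
      using L[of i] r2 by auto
  qed
qed

definition thB :: "nat \<Rightarrow> nat \<Rightarrow> int" where
  "thB r k = (if k = 1 then 1 else if 2 \<le> k \<and> k \<le> r then 2 else 0)"

definition uB :: "nat \<Rightarrow> nat \<Rightarrow> nat \<Rightarrow> int" where
  "uB r m k = (if 1 \<le> k \<and> k < m then 1 else if m \<le> k \<and> k \<le> r then 2 else 0)"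

lemma thB_roots: assumes v: "valid_type TB r" shows "thB r \<in> roots TB r"
proof -
  have r2: "r \<ge> 2" using v by (simp add: valid_type_def)
  have i0: "iv 1 (r - 1) \<in> roots TB r" using iv_roots_A[of "r - 1" r TB] v r2 by auto
  have ir: "r \<in> {1..r}" using r2 by auto
  have "label TB r (iv 1 (r - 1)) r = - 2" unfolding labB[OF ir] using r2 by (auto simp: iv_def)
  from add_root[OF i0 ir this] have "uB r r \<in> roots TB r"
    by (rule back_subst[where P="\<lambda>x. x \<in> roots TB r"]) (auto simp: uB_def iv_def unitv_def intro!: ext)
  then have "uB r 2 \<in> roots TB r"
  proof (rule down_ind[where P="\<lambda>m. uB r m \<in> roots TB r"])
    fix m assume m: "2 < m" "m \<le> r" "uB r m \<in> roots TB r"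
    have i: "m - 1 \<in> {1..r}" using m by auto
    have "label TB r (uB r m) (m - 1) = - 1" unfolding labB[OF i] using m by (auto simp: uB_def)
    from add_root[OF m(3) i this] show "uB r (m - 1) \<in> roots TB r"
      by (rule back_subst[where P="\<lambda>x. x \<in> roots TB r"]) (use m in \<open>auto simp: uB_def unitv_def intro!: ext\<close>)
  qed (use r2 in auto)
  moreover have "uB r 2 = thB r" by (auto simp: uB_def thB_def intro!: ext)
  ultimately show ?thesis by simp
qed

lemma bound_B:
  assumes v: "valid_type TB r" and b: "\<beta> \<in> roots TB r"
  shows "\<beta> j \<le> thB r j"
proof (cases "j \<in> {1..r}")
  case False then show ?thesis using roots_supp[OF b False] by (auto simp: thB_def)
next
  case True
  let ?b = "\<lambda>k. (of_int (\<beta> k) :: real)"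
  let ?y = "ep TB r ?b"
  have P: "Pr TB r ?y" by (rule roots_Pr[OF _ v b]) (simp add: cl_def)
  have b0: "?b 0 = 0" using roots_supp[OF b, of 0] by simp
  have t1: "(\<Sum>k\<in>{1..j}. ?y k) = ?b j" by (rule telesc) (use True b0 in \<open>auto simp: ep_def\<close>)
  have "(\<Sum>k\<in>{1..j}. ?y k) \<le> (\<Sum>k\<in>dm TB r. \<bar>?y k\<bar>)" by (rule sum_le_abs) (use True in \<open>auto simp: dm_def\<close>)
  moreover have "(\<Sum>k\<in>dm TB r. \<bar>?y k\<bar>) \<le> 2" using P by (simp add: Pr_def)
  ultimately have le2: "?b j \<le> 2" using t1 by linarith
  have "\<bar>?y 1\<bar> \<le> 1" using P by (simp add: Pr_def)
  moreover have "?y 1 = ?b 1" using b0 True by (auto simp: ep_def)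
  ultimately have "?b 1 \<le> 1" by linarith
  then show ?thesis using le2 True by (auto simp: thB_def)
qed

lemma hr_B: "valid_type TB r \<Longrightarrow> highest_root TB r = thB r"
  by (rule highest_root_eq) (auto intro: thB_roots bound_B)

lemma gr_B: "valid_type TB r \<Longrightarrow> grading_set TB r = {2}"
proof -
  assume v: "valid_type TB r"
  then have r2: "r \<ge> 2" by (simp add: valid_type_def)
  have L: "label TB r (thB r) i \<noteq> 0 \<longleftrightarrow> i = 2" if i: "i \<in> {1..r}" for i
    unfolding labB[OF i] using i r2 by (auto simp: thB_def)
  show ?thesis unfolding grading_set_def hr_B[OF v]
  proof (rule set_eqI)
    fix i show "i \<in> {i \<in> {1..r}. label TB r (thB r) i \<noteq> 0} \<longleftrightarrow> i \<in> {2}"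
      using L[of i] r2 by auto
  qed
qed



definition thC :: "nat \<Rightarrow> nat \<Rightarrow> int" where
  "thC r k = (if 1 \<le> k \<and> k < r then 2 else if k = r then 1 else 0)"

definition vC :: "nat \<Rightarrow> nat \<Rightarrow> nat \<Rightarrow> int" where
  "vC r m k = (if m \<le> k \<and> k < r then 2 else if k = r then 1 else 0)"

lemma thC_roots: assumes v: "valid_type TC r" shows "thC r \<in> roots TC r"
proof -
  have r2: "r \<ge> 2" using v by (simp add: valid_type_def)
  have ir: "r \<in> {1..r}" using r2 by auto
  have "vC r r \<in> roots TC r" using roots.simple[OF ir, of TC]
    by (rule back_subst[where P="\<lambda>x. x \<in> roots TC r"]) (auto simp: vC_def unitv_def intro!: ext)
  then have "vC r 1 \<in> roots TC r"
  proof (rule down_ind[where P="\<lambda>m. vC r m \<in> roots TC r"])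
    fix m assume m: "1 < m" "m \<le> r" "vC r m \<in> roots TC r"
    have i: "m - 1 \<in> {1..r}" using m by auto
    have "label TC r (vC r m) (m - 1) = - 2" unfolding labC[OF i] using m by (auto simp: vC_def)
    from add_root[OF m(3) i this] show "vC r (m - 1) \<in> roots TC r"
      by (rule back_subst[where P="\<lambda>x. x \<in> roots TC r"]) (use m in \<open>auto simp: vC_def unitv_def intro!: ext\<close>)
  qed (use r2 in auto)
  moreover have "vC r 1 = thC r" by (auto simp: vC_def thC_def intro!: ext)
  ultimately show ?thesis by simp
qed

lemma bound_C:
  assumes v: "valid_type TC r" and b: "\<beta> \<in> roots TC r"
  shows "\<beta> j \<le> thC r j"
proof -
  have r2: "r \<ge> 2" using v by (simp add: valid_type_def)
  let ?b = "\<lambda>k. (of_int (\<beta> k) :: real)"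
  let ?y = "ep TC r ?b"
  have P: "Pr TC r ?y" by (rule roots_Pr[OF _ v b]) (simp add: cl_def)
  have b0: "?b 0 = 0" using roots_supp[OF b, of 0] by simp
  have A: "(\<Sum>k\<in>dm TC r. \<bar>?y k\<bar>) \<le> 2" using P by (simp add: Pr_def)
  have t1: "(\<Sum>k\<in>{1..j}. ?y k) = ?b j" if "1 \<le> j" "j < r" for j
    by (rule telesc) (use that b0 in \<open>auto simp: ep_def\<close>)
  show ?thesis
  proof (cases "1 \<le> j \<and> j < r")
    case True
    have "(\<Sum>k\<in>{1..j}. ?y k) \<le> (\<Sum>k\<in>dm TC r. \<bar>?y k\<bar>)" by (rule sum_le_abs) (use True in \<open>auto simp: dm_def\<close>)
    then have "?b j \<le> 2" using t1[of j] True A by linarith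
    then show ?thesis using True by (auto simp: thC_def)
  next
    case F: False
    show ?thesis
    proof (cases "j = r")
      case True
      have e: "{1..r} = {1..r - 1} \<union> {r}" using r2 by auto
      have s: "(\<Sum>k\<in>{1..r}. ?y k) = (\<Sum>k\<in>{1..r - 1}. ?y k) + ?y r" unfolding e
        by (subst sum.union_disjoint) (use r2 in auto)
      have "(\<Sum>k\<in>{1..r - 1}. ?y k) = ?b (r - 1)" using t1[of "r - 1"] r2 by simp
      moreover have "?y r = 2 * ?b r - ?b (r - 1)" using r2 by (simp add: ep_def)
      ultimately have "(\<Sum>k\<in>{1..r}. ?y k) = 2 * ?b r" using s by simp
      moreover have "(\<Sum>k\<in>{1..r}. ?y k) \<le> (\<Sum>k\<in>dm TC r. \<bar>?y k\<bar>)" by (rule sum_le_abs) (auto simp: dm_def)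
      ultimately have "?b r \<le> 1" using A by linarith
      then show ?thesis using True r2 by (auto simp: thC_def)
    next
      case False
      then have "j \<notin> {1..r}" using F by auto
      then show ?thesis using roots_supp[OF b] F False by (auto simp: thC_def)
    qed
  qed
qed

lemma hr_C: "valid_type TC r \<Longrightarrow> highest_root TC r = thC r"
  by (rule highest_root_eq) (auto intro: thC_roots bound_C)

lemma gr_C: "valid_type TC r \<Longrightarrow> grading_set TC r = {1}"
proof -
  assume v: "valid_type TC r"
  then have r2: "r \<ge> 2" by (simp add: valid_type_def)
  have L: "label TC r (thC r) i \<noteq> 0 \<longleftrightarrow> i = 1" if i: "i \<in> {1..r}" for i
    unfolding labC[OF i] using i r2 by (auto simp: thC_def)
  show ?thesis unfolding grading_set_def hr_C[OF v]
  proof (rule set_eqI)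
    fix i show "i \<in> {i \<in> {1..r}. label TC r (thC r) i \<noteq> 0} \<longleftrightarrow> i \<in> {1}"
      using L[of i] r2 by auto
  qed
qed



definition thD :: "nat \<Rightarrow> nat \<Rightarrow> int" where
  "thD r k = (if k = 1 then 1 else if 2 \<le> k \<and> k \<le> r - 2 then 2 else if k = r - 1 \<or> k = r then 1 else 0)"

definition wD :: "nat \<Rightarrow> nat \<Rightarrow> nat \<Rightarrow> int" where
  "wD r m k = (if m \<le> k \<and> k \<le> r - 2 then 1 else if k = r then 1 else 0)"

definition xD :: "nat \<Rightarrow> nat \<Rightarrow> nat \<Rightarrow> int" where
  "xD r m k = (if 1 \<le> k \<and> k < m then 1 else if m \<le> k \<and> k \<le> r - 2 then 2 else if k = r - 1 \<or> k = r then 1 else 0)"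

lemma thD_roots: assumes v: "valid_type TD r" shows "thD r \<in> roots TD r"
proof -
  have r4: "r \<ge> 4" using v by (simp add: valid_type_def)
  have ir: "r \<in> {1..r}" using r4 by auto
  have "wD r (r - 1) \<in> roots TD r" using roots.simple[OF ir, of TD]
    by (rule back_subst[where P="\<lambda>x. x \<in> roots TD r"]) (use r4 in \<open>auto simp: wD_def unitv_def intro!: ext\<close>)
  then have w1: "wD r 1 \<in> roots TD r"
  proof (rule down_ind[where P="\<lambda>m. wD r m \<in> roots TD r"])
    fix m assume m: "1 < m" "m \<le> r - 1" "wD r m \<in> roots TD r"
    have i: "m - 1 \<in> {1..r}" using m by auto
    have e1: "Suc (m - 1) = m" "m - 1 \<noteq> r" "m - 1 - 1 = m - 2" using m by auto
    have v1: "wD r m (m - 1) = 0" "wD r m m = (if m \<le> r - 2 then 1 else 0)" "wD r m (m - 2) = 0" "wD r m r = 1"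
      using m r4 by (auto simp: wD_def)
    have "label TD r (wD r m) (m - 1) = - 1" unfolding labD[OF r4 i] e1 v1 using m r4
      by (cases "m \<le> r - 2") auto
    from add_root[OF m(3) i this] show "wD r (m - 1) \<in> roots TD r"
      by (rule back_subst[where P="\<lambda>x. x \<in> roots TD r"]) (use m r4 in \<open>auto simp: wD_def unitv_def intro!: ext\<close>)
  qed (use r4 in auto)
  have i1: "r - 1 \<in> {1..r}" using r4 by auto
  have e1: "Suc (r - 1) = r" "r - 1 \<noteq> r" "r - 1 - 1 = r - 2" "r - 1 \<noteq> r - 2" using r4 by auto
  have v1: "wD r 1 (r - 1) = 0" "wD r 1 (r - 2) = 1" using r4 by (auto simp: wD_def)
  have "label TD r (wD r 1) (r - 1) = - 1" unfolding labD[OF r4 i1] e1 v1 using r4 by auto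
  from add_root[OF w1 i1 this] have "xD r (r - 1) \<in> roots TD r"
    by (rule back_subst[where P="\<lambda>x. x \<in> roots TD r"]) (use r4 in \<open>auto simp: wD_def xD_def unitv_def intro!: ext\<close>)
  then have "xD r 2 \<in> roots TD r"
  proof (rule down_ind[where P="\<lambda>m. xD r m \<in> roots TD r"])
    fix m assume m: "2 < m" "m \<le> r - 1" "xD r m \<in> roots TD r"
    have i: "m - 1 \<in> {1..r}" using m by auto
    have e1: "Suc (m - 1) = m" "m - 1 \<noteq> r" "m - 1 - 1 = m - 2" using m by auto
    have v1: "xD r m (m - 1) = 1" "xD r m m = (if m \<le> r - 2 then 2 else 1)" "xD r m (m - 2) = 1" "xD r m r = 1"
      using m r4 by (auto simp: xD_def)
    have "label TD r (xD r m) (m - 1) = - 1" unfolding labD[OF r4 i] e1 v1 using m r4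
      by (cases "m \<le> r - 2") auto
    from add_root[OF m(3) i this] show "xD r (m - 1) \<in> roots TD r"
      by (rule back_subst[where P="\<lambda>x. x \<in> roots TD r"]) (use m r4 in \<open>auto simp: xD_def unitv_def intro!: ext\<close>)
  qed (use r4 in auto)
  moreover have "xD r 2 = thD r" by (auto simp: xD_def thD_def intro!: ext)
  ultimately show ?thesis by simp
qed


lemma bound_D:
  assumes v: "valid_type TD r" and b: "\<beta> \<in> roots TD r"
  shows "\<beta> j \<le> thD r j"
proof -
  have r4: "r \<ge> 4" using v by (simp add: valid_type_def)
  let ?b = "\<lambda>k. (of_int (\<beta> k) :: real)"
  let ?y = "ep TD r ?b"
  have P: "Pr TD r ?y" by (rule roots_Pr[OF _ v b]) (simp add: cl_def)
  have b0: "?b 0 = 0" using roots_supp[OF b, of 0] by simp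
  have A: "(\<Sum>k\<in>dm TD r. \<bar>?y k\<bar>) \<le> 2" using P by (simp add: Pr_def)
  have y1: "\<And>k. \<bar>?y k\<bar> \<le> 1" using P by (simp add: Pr_def)
  have ystd: "?y k = ?b k - ?b (k - 1)" if "1 \<le> k" "k \<le> r - 2" for k using that by (simp add: ep_def)
  have t1: "(\<Sum>k\<in>{1..j}. ?y k) = ?b j" if "j \<le> r - 2" for j
    by (rule telesc) (use that b0 ystd in auto)
  have nn: "\<not> (1 \<le> r - 1 \<and> r - 1 \<le> r - 2)" "\<not> (1 \<le> r \<and> r \<le> r - 2)" "r \<noteq> r - 1" using r4 by auto
  have yr1: "?y (r - 1) = ?b (r - 1) + ?b r - ?b (r - 2)" unfolding ep_def using nn r4 by (auto; arith)
  have yr: "?y r = ?b r - ?b (r - 1)" unfolding ep_def using nn r4 by (auto; arith)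
  have e: "dm TD r = {1..r - 2} \<union> {r - 1, r}" using r4 by (auto simp: dm_def)
  have S: "(\<Sum>k\<in>dm TD r. \<bar>?y k\<bar>) = (\<Sum>k\<in>{1..r - 2}. \<bar>?y k\<bar>) + \<bar>?y (r - 1)\<bar> + \<bar>?y r\<bar>"
    unfolding e by (subst sum.union_disjoint) (use r4 in auto)
  have le: "(\<Sum>k\<in>{1..j}. ?y k) \<le> (\<Sum>k\<in>{1..r - 2}. \<bar>?y k\<bar>)" if "j \<le> r - 2" for j
    by (rule sum_le_abs) (use that in auto)
  have T: "(\<Sum>k\<in>{1..r - 2}. ?y k) = ?b (r - 2)" using t1[of "r - 2"] by simp
  have L2: "(\<Sum>k\<in>{1..r - 2}. ?y k) \<le> (\<Sum>k\<in>{1..r - 2}. \<bar>?y k\<bar>)" using le[of "r - 2"] by simp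
  consider "j = 1" | "2 \<le> j \<and> j \<le> r - 2" | "j = r - 1" | "j = r" | "j \<notin> {1..r}" using r4 by fastforce
  then show ?thesis
  proof cases
    case 1
    have "?y 1 = ?b 1" using ystd[of 1] b0 r4 by simp
    then have "?b 1 \<le> 1" using y1[of 1] by linarith
    then show ?thesis using 1 by (simp add: thD_def)
  next
    case 2
    have "?b j \<le> 2" using t1[of j] le[of j] 2 S A by (smt (verit) abs_ge_zero)
    then show ?thesis using 2 by (auto simp: thD_def)
  next
    case 3
    have "2 * ?b (r - 1) \<le> 2" using T L2 S A yr1 yr by (smt (verit) abs_ge_self abs_minus_cancel)
    then show ?thesis using 3 r4 by (auto simp: thD_def)
  next
    case 4
    have "2 * ?b r \<le> 2" using T L2 S A yr1 yr by (smt (verit) abs_ge_self)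
    then show ?thesis using 4 r4 by (auto simp: thD_def)
  next
    case 5
    then show ?thesis using roots_supp[OF b 5] by (auto simp: thD_def)
  qed
qed

lemma hr_D: "valid_type TD r \<Longrightarrow> highest_root TD r = thD r"
  by (rule highest_root_eq) (auto intro: thD_roots bound_D)

lemma gr_D: "valid_type TD r \<Longrightarrow> grading_set TD r = {2}"
proof -
  assume v: "valid_type TD r"
  then have r4: "r \<ge> 4" by (simp add: valid_type_def)
  have rf: "Suc (Suc 0) \<le> r - 2" "Suc (Suc 0) \<le> r - Suc 0" "r - Suc (Suc 0) = r - 2" using r4 by auto
  have L: "label TD r (thD r) i \<noteq> 0 \<longleftrightarrow> i = 2" if i: "i \<in> {1..r}" for i
  proof -
    consider "i = 1" | "i = 2" | "3 \<le> i \<and> i < r - 2" | "i = r - 2" | "i = r - 1" | "i = r" using i r4 by fastforce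
    then show ?thesis
    proof cases
      case 1 then show ?thesis unfolding labD[OF r4 i] using r4 rf by (auto simp: thD_def; arith)
    next
      case 2 then show ?thesis unfolding labD[OF r4 i] using r4 rf by (auto simp: thD_def; arith)
    next
      case 3 then show ?thesis unfolding labD[OF r4 i] using r4 rf by (auto simp: thD_def; arith)
    next
      case 4
      have e: "Suc (r - 2) = r - 1" "r - 2 - 1 = r - 3" using r4 by auto
      show ?thesis unfolding labD[OF r4 i] unfolding 4 e using r4 rf by (cases "r = 4") (auto simp: thD_def; arith)+
    next
      case 5
      have e: "Suc (r - 1) = r" "r - 1 - 1 = r - 2" using r4 by auto
      show ?thesis unfolding labD[OF r4 i] unfolding 5 e using r4 rf by (auto simp: thD_def; arith)
    next
      case 6
      show ?thesis unfolding labD[OF r4 i] unfolding 6 using r4 rf by (auto simp: thD_def; arith)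
    qed
  qed
  show ?thesis unfolding grading_set_def hr_D[OF v]
  proof (rule set_eqI)
    fix i show "i \<in> {i \<in> {1..r}. label TD r (thD r) i \<noteq> 0} \<longleftrightarrow> i \<in> {2}"
      using L[of i] r4 by auto
  qed
qed



definition lab :: "ltype \<Rightarrow> nat \<Rightarrow> (nat \<Rightarrow> real) \<Rightarrow> nat \<Rightarrow> real" where
  "lab t r y k = (if k \<in> {1..r} then pr t r y k else 0)"

definition WS :: "ltype \<Rightarrow> nat \<Rightarrow> ((nat \<Rightarrow> real) \<Rightarrow> bool) \<Rightarrow> (nat \<Rightarrow> int) set" where
  "WS t r Y = {\<mu>. \<exists>y. Y y \<and> (\<forall>k. of_int (\<mu> k) = lab t r y k)}"

lemma pr_ep_uv:
  assumes "cl t" "valid_type t r" "i \<in> {1..r}" "k \<in> {1..r}"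
  shows "pr t r (ep t r (uv i)) k = of_int (cartan t r k i)"
proof -
  have "pr t r (ep t r (uv i)) k = (\<Sum>j\<in>{1..r}. uv i j * of_int (cartan t r k j))"
    by (rule L1[symmetric]) (use assms in \<open>auto simp: uv_def unitv_def\<close>)
  also have "\<dots> = (\<Sum>j\<in>{1..r}. if j = i then of_int (cartan t r k j) else 0)"
    by (rule sum.cong[OF HOL.refl]) (auto simp: uv_def unitv_def)
  also have "\<dots> = of_int (cartan t r k i)" using assms(3) by simp
  finally show ?thesis .
qed

lemma pr_bound:
  assumes "cl t" "\<And>j. \<bar>y j\<bar> \<le> 1"
  shows "\<bar>pr t r y k\<bar> \<le> 2"
proof -
  have a1: "\<bar>y a - y b\<bar> \<le> 2" for a b
    using assms(2)[of a] assms(2)[of b] by (auto simp: abs_le_iff)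
  have a2: "\<bar>y a + y b\<bar> \<le> 2" for a b
    using assms(2)[of a] assms(2)[of b] by (auto simp: abs_le_iff)
  have a3: "\<bar>2 * y a\<bar> \<le> 2" for a
    using assms(2)[of a] by (auto simp: abs_le_iff)
  show ?thesis using assms(1) a1[of k "Suc k"] a1[of r "Suc r"] a2[of "r - 1" r] a3[of r] assms(2)[of r]
    by (auto simp: pr_def cl_def)
qed

lemma dual_cl:
  fixes w :: "nat \<Rightarrow> real"
  assumes cl: "cl t" and v: "valid_type t r"
    and w: "\<And>i. i \<in> {1..r} \<Longrightarrow> (\<Sum>k\<in>{1..r}. w k * of_int (cartan t r k i)) > 0"
    and Ycl: "\<And>y i. Y y \<Longrightarrow> i \<in> {1..r} \<Longrightarrow> Y (act t r i y)"
    and Ybd: "\<And>y j. Y y \<Longrightarrow> \<bar>y j\<bar> \<le> 1"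
    and y0: "Y y0" "\<And>k. of_int (- c k) = lab t r y0 k"
    and uniq: "\<And>y. Y y \<Longrightarrow> (\<forall>i\<in>{1..r}. pr t r y i \<ge> 0) \<Longrightarrow> (\<forall>k. of_int (\<nu>0 k) = lab t r y k)"
    and cz: "\<And>k. k \<notin> {1..r} \<Longrightarrow> c k = 0"
  shows "dual_hw t r c = \<nu>0"
proof (rule dual_hw_eq[where S = "WS t r Y", OF w])
  show "(\<lambda>k. - c k) \<in> WS t r Y" unfolding WS_def using y0 by auto
  show "refl_wt t r i \<mu> \<in> WS t r Y" if m: "\<mu> \<in> WS t r Y" and i: "i \<in> {1..r}" for \<mu> i
  proof -
    obtain y where y: "Y y" "\<And>k. of_int (\<mu> k) = lab t r y k" using m unfolding WS_def by blast
    have "of_int (refl_wt t r i \<mu> k) = lab t r (act t r i y) k" for k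
    proof (cases "k \<in> {1..r}")
      case True
      have "of_int (refl_wt t r i \<mu> k) = lab t r y k - lab t r y i * of_int (cartan t r k i)"
        using True y(2)[of k] y(2)[of i] by (simp add: refl_wt_def)
      also have "\<dots> = pr t r y k - pr t r y i * pr t r (ep t r (uv i)) k"
        using True i pr_ep_uv[OF cl v i True] by (simp add: lab_def)
      also have "\<dots> = pr t r (act t r i y) k" unfolding act_def pr_lin by simp
      finally show ?thesis using True by (simp add: lab_def)
    next
      case False
      then have "refl_wt t r i \<mu> k = \<mu> k" by (auto simp: refl_wt_def)
      moreover have "lab t r (act t r i y) k = 0" "lab t r y k = 0" using False unfolding lab_def by auto
      ultimately show ?thesis using y(2)[of k] by simp
    qed
    then show ?thesis unfolding WS_def using Ycl[OF y(1) i] by blast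
  qed
  show "finite (WS t r Y)"
  proof (rule finite_subset)
    show "WS t r Y \<subseteq> {\<mu>. \<forall>x. (x \<in> {1..r} \<longrightarrow> \<mu> x \<in> {-2..2}) \<and> (x \<notin> {1..r} \<longrightarrow> \<mu> x = 0)}"
    proof
      fix \<mu> assume "\<mu> \<in> WS t r Y"
      then obtain y where y: "Y y" "\<And>k. of_int (\<mu> k) = lab t r y k" unfolding WS_def by blast
      have "\<bar>of_int (\<mu> x) :: real\<bar> \<le> 2" for x
        using y(2)[of x] pr_bound[OF cl Ybd[OF y(1)], where r=r and k=x] by (auto simp: lab_def)
      then have "\<bar>\<mu> x\<bar> \<le> 2" for x by (metis of_int_abs of_int_le_iff of_int_numeral)
      moreover have "x \<notin> {1..r} \<Longrightarrow> \<mu> x = 0" for x using y(2)[of x] by (auto simp: lab_def)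
      ultimately show "\<mu> \<in> {\<mu>. \<forall>x. (x \<in> {1..r} \<longrightarrow> \<mu> x \<in> {-2..2}) \<and> (x \<notin> {1..r} \<longrightarrow> \<mu> x = 0)}"
        by (auto simp: abs_le_iff; smt (verit))
    qed
    show "finite {\<mu>::nat\<Rightarrow>int. \<forall>x. (x \<in> {1..r} \<longrightarrow> \<mu> x \<in> {-2..2}) \<and> (x \<notin> {1..r} \<longrightarrow> \<mu> x = 0)}"
      by (rule finite_set_of_finite_funs) auto
  qed
  show "\<nu> = \<nu>0" if m: "\<nu> \<in> WS t r Y" and d: "dominant r \<nu>" for \<nu>
  proof -
    obtain y where y: "Y y" "\<And>k. of_int (\<nu> k) = lab t r y k" using m unfolding WS_def by blast
    have "\<forall>i\<in>{1..r}. pr t r y i \<ge> 0"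
    proof
      fix i assume i: "i \<in> {1..r}"
      have "0 \<le> \<nu> i" using d i by (simp add: dominant_def)
      then show "pr t r y i \<ge> 0" using y(2)[of i] i by (simp add: lab_def)
    qed
    then have "\<forall>k. of_int (\<nu>0 k) = lab t r y k" by (rule uniq[OF y(1)])
    then have "of_int (\<nu> k) = (of_int (\<nu>0 k) :: real)" for k using y(2)[of k] by simp
    then show ?thesis by (intro ext) simp
  qed
  show "\<And>k. k \<notin> {1..r} \<Longrightarrow> c k = 0" by (rule cz)
qed

lemma antitone:
  assumes "\<And>i. 1 \<le> i \<Longrightarrow> i < n \<Longrightarrow> y (Suc i) \<le> (y i :: real)"
  shows "1 \<le> a \<Longrightarrow> a \<le> b \<Longrightarrow> b \<le> n \<Longrightarrow> y b \<le> y a"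
proof (induction b)
  case 0 then show ?case by simp
next
  case (Suc b)
  show ?case
  proof (cases "a = Suc b")
    case True then show ?thesis by simp
  next
    case False
    then have "y b \<le> y a" using Suc by auto
    moreover have "y (Suc b) \<le> y b" using assms[of b] Suc False by auto
    ultimately show ?thesis by simp
  qed
qed

lemma sorted01:
  assumes anti: "\<And>a b. 1 \<le> a \<Longrightarrow> a \<le> b \<Longrightarrow> b \<le> n \<Longrightarrow> y b \<le> (y a :: real)"
    and vals: "\<And>j. j \<in> {1..n} \<Longrightarrow> y j = 0 \<or> y j = 1"
    and s: "(\<Sum>j\<in>{1..n}. y j) = real k"
    and j: "j \<in> {1..n}"
  shows "y j = (if j \<le> k then 1 else 0)"
proof (cases "y j = 1")
  case True
  have "(\<Sum>l\<in>{1..j}. y l) = (\<Sum>l\<in>{1..j}. 1)"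
  proof (rule sum.cong[OF HOL.refl])
    fix l assume l: "l \<in> {1..j}"
    then have "y j \<le> y l" using anti[of l j] j by auto
    then show "y l = 1" using vals[of l] l j True by auto
  qed
  then have "(\<Sum>l\<in>{1..j}. y l) = real j" by simp
  moreover have "(\<Sum>l\<in>{1..j}. y l) \<le> (\<Sum>l\<in>{1..n}. y l)"
  proof (rule sum_mono2)
    fix x assume "x \<in> {1..n} - {1..j}"
    then show "0 \<le> y x" using vals[of x] by auto
  qed (use j in auto)
  ultimately have "j \<le> k" using s by simp
  then show ?thesis using True by simp
next
  case False
  then have y0: "y j = 0" using vals[OF j] by auto
  have e: "{1..n} = {1..j - 1} \<union> {j..n}" "{1..j - 1} \<inter> {j..n} = {}" using j by auto
  have z: "(\<Sum>l\<in>{j..n}. y l) = 0"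
  proof (rule sum.neutral, rule ballI)
    fix l assume l: "l \<in> {j..n}"
    then have "y l \<le> y j" using anti[of j l] j by auto
    then show "y l = 0" using vals[of l] l j y0 by auto
  qed
  have "(\<Sum>l\<in>{1..j - 1}. y l) \<le> (\<Sum>l\<in>{1..j - 1}. 1)"
    by (rule sum_mono) (use vals j in fastforce)
  then have "(\<Sum>l\<in>{1..j - 1}. y l) \<le> real (j - 1)" by simp
  moreover have "(\<Sum>j\<in>{1..n}. y j) = (\<Sum>l\<in>{1..j - 1}. y l) + (\<Sum>l\<in>{j..n}. y l)"
    unfolding e(1) by (rule sum.union_disjoint) (use e in auto)
  ultimately have "real k \<le> real (j - 1)" using s z by simp
  then have "k < j" using j by auto
  then show ?thesis using y0 by simp
qed



definition YA :: "nat \<Rightarrow> nat \<Rightarrow> (nat \<Rightarrow> real) \<Rightarrow> bool" where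
  "YA r n y = ((\<forall>j. j \<notin> {1..Suc r} \<longrightarrow> y j = 0) \<and> (\<forall>j\<in>{1..Suc r}. y j = 0 \<or> y j = 1)
     \<and> (\<Sum>j\<in>{1..Suc r}. y j) = real n)"

lemma YA_cl:
  assumes v: "valid_type TA r" and Y: "YA r n y" and i: "i \<in> {1..r}"
  shows "YA r n (act TA r i y)"
proof -
  have p: "pm {1..Suc r} y (act TA r i y)" using act_pm[OF _ v i, of y] by (simp add: cl_def dm_def)
  have a: "\<forall>j. j \<notin> {1..Suc r} \<longrightarrow> act TA r i y j = 0" using spm_out[OF pm_spm[OF p]] Y by (simp add: YA_def)
  have b: "\<forall>j\<in>{1..Suc r}. act TA r i y j \<in> {0, 1}" using pm_vals_D[OF p, of "{0,1}"] Y by (simp add: YA_def)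
  have c: "(\<Sum>j\<in>{1..Suc r}. act TA r i y j) = real n" using pm_sum[OF p, of "\<lambda>x. x"] Y by (simp add: YA_def)
  show ?thesis unfolding YA_def using a b c by auto
qed

lemma dual_A:
  assumes v: "valid_type TA r" and k: "k \<in> {1..r}"
  shows "dual_hw TA r (unitv k) = unitv (Suc r - k)"
proof (rule dual_cl[where Y = "YA r (Suc r - k)"])
  show "cl TA" by (simp add: cl_def)
  show "valid_type TA r" by (rule v)
  show "\<And>i. i \<in> {1..r} \<Longrightarrow> (\<Sum>k\<in>{1..r}. (\<Sum>i\<in>{1..r}. MA r i k) * of_int (cartan TA r k i)) > 0"
    by (rule w_from_M) (rule MC_A)
  show "\<And>y i. YA r (Suc r - k) y \<Longrightarrow> i \<in> {1..r} \<Longrightarrow> YA r (Suc r - k) (act TA r i y)"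
    by (rule YA_cl[OF v])
  show "\<And>y j. YA r (Suc r - k) y \<Longrightarrow> \<bar>y j\<bar> \<le> 1"
  proof -
    fix y j assume Y: "YA r (Suc r - k) y"
    show "\<bar>y j\<bar> \<le> 1"
    proof (cases "j \<in> {1..Suc r}")
      case True
      then have "y j = 0 \<or> y j = 1" using Y unfolding YA_def by blast
      then show ?thesis by auto
    next
      case False
      then have "y j = 0" using Y unfolding YA_def by blast
      then show ?thesis by simp
    qed
  qed
  let ?y0 = "\<lambda>j. if k < j \<and> j \<le> Suc r then 1 else (0::real)"
  have s: "(\<Sum>j\<in>{1..Suc r}. ?y0 j) = (\<Sum>j\<in>{Suc k..Suc r}. 1)"
    by (rule sum.mono_neutral_cong_right) (use k in auto)
  show "YA r (Suc r - k) ?y0" unfolding YA_def using s k by auto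
  show "\<And>m. of_int (- unitv k m) = lab TA r ?y0 m"
    using k by (auto simp: lab_def pr_def unitv_def)
  show "\<forall>m. of_int (unitv (Suc r - k) m) = lab TA r y m"
    if Y: "YA r (Suc r - k) y" and d: "\<forall>i\<in>{1..r}. pr TA r y i \<ge> 0" for y
  proof -
    have anti: "y b \<le> y a" if "1 \<le> a" "a \<le> b" "b \<le> Suc r" for a b
    proof (rule antitone[OF _ that])
      fix i assume "1 \<le> i" "i < Suc r"
      then show "y (Suc i) \<le> y i" using d[rule_format, of i] by (auto simp: pr_def split: if_splits)
    qed
    have vals: "\<And>j. j \<in> {1..Suc r} \<Longrightarrow> y j = 0 \<or> y j = 1" using Y by (simp add: YA_def)
    have sm: "(\<Sum>j\<in>{1..Suc r}. y j) = real (Suc r - k)" using Y by (simp add: YA_def)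
    have yv: "y j = (if j \<le> Suc r - k then 1 else 0)" if "j \<in> {1..Suc r}" for j
      by (rule sorted01[OF anti vals sm that]) auto
    show ?thesis
    proof
      fix m show "of_int (unitv (Suc r - k) m) = lab TA r y m"
      proof (cases "m \<in> {1..r}")
        case True
        have "pr TA r y m = y m - y (Suc m)" by (simp add: pr_def)
        then show ?thesis using True yv[of m] yv[of "Suc m"] k by (auto simp: lab_def unitv_def)
      next
        case False then show ?thesis using k by (auto simp: lab_def unitv_def)
      qed
    qed
  qed
  show "\<And>m. m \<notin> {1..r} \<Longrightarrow> unitv k m = 0" using k by (auto simp: unitv_def)
qed



definition YV :: "nat \<Rightarrow> nat \<Rightarrow> (nat \<Rightarrow> real) \<Rightarrow> bool" where
  "YV r n y = ((\<forall>j. j \<notin> {1..r} \<longrightarrow> y j = 0) \<and> (\<forall>j\<in>{1..r}. y j \<in> {-1, 0, 1})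
     \<and> (\<Sum>j\<in>{1..r}. \<bar>y j\<bar>) = real n)"

definition YS :: "nat \<Rightarrow> (nat \<Rightarrow> real) \<Rightarrow> bool" where
  "YS r y = ((\<forall>j. j \<notin> {1..r} \<longrightarrow> y j = 0) \<and> (\<forall>j\<in>{1..r}. y j \<in> {-1/2, 1/2}))"

lemma dm_nA: "t \<noteq> TA \<Longrightarrow> dm t r = {1..r}" by (simp add: dm_def)

lemma YV_cl:
  assumes "cl t" "t \<noteq> TA" "valid_type t r" "YV r n y" "i \<in> {1..r}"
  shows "YV r n (act t r i y)"
proof -
  have p: "spm {1..r} y (act t r i y)" using act_spm[OF assms(1,3,5), of y] dm_nA[OF assms(2)] by simp
  have a: "\<forall>j. j \<notin> {1..r} \<longrightarrow> act t r i y j = 0" using spm_out[OF p] assms(4) by (simp add: YV_def)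
  have b: "\<forall>j\<in>{1..r}. act t r i y j \<in> {-1, 0, 1}" using spm_vals_D[OF p, of "{-1,0,1}"] assms(4) by (simp add: YV_def)
  have c: "(\<Sum>j\<in>{1..r}. \<bar>act t r i y j\<bar>) = real n" using spm_abs_sum[OF p, of "\<lambda>x. x"] assms(4) by (simp add: YV_def)
  show ?thesis unfolding YV_def using a b c by blast
qed

lemma YS_cl:
  assumes "cl t" "t \<noteq> TA" "valid_type t r" "YS r y" "i \<in> {1..r}"
  shows "YS r (act t r i y)"
proof -
  have p: "spm {1..r} y (act t r i y)" using act_spm[OF assms(1,3,5), of y] dm_nA[OF assms(2)] by simp
  have a: "\<forall>j. j \<notin> {1..r} \<longrightarrow> act t r i y j = 0" using spm_out[OF p] assms(4) by (simp add: YS_def)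
  have b: "\<forall>j\<in>{1..r}. act t r i y j \<in> {-1/2, 1/2}" using spm_vals_D[OF p, of "{-1/2,1/2}"] assms(4) by (simp add: YS_def)
  show ?thesis unfolding YS_def using a b by blast
qed

lemma YV_bd: "YV r n y \<Longrightarrow> \<bar>y j\<bar> \<le> 1"
proof -
  assume Y: "YV r n y"
  show "\<bar>y j\<bar> \<le> 1"
  proof (cases "j \<in> {1..r}")
    case True
    then have "y j \<in> {-1, 0, 1}" using Y unfolding YV_def by blast
    then show ?thesis by auto
  next
    case False
    then have "y j = 0" using Y unfolding YV_def by blast
    then show ?thesis by simp
  qed
qed

lemma YS_bd: "YS r y \<Longrightarrow> \<bar>y j\<bar> \<le> 1"
proof -
  assume Y: "YS r y"
  show "\<bar>y j\<bar> \<le> 1"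
  proof (cases "j \<in> {1..r}")
    case True
    then have "y j \<in> {-1/2, 1/2}" using Y unfolding YS_def by blast
    then show ?thesis by auto
  next
    case False
    then have "y j = 0" using Y unfolding YS_def by blast
    then show ?thesis by simp
  qed
qed

lemma anti_from_pr:
  assumes "\<forall>i\<in>{1..r}. pr t r y i \<ge> 0"
  shows "\<And>a b. 1 \<le> a \<Longrightarrow> a \<le> b \<Longrightarrow> b \<le> r \<Longrightarrow> y b \<le> y a"
proof -
  fix a b :: nat assume ab: "1 \<le> a" "a \<le> b" "b \<le> r"
  show "y b \<le> y a"
  proof (rule antitone[OF _ ab])
    fix i assume "1 \<le> i" "i < r"
    then show "y (Suc i) \<le> y i" using assms[rule_format, of i] by (auto simp: pr_def)
  qed
qed

lemma uniq_vec:
  assumes Y: "YV r n y" and anti: "\<And>a b. 1 \<le> a \<Longrightarrow> a \<le> b \<Longrightarrow> b \<le> r \<Longrightarrow> y b \<le> y a"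
    and last: "y r \<ge> 0"
  shows "\<And>j. j \<in> {1..r} \<Longrightarrow> y j = (if j \<le> n then 1 else 0)"
proof -
  fix j assume j: "j \<in> {1..r}"
  have nn: "y l \<ge> 0" if "l \<in> {1..r}" for l using anti[of l r] that last by auto
  have vals: "y l = 0 \<or> y l = 1" if "l \<in> {1..r}" for l
  proof -
    have "y l \<in> {-1, 0, 1}" using Y that unfolding YV_def by blast
    then show ?thesis using nn[OF that] by auto
  qed
  have "(\<Sum>l\<in>{1..r}. y l) = (\<Sum>l\<in>{1..r}. \<bar>y l\<bar>)" by (rule sum.cong) (use nn in auto)
  then have s: "(\<Sum>l\<in>{1..r}. y l) = real n" using Y by (simp add: YV_def)
  show "y j = (if j \<le> n then 1 else 0)" by (rule sorted01[OF anti vals s j]) auto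
qed



lemma dual_Bv:
  assumes v: "valid_type TB r"
  shows "dual_hw TB r (unitv 1) = unitv 1"
proof (rule dual_cl[where Y = "YV r 1"])
  have r2: "r \<ge> 2" using v by (simp add: valid_type_def)
  show "cl TB" by (simp add: cl_def)
  show "valid_type TB r" by (rule v)
  show "\<And>i. i \<in> {1..r} \<Longrightarrow> (\<Sum>k\<in>{1..r}. (\<Sum>i\<in>{1..r}. MB r i k) * of_int (cartan TB r k i)) > 0"
    by (rule w_from_M) (rule MC_B)
  show "\<And>y i. YV r 1 y \<Longrightarrow> i \<in> {1..r} \<Longrightarrow> YV r 1 (act TB r i y)"
    by (rule YV_cl[OF _ _ v]) (auto simp: cl_def)
  show "\<And>y j. YV r 1 y \<Longrightarrow> \<bar>y j\<bar> \<le> 1" by (rule YV_bd)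
  let ?y0 = "\<lambda>j. if j = 1 then -1 else (0::real)"
  have "(\<Sum>j\<in>{1..r}. \<bar>?y0 j\<bar>) = (\<Sum>j\<in>{1..r}. if j = 1 then 1 else 0)"
    by (intro sum.cong[OF HOL.refl]) simp
  also have "\<dots> = 1" using r2 by simp
  finally have "(\<Sum>j\<in>{1..r}. \<bar>?y0 j\<bar>) = 1" .
  then show "YV r 1 ?y0" unfolding YV_def using r2 by auto
  show "\<And>m. of_int (- unitv 1 m) = lab TB r ?y0 m"
    using r2 by (auto simp: lab_def pr_def unitv_def)
  show "\<forall>m. of_int (unitv 1 m) = lab TB r y m"
    if Y: "YV r 1 y" and d: "\<forall>i\<in>{1..r}. pr TB r y i \<ge> 0" for y
  proof -
    have last: "y r \<ge> 0" using d[rule_format, of r] r2 by (simp add: pr_def)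
    have yv: "\<And>j. j \<in> {1..r} \<Longrightarrow> y j = (if j \<le> 1 then 1 else 0)"
      by (rule uniq_vec[OF Y anti_from_pr[OF d] last])
    show ?thesis
    proof
      fix m show "of_int (unitv 1 m) = lab TB r y m"
      proof (cases "m \<in> {1..r}")
        case True
        show ?thesis
        proof (cases "m = r")
          case True then show ?thesis using yv[of r] r2 by (auto simp: lab_def unitv_def pr_def)
        next
          case False then show ?thesis using \<open>m \<in> {1..r}\<close> yv[of m] yv[of "Suc m"] r2
            by (auto simp: lab_def unitv_def pr_def)
        qed
      next
        case False then show ?thesis using r2 by (auto simp: lab_def unitv_def)
      qed
    qed
  qed
  show "\<And>m. m \<notin> {1..r} \<Longrightarrow> unitv 1 m = 0" using r2 by (auto simp: unitv_def)
qed

lemma dual_Bs: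
  assumes v: "valid_type TB r"
  shows "dual_hw TB r (unitv r) = unitv r"
proof (rule dual_cl[where Y = "YS r"])
  have r2: "r \<ge> 2" using v by (simp add: valid_type_def)
  show "cl TB" by (simp add: cl_def)
  show "valid_type TB r" by (rule v)
  show "\<And>i. i \<in> {1..r} \<Longrightarrow> (\<Sum>k\<in>{1..r}. (\<Sum>i\<in>{1..r}. MB r i k) * of_int (cartan TB r k i)) > 0"
    by (rule w_from_M) (rule MC_B)
  show "\<And>y i. YS r y \<Longrightarrow> i \<in> {1..r} \<Longrightarrow> YS r (act TB r i y)"
    by (rule YS_cl[OF _ _ v]) (auto simp: cl_def)
  show "\<And>y j. YS r y \<Longrightarrow> \<bar>y j\<bar> \<le> 1" by (rule YS_bd)
  let ?y0 = "\<lambda>j. if j \<in> {1..r} then -1/2 else (0::real)"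
  show "YS r ?y0" unfolding YS_def by auto
  show "\<And>m. of_int (- unitv r m) = lab TB r ?y0 m"
    using r2 by (auto simp: lab_def pr_def unitv_def)
  show "\<forall>m. of_int (unitv r m) = lab TB r y m"
    if Y: "YS r y" and d: "\<forall>i\<in>{1..r}. pr TB r y i \<ge> 0" for y
  proof -
    have l0: "y r \<ge> 0" using d[rule_format, of r] r2 by (simp add: pr_def)
    have "y r \<in> {-1/2, 1/2}" using Y r2 unfolding YS_def by auto
    then have lr: "y r = 1/2" using l0 by auto
    have yv: "y j = 1/2" if j: "j \<in> {1..r}" for j
    proof -
      have "y r \<le> y j" using anti_from_pr[OF d, of j r] j by auto
      moreover have "y j \<in> {-1/2, 1/2}" using Y j unfolding YS_def by auto
      ultimately show ?thesis using lr by auto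
    qed
    show ?thesis
    proof
      fix m show "of_int (unitv r m) = lab TB r y m"
      proof (cases "m \<in> {1..r}")
        case True
        show ?thesis
        proof (cases "m = r")
          case True then show ?thesis using lr r2 by (auto simp: lab_def unitv_def pr_def)
        next
          case False then show ?thesis using \<open>m \<in> {1..r}\<close> yv[of m] yv[of "Suc m"]
            by (auto simp: lab_def unitv_def pr_def)
        qed
      next
        case False then show ?thesis using r2 by (auto simp: lab_def unitv_def)
      qed
    qed
  qed
  show "\<And>m. m \<notin> {1..r} \<Longrightarrow> unitv r m = 0" using r2 by (auto simp: unitv_def)
qed

lemma dual_C:
  assumes v: "valid_type TC r" and k: "k \<in> {1..r}"
  shows "dual_hw TC r (unitv k) = unitv k"
proof (rule dual_cl[where Y = "YV r k"])
  have r2: "r \<ge> 2" using v by (simp add: valid_type_def)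
  show "cl TC" by (simp add: cl_def)
  show "valid_type TC r" by (rule v)
  show "\<And>i. i \<in> {1..r} \<Longrightarrow> (\<Sum>k\<in>{1..r}. (\<Sum>i\<in>{1..r}. MC r i k) * of_int (cartan TC r k i)) > 0"
    by (rule w_from_M) (rule MC_C)
  show "\<And>y i. YV r k y \<Longrightarrow> i \<in> {1..r} \<Longrightarrow> YV r k (act TC r i y)"
    by (rule YV_cl[OF _ _ v]) (auto simp: cl_def)
  show "\<And>y j. YV r k y \<Longrightarrow> \<bar>y j\<bar> \<le> 1" by (rule YV_bd)
  let ?y0 = "\<lambda>j. if 1 \<le> j \<and> j \<le> k then -1 else (0::real)"
  have "(\<Sum>j\<in>{1..r}. \<bar>?y0 j\<bar>) = (\<Sum>j\<in>{1..k}. 1)"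
    by (rule sum.mono_neutral_cong_right) (use k in auto)
  then show "YV r k ?y0" unfolding YV_def using k by auto
  show "\<And>m. of_int (- unitv k m) = lab TC r ?y0 m"
    using k by (auto simp: lab_def pr_def unitv_def)
  show "\<forall>m. of_int (unitv k m) = lab TC r y m"
    if Y: "YV r k y" and d: "\<forall>i\<in>{1..r}. pr TC r y i \<ge> 0" for y
  proof -
    have last: "y r \<ge> 0" using d[rule_format, of r] r2 by (simp add: pr_def)
    have yv: "\<And>j. j \<in> {1..r} \<Longrightarrow> y j = (if j \<le> k then 1 else 0)"
      by (rule uniq_vec[OF Y anti_from_pr[OF d] last])
    show ?thesis
    proof
      fix m show "of_int (unitv k m) = lab TC r y m"
      proof (cases "m \<in> {1..r}")
        case True
        show ?thesis
        proof (cases "m = r")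
          case True then show ?thesis using yv[of r] r2 k by (auto simp: lab_def unitv_def pr_def)
        next
          case False then show ?thesis using \<open>m \<in> {1..r}\<close> yv[of m] yv[of "Suc m"] k
            by (auto simp: lab_def unitv_def pr_def)
        qed
      next
        case False then show ?thesis using k r2 by (auto simp: lab_def unitv_def)
      qed
    qed
  qed
  show "\<And>m. m \<notin> {1..r} \<Longrightarrow> unitv k m = 0" using k by (auto simp: unitv_def)
qed

lemma dual_Dv:
  assumes v: "valid_type TD r"
  shows "dual_hw TD r (unitv 1) = unitv 1"
proof (rule dual_cl[where Y = "YV r 1"])
  have r4: "r \<ge> 4" using v by (simp add: valid_type_def)
  show "cl TD" by (simp add: cl_def)
  show "valid_type TD r" by (rule v)
  show "\<And>i. i \<in> {1..r} \<Longrightarrow> (\<Sum>k\<in>{1..r}. (\<Sum>i\<in>{1..r}. MD r i k) * of_int (cartan TD r k i)) > 0"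
    by (rule w_from_M) (rule MC_D[OF r4])
  show "\<And>y i. YV r 1 y \<Longrightarrow> i \<in> {1..r} \<Longrightarrow> YV r 1 (act TD r i y)"
    by (rule YV_cl[OF _ _ v]) (auto simp: cl_def)
  show "\<And>y j. YV r 1 y \<Longrightarrow> \<bar>y j\<bar> \<le> 1" by (rule YV_bd)
  let ?y0 = "\<lambda>j. if j = 1 then -1 else (0::real)"
  have "(\<Sum>j\<in>{1..r}. \<bar>?y0 j\<bar>) = (\<Sum>j\<in>{1..r}. if j = 1 then 1 else 0)"
    by (intro sum.cong[OF HOL.refl]) simp
  also have "\<dots> = 1" using r4 by simp
  finally have "(\<Sum>j\<in>{1..r}. \<bar>?y0 j\<bar>) = 1" .
  then show "YV r 1 ?y0" unfolding YV_def using r4 by auto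
  show "\<And>m. of_int (- unitv 1 m) = lab TD r ?y0 m"
    using r4 by (auto simp: lab_def pr_def unitv_def)
  show "\<forall>m. of_int (unitv 1 m) = lab TD r y m"
    if Y: "YV r 1 y" and d: "\<forall>i\<in>{1..r}. pr TD r y i \<ge> 0" for y
  proof -
    have anti: "\<And>a b. 1 \<le> a \<Longrightarrow> a \<le> b \<Longrightarrow> b \<le> r \<Longrightarrow> y b \<le> y a" by (rule anti_from_pr[OF d])
    have pr_r: "y (r - 1) + y r \<ge> 0" using d[rule_format, of r] r4 by (simp add: pr_def)
    have last: "y r \<ge> 0"
    proof (rule ccontr)
      assume "\<not> y r \<ge> 0"
      moreover have "y r \<in> {-1, 0, 1}" using Y r4 unfolding YV_def by auto
      ultimately have yr: "y r = -1" by auto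
      have "y (r - 1) \<in> {-1, 0, 1}" using Y r4 unfolding YV_def by auto
      then have yr1: "y (r - 1) = 1" using pr_r yr by auto
      have "(\<Sum>j\<in>{r - 1, r}. \<bar>y j\<bar>) \<le> (\<Sum>j\<in>{1..r}. \<bar>y j\<bar>)"
        by (rule sum_mono2) (use r4 in auto)
      then have "2 \<le> (\<Sum>j\<in>{1..r}. \<bar>y j\<bar>)" using yr yr1 r4 by simp
      then show False using Y by (simp add: YV_def)
    qed
    have yv: "\<And>j. j \<in> {1..r} \<Longrightarrow> y j = (if j \<le> 1 then 1 else 0)"
      by (rule uniq_vec[OF Y anti last])
    show ?thesis
    proof
      fix m show "of_int (unitv 1 m) = lab TD r y m"
      proof (cases "m \<in> {1..r}")
        case True
        show ?thesis
        proof (cases "m = r")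
          case True then show ?thesis using yv[of r] yv[of "r - 1"] r4 by (auto simp: lab_def unitv_def pr_def)
        next
          case False then show ?thesis using \<open>m \<in> {1..r}\<close> yv[of m] yv[of "Suc m"] r4
            by (auto simp: lab_def unitv_def pr_def)
        qed
      next
        case False then show ?thesis using r4 by (auto simp: lab_def unitv_def)
      qed
    qed
  qed
  show "\<And>m. m \<notin> {1..r} \<Longrightarrow> unitv 1 m = 0" using r4 by (auto simp: unitv_def)
qed



definition NN :: "nat \<Rightarrow> (nat \<Rightarrow> real) \<Rightarrow> int" where
  "NN r y = (\<Sum>j\<in>{1..r}. if y j < 0 then 1 else 0)"

definition YD :: "nat \<Rightarrow> nat \<Rightarrow> (nat \<Rightarrow> real) \<Rightarrow> bool" where
  "YD r p y = (YS r y \<and> even (NN r y + int p))"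

lemma split_last: "(r::nat) \<ge> 1 \<Longrightarrow> (\<Sum>j\<in>{1..r}. f j) = (\<Sum>j\<in>{1..r - 1}. f j) + (f r :: 'a::comm_monoid_add)"
proof -
  assume r: "r \<ge> 1"
  have e: "{1..r} = insert r {1..r - 1}" using r by auto
  have "r \<notin> {1..r - 1}" using r by auto
  then show ?thesis unfolding e by (simp add: add.commute)
qed

lemma split3: "(r::nat) \<ge> 4 \<Longrightarrow> (\<Sum>j\<in>{1..r}. f j) = (\<Sum>j\<in>{1..r - 2}. f j) + f (r - 1) + (f r :: 'a::comm_monoid_add)"
proof -
  assume r: "r \<ge> 4"
  have "(\<Sum>j\<in>{1..r}. f j) = (\<Sum>j\<in>{1..r - 1}. f j) + f r" using split_last[of r f] r by simp
  moreover have "(\<Sum>j\<in>{1..r - 1}. f j) = (\<Sum>j\<in>{1..r - 1 - 1}. f j) + f (r - 1)" using split_last[of "r - 1" f] r by simp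
  moreover have "r - 1 - 1 = r - 2" by simp
  ultimately show ?thesis by simp
qed

lemma YD_cl:
  assumes v: "valid_type TD r" and Y: "YD r p y" and i: "i \<in> {1..r}"
  shows "YD r p (act TD r i y)"
proof -
  have r4: "r \<ge> 4" using v by (simp add: valid_type_def)
  have ys: "YS r (act TD r i y)" using YS_cl[OF _ _ v _ i] Y by (simp add: YD_def cl_def)
  have "even (NN r (act TD r i y) + int p)"
  proof (cases "i < r")
    case True
    have p: "pm {1..r} y (act TD r i y)" using act_pm[OF _ v i, of y] True by (simp add: cl_def dm_def)
    have "NN r (act TD r i y) = NN r y" unfolding NN_def by (rule pm_sum[OF p])
    then show ?thesis using Y by (simp add: YD_def)
  next
    case False
    then have ir: "i = r" using i by auto
    let ?y' = "act TD r r y"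
    have a: "?y' = (\<lambda>j. if j = r - 1 then - y r else if j = r then - y (r - 1) else y j)" by (rule act_D[OF v])
    have v1: "y (r - 1) \<in> {-1/2, 1/2}" "y r \<in> {-1/2, 1/2}" using Y r4 unfolding YD_def YS_def by auto
    have s1: "NN r ?y' = (\<Sum>j\<in>{1..r - 2}. if ?y' j < 0 then 1 else 0) + (if ?y' (r - 1) < 0 then 1 else 0) + (if ?y' r < 0 then 1 else 0)"
      unfolding NN_def by (rule split3[OF r4])
    have s2: "NN r y = (\<Sum>j\<in>{1..r - 2}. if y j < 0 then 1 else 0) + (if y (r - 1) < 0 then 1 else 0) + (if y r < 0 then 1 else 0)"
      unfolding NN_def by (rule split3[OF r4])
    have s3: "(\<Sum>j\<in>{1..r - 2}. if ?y' j < 0 then 1 else (0::int)) = (\<Sum>j\<in>{1..r - 2}. if y j < 0 then 1 else 0)"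
      by (rule sum.cong[OF HOL.refl]) (use r4 a in auto)
    have "?y' (r - 1) = - y r" "?y' r = - y (r - 1)" using a r4 by auto
    then have "NN r ?y' = NN r y + 2 - 2 * ((if y (r - 1) < 0 then 1 else 0) + (if y r < 0 then 1 else 0))"
      using s1 s2 s3 v1 by auto
    then show ?thesis using Y ir by (simp add: YD_def)
  qed
  then show ?thesis using ys by (simp add: YD_def)
qed

lemma dual_Ds:
  assumes v: "valid_type TD r" and k: "k = r - 1 \<or> k = r"
  shows "dual_hw TD r (unitv k) = (if even k then unitv r else unitv (r - 1))"
proof (rule dual_cl[where Y = "YD r k"])
  have r4: "r \<ge> 4" using v by (simp add: valid_type_def)
  show "cl TD" by (simp add: cl_def)
  show "valid_type TD r" by (rule v)
  show "\<And>i. i \<in> {1..r} \<Longrightarrow> (\<Sum>k\<in>{1..r}. (\<Sum>i\<in>{1..r}. MD r i k) * of_int (cartan TD r k i)) > 0"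
    by (rule w_from_M) (rule MC_D[OF r4])
  show "\<And>y i. YD r k y \<Longrightarrow> i \<in> {1..r} \<Longrightarrow> YD r k (act TD r i y)"
    by (rule YD_cl[OF v])
  show "\<And>y j. YD r k y \<Longrightarrow> \<bar>y j\<bar> \<le> 1" using YS_bd by (auto simp: YD_def)
  let ?y0 = "\<lambda>j. if 1 \<le> j \<and> j \<le> r - 1 then -1/2 else if j = r then (if k = r then -1/2 else 1/2) else (0::real)"
  have ys0: "YS r ?y0" unfolding YS_def using r4 by auto
  have "NN r ?y0 = (\<Sum>j\<in>{1..r - 1}. if ?y0 j < 0 then 1 else 0) + (if ?y0 r < 0 then 1 else 0)"
    unfolding NN_def by (rule split_last) (use r4 in auto)
  also have "(\<Sum>j\<in>{1..r - 1}. if ?y0 j < 0 then 1 else (0::int)) = (\<Sum>j\<in>{1..r - 1}. 1)"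
    by (rule sum.cong[OF HOL.refl]) auto
  finally have "NN r ?y0 = int (r - 1) + (if k = r then 1 else 0)" using r4 by auto
  then have "NN r ?y0 = int k" using k r4 by auto
  then show "YD r k ?y0" using ys0 by (simp add: YD_def)
  show "\<And>m. of_int (- unitv k m) = lab TD r ?y0 m"
    using k r4 by (auto simp: lab_def pr_def unitv_def)
  show "\<forall>m. of_int ((if even k then unitv r else unitv (r - 1)) m) = lab TD r y m"
    if Y: "YD r k y" and d: "\<forall>i\<in>{1..r}. pr TD r y i \<ge> 0" for y
  proof -
    have anti: "\<And>a b. 1 \<le> a \<Longrightarrow> a \<le> b \<Longrightarrow> b \<le> r \<Longrightarrow> y b \<le> y a" by (rule anti_from_pr[OF d])
    have pr_r: "y (r - 1) + y r \<ge> 0" using d[rule_format, of r] r4 by (simp add: pr_def)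
    have vals: "y j \<in> {-1/2, 1/2}" if "j \<in> {1..r}" for j using Y that unfolding YD_def YS_def by auto
    have rr: "y r \<le> y (r - 1)" using anti[of "r - 1" r] r4 by auto
    have yr1: "y (r - 1) = 1/2" using vals[of "r - 1"] vals[of r] pr_r rr r4 by auto
    have yv: "y j = 1/2" if j: "j \<in> {1..r - 1}" for j
    proof -
      have "y (r - 1) \<le> y j" using anti[of j "r - 1"] j by auto
      then show ?thesis using vals[of j] j yr1 by auto
    qed
    have "NN r y = (\<Sum>j\<in>{1..r - 1}. if y j < 0 then 1 else 0) + (if y r < 0 then 1 else 0)"
      unfolding NN_def by (rule split_last) (use r4 in auto)
    also have "(\<Sum>j\<in>{1..r - 1}. if y j < 0 then 1 else (0::int)) = 0"
    proof (rule sum.neutral, rule ballI)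
      fix j assume "j \<in> {1..r - 1}"
      then show "(if y j < 0 then 1 else (0::int)) = 0" using yv[of j] by simp
    qed
    finally have nn: "NN r y = (if y r < 0 then 1 else 0)" by simp
    have ev: "even (NN r y + int k)" using Y by (simp add: YD_def)
    have yr: "y r = (if even k then 1/2 else -1/2)"
    proof (cases "even k")
      case True
      then have "\<not> y r < 0" using ev nn by (auto split: if_splits)
      then show ?thesis using vals[of r] r4 True by auto
    next
      case False
      then have "y r < 0" using ev nn by (auto split: if_splits)
      then show ?thesis using vals[of r] r4 False by auto
    qed
    show ?thesis
    proof
      fix m show "of_int ((if even k then unitv r else unitv (r - 1)) m) = lab TD r y m"
      proof (cases "m \<in> {1..r}")
        case True
        consider "m \<le> r - 2" | "m = r - 1" | "m = r" using True by fastforce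
        then show ?thesis
        proof cases
          case 1
          have "y m = 1/2" "y (Suc m) = 1/2" using yv[of m] yv[of "Suc m"] 1 True r4 by auto
          then show ?thesis using True 1 r4 by (auto simp: lab_def unitv_def pr_def)
        next
          case 2 then show ?thesis using True yr1 yr r4 by (auto simp: lab_def unitv_def pr_def)
        next
          case 3 then show ?thesis using True yr1 yr r4 by (auto simp: lab_def unitv_def pr_def)
        qed
      next
        case False then show ?thesis using r4 by (auto simp: lab_def unitv_def)
      qed
    qed
  qed
  show "\<And>m. m \<notin> {1..r} \<Longrightarrow> unitv k m = 0" using k r4 by (auto simp: unitv_def)
qed



lemma rc_gen:
  fixes M :: "nat \<Rightarrow> nat \<Rightarrow> real"
  assumes CM: "\<And>i j. i \<in> {1..r} \<Longrightarrow> j \<in> {1..r} \<Longrightarrow>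
      (\<Sum>k\<in>{1..r}. M k j * of_int (cartan t r i k)) = (if i = j then 1 else 0)"
  and MC: "\<And>i j. i \<in> {1..r} \<Longrightarrow> j \<in> {1..r} \<Longrightarrow>
      (\<Sum>k\<in>{1..r}. M i k * of_int (cartan t r k j)) = (if i = j then 1 else 0)"
  shows "eval_E t r c = (\<Sum>k\<in>{1..r}. (\<Sum>i\<in>grading_set t r. M i k) * of_int (c k))"
proof (rule eval_E_eq, rule root_coords_eq)
  show "\<And>i j. i \<in> {1..r} \<Longrightarrow> j \<in> {1..r} \<Longrightarrow>
      (\<Sum>k\<in>{1..r}. of_int (cartan t r i k) * M k j) = (if i = j then 1 else 0)"
    using CM by (simp add: mult.commute)
  show "\<And>i j. i \<in> {1..r} \<Longrightarrow> j \<in> {1..r} \<Longrightarrow>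
      (\<Sum>k\<in>{1..r}. M i k * of_int (cartan t r k j)) = (if i = j then 1 else 0)" by (rule MC)
qed

lemma main_A:
  assumes v: "valid_type TA r" and dom: "dominant r c"
  shows "grading_set TA r = expected_I TA r
    \<and> (eval_E TA r c = 1 \<longleftrightarrow> listed TA r c)
    \<and> (listed TA r c \<longrightarrow> eval_E TA r (dual_hw TA r c) = 1)
    \<and> (TA = TE \<and> r = 8 \<and> c \<noteq> (\<lambda>_. 0) \<longrightarrow> eval_E TA r c > 1)"
proof (rule finish[where m = "\<lambda>k. MA r 1 k + MA r r k", OF _ _ _ _ _ _ dom])
  have r2: "r \<ge> 2" using v by (simp add: valid_type_def)
  show "grading_set TA r = expected_I TA r" using gr_A[OF v] by (simp add: expected_I_def)
  have m1: "MA r 1 k + MA r r k = 1" if k: "k \<in> {1..r}" for k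
  proof -
    have a: "MA r 1 k = (real r + 1 - real k) / (real r + 1)" using MA_le[of 1 k r] k by auto
    have b: "MA r r k = real k / (real r + 1)" using MA_ge[of k r r] k by auto
    have "(real r + 1 - real k) / (real r + 1) + real k / (real r + 1) = (real r + 1 - real k + real k) / (real r + 1)"
      by (rule add_divide_distrib[symmetric])
    also have "\<dots> = 1" by (simp add: add.commute)
    finally show ?thesis using a b by simp
  qed
  show "\<And>c. eval_E TA r c = (\<Sum>k\<in>{1..r}. (MA r 1 k + MA r r k) * of_int (c k))"
  proof -
    fix c
    have "eval_E TA r c = (\<Sum>k\<in>{1..r}. (\<Sum>i\<in>grading_set TA r. MA r i k) * of_int (c k))"
      by (rule rc_gen[OF CM_A MC_A])
    then show "eval_E TA r c = (\<Sum>k\<in>{1..r}. (MA r 1 k + MA r r k) * of_int (c k))" unfolding gr_A[OF v] using r2 by simp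
  qed
  show "\<And>k. k \<in> {1..r} \<Longrightarrow> 1 \<le> MA r 1 k + MA r r k" using m1 by simp
  show "\<And>c. listed TA r c = (\<exists>k\<in>{1..r}. c = unitv k \<and> MA r 1 k + MA r r k = 1)"
    using m1 by (auto simp: listed_def)
  show "\<And>k. k \<in> {1..r} \<Longrightarrow> MA r 1 k + MA r r k = 1 \<Longrightarrow> \<exists>k'\<in>{1..r}. MA r 1 k' + MA r r k' = 1 \<and> dual_hw TA r (unitv k) = unitv k'"
  proof -
    fix k assume k: "k \<in> {1..r}"
    then have "Suc r - k \<in> {1..r}" by auto
    then show "\<exists>k'\<in>{1..r}. MA r 1 k' + MA r r k' = 1 \<and> dual_hw TA r (unitv k) = unitv k'"
      using dual_A[OF v k] m1 by blast
  qed
  show "TA = TE \<and> r = 8 \<Longrightarrow> \<forall>k\<in>{1..r}. 2 \<le> MA r 1 k + MA r r k" by simp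
qed

lemma main_B:
  assumes v: "valid_type TB r" and dom: "dominant r c"
  shows "grading_set TB r = expected_I TB r
    \<and> (eval_E TB r c = 1 \<longleftrightarrow> listed TB r c)
    \<and> (listed TB r c \<longrightarrow> eval_E TB r (dual_hw TB r c) = 1)
    \<and> (TB = TE \<and> r = 8 \<and> c \<noteq> (\<lambda>_. 0) \<longrightarrow> eval_E TB r c > 1)"
proof (rule finish[where m = "\<lambda>k. MB r 2 k", OF _ _ _ _ _ _ dom])
  have r2: "r \<ge> 2" using v by (simp add: valid_type_def)
  show "grading_set TB r = expected_I TB r" using gr_B[OF v] by (simp add: expected_I_def)
  have m1: "MB r 2 k \<ge> 1 \<and> (MB r 2 k = 1 \<longleftrightarrow> k = 1 \<or> k = r)" if k: "k \<in> {1..r}" for k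
    using k r2 by (auto simp: MB_def min_def)
  show "\<And>c. eval_E TB r c = (\<Sum>k\<in>{1..r}. MB r 2 k * of_int (c k))"
  proof -
    fix c
    have "eval_E TB r c = (\<Sum>k\<in>{1..r}. (\<Sum>i\<in>grading_set TB r. MB r i k) * of_int (c k))"
      by (rule rc_gen[OF CM_B MC_B])
    then show "eval_E TB r c = (\<Sum>k\<in>{1..r}. MB r 2 k * of_int (c k))" unfolding gr_B[OF v] using r2 by simp
  qed
  show "\<And>k. k \<in> {1..r} \<Longrightarrow> 1 \<le> MB r 2 k" using m1 by simp
  show "\<And>c. listed TB r c = (\<exists>k\<in>{1..r}. c = unitv k \<and> MB r 2 k = 1)"
  proof -
    fix c
    have a: "1 \<in> {1..r}" "r \<in> {1..r}" using r2 by auto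
    show "listed TB r c = (\<exists>k\<in>{1..r}. c = unitv k \<and> MB r 2 k = 1)"
      unfolding listed_def using m1 a by auto
  qed
  show "\<And>k. k \<in> {1..r} \<Longrightarrow> MB r 2 k = 1 \<Longrightarrow> \<exists>k'\<in>{1..r}. MB r 2 k' = 1 \<and> dual_hw TB r (unitv k) = unitv k'"
  proof -
    fix k assume k: "k \<in> {1..r}" "MB r 2 k = 1"
    then have "k = 1 \<or> k = r" using m1 by auto
    then show "\<exists>k'\<in>{1..r}. MB r 2 k' = 1 \<and> dual_hw TB r (unitv k) = unitv k'"
      using dual_Bv[OF v] dual_Bs[OF v] k by auto
  qed
  show "TB = TE \<and> r = 8 \<Longrightarrow> \<forall>k\<in>{1..r}. 2 \<le> MB r 2 k" by simp
qed

lemma main_C: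
  assumes v: "valid_type TC r" and dom: "dominant r c"
  shows "grading_set TC r = expected_I TC r
    \<and> (eval_E TC r c = 1 \<longleftrightarrow> listed TC r c)
    \<and> (listed TC r c \<longrightarrow> eval_E TC r (dual_hw TC r c) = 1)
    \<and> (TC = TE \<and> r = 8 \<and> c \<noteq> (\<lambda>_. 0) \<longrightarrow> eval_E TC r c > 1)"
proof (rule finish[where m = "\<lambda>k. MC r 1 k", OF _ _ _ _ _ _ dom])
  have r2: "r \<ge> 2" using v by (simp add: valid_type_def)
  show "grading_set TC r = expected_I TC r" using gr_C[OF v] by (simp add: expected_I_def)
  have m1: "MC r 1 k = 1" if k: "k \<in> {1..r}" for k
    using k r2 by (auto simp: MC_def min_def)
  show "\<And>c. eval_E TC r c = (\<Sum>k\<in>{1..r}. MC r 1 k * of_int (c k))"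
  proof -
    fix c
    have "eval_E TC r c = (\<Sum>k\<in>{1..r}. (\<Sum>i\<in>grading_set TC r. MC r i k) * of_int (c k))"
      by (rule rc_gen[OF CM_C MC_C])
    then show "eval_E TC r c = (\<Sum>k\<in>{1..r}. MC r 1 k * of_int (c k))" unfolding gr_C[OF v] using r2 by simp
  qed
  show "\<And>k. k \<in> {1..r} \<Longrightarrow> 1 \<le> MC r 1 k" using m1 by simp
  show "\<And>c. listed TC r c = (\<exists>k\<in>{1..r}. c = unitv k \<and> MC r 1 k = 1)"
    using m1 by (auto simp: listed_def)
  show "\<And>k. k \<in> {1..r} \<Longrightarrow> MC r 1 k = 1 \<Longrightarrow> \<exists>k'\<in>{1..r}. MC r 1 k' = 1 \<and> dual_hw TC r (unitv k) = unitv k'"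
    using dual_C[OF v] m1 by blast
  show "TC = TE \<and> r = 8 \<Longrightarrow> \<forall>k\<in>{1..r}. 2 \<le> MC r 1 k" by simp
qed

lemma main_D:
  assumes v: "valid_type TD r" and dom: "dominant r c"
  shows "grading_set TD r = expected_I TD r
    \<and> (eval_E TD r c = 1 \<longleftrightarrow> listed TD r c)
    \<and> (listed TD r c \<longrightarrow> eval_E TD r (dual_hw TD r c) = 1)
    \<and> (TD = TE \<and> r = 8 \<and> c \<noteq> (\<lambda>_. 0) \<longrightarrow> eval_E TD r c > 1)"
proof (rule finish[where m = "\<lambda>k. MD r 2 k", OF _ _ _ _ _ _ dom])
  have r4: "r \<ge> 4" using v by (simp add: valid_type_def)
  show "grading_set TD r = expected_I TD r" using gr_D[OF v] by (simp add: expected_I_def)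
  have m1: "MD r 2 k \<ge> 1 \<and> (MD r 2 k = 1 \<longleftrightarrow> k = 1 \<or> k = r - 1 \<or> k = r)" if k: "k \<in> {1..r}" for k
    using k r4 by (auto simp: MD_def min_def)
  show "\<And>c. eval_E TD r c = (\<Sum>k\<in>{1..r}. MD r 2 k * of_int (c k))"
  proof -
    fix c
    have "eval_E TD r c = (\<Sum>k\<in>{1..r}. (\<Sum>i\<in>grading_set TD r. MD r i k) * of_int (c k))"
      by (rule rc_gen[OF CM_D[OF r4] MC_D[OF r4]])
    then show "eval_E TD r c = (\<Sum>k\<in>{1..r}. MD r 2 k * of_int (c k))" unfolding gr_D[OF v] using r4 by simp
  qed
  show "\<And>k. k \<in> {1..r} \<Longrightarrow> 1 \<le> MD r 2 k" using m1 by simp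
  show "\<And>c. listed TD r c = (\<exists>k\<in>{1..r}. c = unitv k \<and> MD r 2 k = 1)"
  proof -
    fix c
    have a: "1 \<in> {1..r}" "r \<in> {1..r}" "r - 1 \<in> {1..r}" using r4 by auto
    show "listed TD r c = (\<exists>k\<in>{1..r}. c = unitv k \<and> MD r 2 k = 1)"
      unfolding listed_def using m1 a by auto
  qed
  show "\<And>k. k \<in> {1..r} \<Longrightarrow> MD r 2 k = 1 \<Longrightarrow> \<exists>k'\<in>{1..r}. MD r 2 k' = 1 \<and> dual_hw TD r (unitv k) = unitv k'"
  proof -
    fix k assume k: "k \<in> {1..r}" "MD r 2 k = 1"
    then have kk: "k = 1 \<or> k = r - 1 \<or> k = r" using m1 by auto
    have a: "1 \<in> {1..r}" "r \<in> {1..r}" "r - 1 \<in> {1..r}" using r4 by auto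
    have mm: "MD r 2 1 = 1" "MD r 2 r = 1" "MD r 2 (r - 1) = 1" using m1 a by auto
    show "\<exists>k'\<in>{1..r}. MD r 2 k' = 1 \<and> dual_hw TD r (unitv k) = unitv k'"
      using kk
    proof (elim disjE)
      assume "k = 1" then show ?thesis using dual_Dv[OF v] a mm by auto
    next
      assume "k = r - 1" then show ?thesis using dual_Ds[OF v, of k] a mm by (cases "even k") auto
    next
      assume "k = r" then show ?thesis using dual_Ds[OF v, of k] a mm by (cases "even k") auto
    qed
  qed
  show "TD = TE \<and> r = 8 \<Longrightarrow> \<forall>k\<in>{1..r}. 2 \<le> MD r 2 k" by simp
qed



declare upt_Suc[simp del]

declare atLeastLessThanSuc_atLeastAtMost[simp]

definition vf :: "int list \<Rightarrow> nat \<Rightarrow> int" where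
  "vf xs k = (if 1 \<le> k \<and> k \<le> length xs then xs ! (k - 1) else 0)"

definition labelL :: "ltype \<Rightarrow> nat \<Rightarrow> int list \<Rightarrow> nat \<Rightarrow> int" where
  "labelL t r xs i = sum_list (map (\<lambda>j. xs ! (j - 1) * cartan t r i j) [1..<r+1])"

definition reflL :: "ltype \<Rightarrow> nat \<Rightarrow> nat \<Rightarrow> int list \<Rightarrow> int list" where
  "reflL t r i xs = xs[i - 1 := xs ! (i - 1) - labelL t r xs i]"

definition reflWL :: "ltype \<Rightarrow> nat \<Rightarrow> nat \<Rightarrow> int list \<Rightarrow> int list" where
  "reflWL t r i xs = map (\<lambda>k. xs ! (k - 1) - xs ! (i - 1) * cartan t r k i) [1..<r+1]"

definition unitL :: "nat \<Rightarrow> nat \<Rightarrow> int list" where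
  "unitL r i = map (\<lambda>k. if k = i then 1 else 0) [1..<r+1]"

definition chk :: "ltype \<Rightarrow> nat \<Rightarrow> int list list \<Rightarrow> bool" where
  "chk t r R = (\<forall>xs\<in>set R. \<forall>i\<in>set [1..<r+1].
      (let l = labelL t r xs i in l = 0 \<or> xs[i - 1 := xs ! (i - 1) - l] \<in> set R))"

definition Mx :: "real list list \<Rightarrow> nat \<Rightarrow> nat \<Rightarrow> real" where
  "Mx ms i j = ms ! (i - 1) ! (j - 1)"

lemma sum_upt: "sum f {1..r} = sum_list (map f [1..<r+1])"
proof -
  have "sum f {1..r} = sum f (set [1..<r+1])" by (rule arg_cong[where f="sum f"]) auto
  also have "\<dots> = sum_list (map f [1..<r+1])" by (rule sum_set_upt_conv_sum_list_nat)
  finally show ?thesis .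
qed

lemma sum_upt': "sum f {Suc 0..r} = sum_list (map f [Suc 0..<Suc r])"
  using sum_upt[of f r] by simp

lemma label_vf: "length xs = r \<Longrightarrow> label t r (vf xs) i = labelL t r xs i"
  unfolding label_def labelL_def sum_upt
  by (intro arg_cong[where f=sum_list] map_cong) (auto simp: vf_def)

lemma refl_root_vf: "length xs = r \<Longrightarrow> i \<in> {1..r} \<Longrightarrow>
    refl_root t r i (vf xs) = vf (reflL t r i xs)"
proof
  fix k assume l: "length xs = r" and i: "i \<in> {1..r}"
  have lab: "(\<Sum>j\<in>{1..r}. vf xs j * cartan t r i j) = labelL t r xs i"
    using label_vf[OF l, of t i] by (simp add: label_def)
  show "refl_root t r i (vf xs) k = vf (reflL t r i xs) k"
    unfolding refl_root_def lab using l i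
    by (auto simp: vf_def reflL_def unitv_def nth_list_update)
qed

lemma refl_wt_vf: "length xs = r \<Longrightarrow> i \<in> {1..r} \<Longrightarrow>
    refl_wt t r i (vf xs) = vf (reflWL t r i xs)"
proof
  fix k assume l: "length xs = r" and i: "i \<in> {1..r}"
  show "refl_wt t r i (vf xs) k = vf (reflWL t r i xs) k"
    using l i by (auto simp: vf_def reflWL_def refl_wt_def nth_map simp del: upt_Suc)
qed

lemma length_reflL[simp]: "length (reflL t r i xs) = length xs"
  by (simp add: reflL_def)

lemma length_reflWL[simp]: "length (reflWL t r i xs) = r"
  by (simp add: reflWL_def)

lemma unitv_vf: "i \<in> {1..r} \<Longrightarrow> unitv i = vf (unitL r i)"
  by (rule ext) (auto simp: unitv_def vf_def unitL_def nth_map)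

lemma fold_roots:
  assumes "vf xs \<in> roots t r" "length xs = r" "list_all (\<lambda>i. 1 \<le> i \<and> i \<le> r) ps"
  shows "vf (fold (reflL t r) ps xs) \<in> roots t r"
  using assms
proof (induction ps arbitrary: xs)
  case Nil then show ?case by simp
next
  case (Cons i ps)
  have "vf (reflL t r i xs) \<in> roots t r"
    using Cons.prems refl_root_vf[of xs r i t] roots.refl[of "vf xs" t r i] by auto
  then show ?case using Cons by simp
qed

lemma roots_in_list:
  assumes c: "chk t r R" and u: "\<forall>i\<in>set [1..<r+1]. unitL r i \<in> set R"
    and l: "\<forall>xs\<in>set R. length xs = r"
  shows "\<beta> \<in> roots t r \<Longrightarrow> \<exists>xs\<in>set R. \<beta> = vf xs"
proof (induction rule: roots.induct)
  case (simple i)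
  then have "i \<in> set [1..<r+1]" by (simp del: upt_Suc)
  then show ?case using u unitv_vf[OF simple] by auto
next
  case (refl \<beta> i)
  then obtain xs where xs: "xs \<in> set R" "\<beta> = vf xs" by auto
  have e: "refl_root t r i \<beta> = vf (reflL t r i xs)" using xs l refl_root_vf refl.hyps by auto
  show ?case
  proof (cases "labelL t r xs i = 0")
    case True
    then have "reflL t r i xs = xs" by (simp add: reflL_def)
    then show ?thesis using e xs by auto
  next
    case False
    have "\<forall>xs\<in>set R. \<forall>i\<in>{1..r}. labelL t r xs i = 0 \<or> xs[i - 1 := xs ! (i - 1) - labelL t r xs i] \<in> set R"
      using c unfolding chk_def Let_def by simp
    then have "labelL t r xs i = 0 \<or> xs[i - 1 := xs ! (i - 1) - labelL t r xs i] \<in> set R"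
      using xs(1) refl.hyps(2) by blast
    then have "reflL t r i xs \<in> set R" using False unfolding reflL_def by blast
    then show ?thesis using e by auto
  qed
qed

lemma highest_root_list:
  assumes i0: "1 \<le> ist \<and> ist \<le> r" and ps: "list_all (\<lambda>i. 1 \<le> i \<and> i \<le> r) ps"
    and th: "fold (reflL t r) ps (unitL r ist) = th"
    and c: "chk t r R" and u: "\<forall>i\<in>set [1..<r+1]. unitL r i \<in> set R"
    and l: "\<forall>xs\<in>set R. length xs = r \<and> list_all2 (\<le>) xs th"
  shows "highest_root t r = vf th"
proof (rule highest_root_eq)
  have "vf (unitL r ist) \<in> roots t r" using i0 unitv_vf[of ist r] roots.simple[of ist r t] by auto
  then show "vf th \<in> roots t r" using fold_roots[OF _ _ ps] th by (auto simp: unitL_def)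
next
  fix \<beta> j assume "\<beta> \<in> roots t r"
  then obtain xs where xs: "xs \<in> set R" "\<beta> = vf xs" using roots_in_list[OF c u] l by blast
  then have a: "length xs = r" "list_all2 (\<le>) xs th" using l by auto
  then have lt: "length th = r" by (auto dest: list_all2_lengthD)
  show "\<beta> j \<le> vf th j"
  proof (cases "1 \<le> j \<and> j \<le> r")
    case True
    then have "xs ! (j - 1) \<le> th ! (j - 1)" using a list_all2_nthD[OF a(2), of "j - 1"] by auto
    then show ?thesis using xs a lt True by (simp add: vf_def)
  next
    case False
    then show ?thesis using xs a lt unfolding vf_def by auto
  qed
qed

lemma grading_list:
  assumes "highest_root t r = vf th" "length th = r"
    and "list_all (\<lambda>i. 1 \<le> i \<and> i \<le> r) Il"
    and "\<forall>i\<in>set [1..<r+1]. (labelL t r th i \<noteq> 0) = (i \<in> set Il)"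
  shows "grading_set t r = set Il"
  using assms unfolding grading_set_def
  by (auto simp: label_vf list_all_iff)

lemma coords_list:
  assumes "\<forall>i\<in>set [1..<r+1]. \<forall>j\<in>set [1..<r+1].
      sum_list (map (\<lambda>k. of_int (cartan t r i k) * Mx ms k j) [1..<r+1]) = (if i = j then 1 else 0)"
    and "\<forall>i\<in>set [1..<r+1]. \<forall>j\<in>set [1..<r+1].
      sum_list (map (\<lambda>k. Mx ms i k * of_int (cartan t r k j)) [1..<r+1]) = (if i = j then 1 else 0)"
  shows "root_coords t r c = (\<lambda>j. if j \<in> {1..r} then \<Sum>k\<in>{1..r}. Mx ms j k * of_int (c k) else 0)"
    and "\<And>j. j \<in> {1..r} \<Longrightarrow> (\<Sum>k\<in>{1..r}. (\<Sum>i\<in>{1..r}. Mx ms i k) * of_int (cartan t r k j)) > 0"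
proof -
  have CM: "\<And>i j. i \<in> {1..r} \<Longrightarrow> j \<in> {1..r} \<Longrightarrow>
      (\<Sum>k\<in>{1..r}. of_int (cartan t r i k) * Mx ms k j) = (if i = j then 1 else 0)"
    using assms(1) by (simp add: sum_upt')
  have MC: "\<And>i j. i \<in> {1..r} \<Longrightarrow> j \<in> {1..r} \<Longrightarrow>
      (\<Sum>k\<in>{1..r}. Mx ms i k * of_int (cartan t r k j)) = (if i = j then 1 else 0)"
    using assms(2) by (simp add: sum_upt')
  show "root_coords t r c = (\<lambda>j. if j \<in> {1..r} then \<Sum>k\<in>{1..r}. Mx ms j k * of_int (c k) else 0)"
    by (rule root_coords_eq[OF CM MC])
  show "\<And>j. j \<in> {1..r} \<Longrightarrow> (\<Sum>k\<in>{1..r}. (\<Sum>i\<in>{1..r}. Mx ms i k) * of_int (cartan t r k j)) > 0"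
    by (rule w_from_M[OF MC])
qed

lemma dual_list:
  fixes w :: "nat \<Rightarrow> real"
  assumes w: "\<And>i. i \<in> {1..r} \<Longrightarrow> (\<Sum>k\<in>{1..r}. w k * of_int (cartan t r k i)) > 0"
    and k: "1 \<le> k \<and> k \<le> r"
    and o0: "map uminus (unitL r k) \<in> set OL"
    and oc: "\<forall>xs\<in>set OL. \<forall>i\<in>set [1..<r+1]. reflWL t r i xs \<in> set OL"
    and ol: "\<forall>xs\<in>set OL. length xs = r"
    and od: "\<forall>xs\<in>set OL. list_all (\<lambda>x. 0 \<le> x) xs \<longrightarrow> xs = nu"
  shows "dual_hw t r (unitv k) = vf nu"
proof (rule dual_hw_eq[where S = "vf ` set OL"])
  show "\<And>i. i \<in> {1..r} \<Longrightarrow> (\<Sum>k\<in>{1..r}. w k * of_int (cartan t r k i)) > 0" by (rule w)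
  have "(\<lambda>j. - unitv k j) = vf (map uminus (unitL r k))"
    using k by (intro ext) (auto simp: unitv_def vf_def unitL_def nth_map)
  then show "(\<lambda>j. - unitv k j) \<in> vf ` set OL" using o0 by auto
  show "\<And>\<mu> i. \<mu> \<in> vf ` set OL \<Longrightarrow> i \<in> {1..r} \<Longrightarrow> refl_wt t r i \<mu> \<in> vf ` set OL"
    using oc ol refl_wt_vf by fastforce
  show "finite (vf ` set OL)" by simp
  show "\<And>\<nu>. \<nu> \<in> vf ` set OL \<Longrightarrow> dominant r \<nu> \<Longrightarrow> \<nu> = vf nu"
  proof -
    fix \<nu> assume "\<nu> \<in> vf ` set OL" "dominant r \<nu>"
    then obtain xs where xs: "xs \<in> set OL" "\<nu> = vf xs" "dominant r (vf xs)" by auto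
    have "list_all (\<lambda>x. 0 \<le> x) xs"
      unfolding list_all_length
    proof (intro allI impI)
      fix n assume n: "n < length xs"
      have "0 \<le> vf xs (Suc n)" using xs(3) n ol xs(1) unfolding dominant_def by auto
      then show "0 \<le> xs ! n" using n by (simp add: vf_def)
    qed
    then show "\<nu> = vf nu" using od xs by auto
  qed
  show "\<And>j. j \<notin> {1..r} \<Longrightarrow> unitv k j = 0" using k by (auto simp: unitv_def)
qed



definition R_E6 :: "int list list" where "R_E6 = [[-1,-2,-2,-3,-2,-1], [-1,-1,-2,-3,-2,-1], [-1,-1,-2,-2,-2,-1], [-1,-1,-2,-2,-1,-1], [-1,-1,-2,-2,-1,0], [-1,-1,-1,-2,-2,-1], [-1,-1,-1,-2,-1,-1], [-1,-1,-1,-2,-1,0], [-1,-1,-1,-1,-1,-1], [-1,-1,-1,-1,-1,0], [-1,-1,-1,-1,0,0], [-1,0,-1,-1,-1,-1], [-1,0,-1,-1,-1,0], [-1,0,-1,-1,0,0], [-1,0,-1,0,0,0], [-1,0,0,0,0,0], [0,-1,-1,-2,-2,-1], [0,-1,-1,-2,-1,-1], [0,-1,-1,-2,-1,0], [0,-1,-1,-1,-1,-1], [0,-1,-1,-1,-1,0], [0,-1,-1,-1,0,0], [0,-1,0,-1,-1,-1], [0,-1,0,-1,-1,0], [0,-1,0,-1,0,0], [0,-1,0,0,0,0], [0,0,-1,-1,-1,-1], [0,0,-1,-1,-1,0], [0,0,-1,-1,0,0], [0,0,-1,0,0,0], [0,0,0,-1,-1,-1], [0,0,0,-1,-1,0],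 [0,0,0,-1,0,0], [0,0,0,0,-1,-1], [0,0,0,0,-1,0], [0,0,0,0,0,-1], [0,0,0,0,0,1], [0,0,0,0,1,0], [0,0,0,0,1,1], [0,0,0,1,0,0], [0,0,0,1,1,0], [0,0,0,1,1,1], [0,0,1,0,0,0], [0,0,1,1,0,0], [0,0,1,1,1,0], [0,0,1,1,1,1], [0,1,0,0,0,0], [0,1,0,1,0,0], [0,1,0,1,1,0], [0,1,0,1,1,1], [0,1,1,1,0,0], [0,1,1,1,1,0], [0,1,1,1,1,1], [0,1,1,2,1,0], [0,1,1,2,1,1], [0,1,1,2,2,1], [1,0,0,0,0,0], [1,0,1,0,0,0], [1,0,1,1,0,0], [1,0,1,1,1,0], [1,0,1,1,1,1], [1,1,1,1,0,0], [1,1,1,1,1,0], [1,1,1,1,1,1], [1,1,1,2,1,0], [1,1,1,2,1,1], [1,1,1,2,2,1], [1,1,2,2,1,0], [1,1,2,2,1,1], [1,1,2,2,2,1], [1,1,2,3,2,1], [1,2,2,3,2,1]]"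
definition M_E6 :: "real list list" where "M_E6 = [[4/3, 1, 5/3, 2, 4/3, 2/3], [1, 2, 2, 3, 2, 1], [5/3, 2, 10/3, 4, 8/3, 4/3], [2, 3, 4, 6, 4, 2], [4/3, 2, 8/3, 4, 10/3, 5/3], [2/3, 1, 4/3, 2, 5/3, 4/3]]"

lemma hr_E6: "highest_root TE 6 = vf [1,2,2,3,2,1]"
  by (rule highest_root_list[where ist=1 and ps="[3,4,2,5,4,3,6,5,4,2]" and R=R_E6]; code_simp)

lemma gr_E6: "grading_set TE 6 = {2}"
proof -
  have "grading_set TE 6 = set [2]" by (rule grading_list[OF hr_E6]; code_simp)
  then show ?thesis by simp
qed

lemma co_E6: "root_coords TE 6 c = (\<lambda>j. if j \<in> {1..6} then \<Sum>k\<in>{1..6}. Mx M_E6 j k * of_int (c k) else 0)"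
  by (rule coords_list(1); code_simp)

lemma w_E6: "j \<in> {1..6} \<Longrightarrow> (\<Sum>k\<in>{1..6}. (\<Sum>i\<in>{1..6}. Mx M_E6 i k) * of_int (cartan TE 6 k j)) > 0"
  by (rule coords_list(2)) (assumption | code_simp)+

lemma ev_E6: "eval_E TE 6 c = (\<Sum>k\<in>{1..6}. Mx M_E6 2 k * of_int (c k))"
  using eval_E_eq[OF co_E6] gr_E6 by simp

lemma mc_E6: "\<forall>k\<in>set [1..<7]. 1 \<le> Mx M_E6 2 k \<and> (Mx M_E6 2 k = 1 \<longleftrightarrow> k \<in> set [1,6])"
  by code_simp

lemma m_E6: "k \<in> {1..6} \<Longrightarrow> 1 \<le> Mx M_E6 2 k \<and> (Mx M_E6 2 k = 1 \<longleftrightarrow> k \<in> set [1,6])"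
proof -
  assume "k \<in> {1..6}"
  then have "k \<in> set [1..<7]" by auto
  then show ?thesis using mc_E6 by blast
qed

definition O_E6_1 :: "int list list" where "O_E6_1 = [[-1,-1,0,1,0,0], [-1,0,0,0,0,0], [-1,0,1,-1,1,0], [-1,0,1,0,-1,1], [-1,0,1,0,0,-1], [-1,1,0,0,0,0], [0,-1,0,0,0,1], [0,-1,0,0,1,-1], [0,-1,0,1,-1,0], [0,-1,1,0,0,0], [0,0,-1,0,1,0], [0,0,-1,1,-1,1], [0,0,-1,1,0,-1], [0,0,0,0,0,1], [0,0,0,0,1,-1], [0,0,0,1,-1,0], [0,0,1,-1,0,0], [0,1,0,-1,0,1], [0,1,0,-1,1,-1], [0,1,0,0,-1,0], [0,1,1,-1,0,0], [1,-1,-1,1,0,0], [1,0,-1,0,0,0], [1,0,0,-1,1,0], [1,0,0,0,-1,1], [1,0,0,0,0,-1], [1,1,-1,0,0,0]]"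

lemma du_E6_1: "dual_hw TE 6 (unitv 1) = unitv 6"
proof -
  have "dual_hw TE 6 (unitv 1) = vf (unitL 6 6)"
    by (rule dual_list[OF w_E6, where OL = O_E6_1]) (code_simp | simp)+
  then show ?thesis using unitv_vf[of 6 6] by simp
qed

definition O_E6_6 :: "int list list" where "O_E6_6 = [[-1,-1,1,0,0,0], [-1,0,0,0,0,1], [-1,0,0,0,1,-1], [-1,0,0,1,-1,0], [-1,0,1,0,0,0], [-1,1,1,-1,0,0], [0,-1,-1,1,0,0], [0,-1,0,0,1,0], [0,-1,0,1,-1,1], [0,-1,0,1,0,-1], [0,0,-1,1,0,0], [0,0,0,-1,1,0], [0,0,0,0,-1,1], [0,0,0,0,0,-1], [0,0,1,-1,0,1], [0,0,1,-1,1,-1], [0,0,1,0,-1,0], [0,1,-1,0,0,0], [0,1,0,-1,1,0], [0,1,0,0,-1,1], [0,1,0,0,0,-1], [1,-1,0,0,0,0], [1,0,-1,0,0,1], [1,0,-1,0,1,-1], [1,0,-1,1,-1,0], [1,0,0,0,0,0], [1,1,0,-1,0,0]]"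

lemma du_E6_6: "dual_hw TE 6 (unitv 6) = unitv 1"
proof -
  have "dual_hw TE 6 (unitv 6) = vf (unitL 6 1)"
    by (rule dual_list[OF w_E6, where OL = O_E6_6]) (code_simp | simp)+
  then show ?thesis using unitv_vf[of 1 6] by simp
qed


lemma main_E6:
  assumes "dominant 6 c"
  shows "grading_set TE 6 = expected_I TE 6
    \<and> (eval_E TE 6 c = 1 \<longleftrightarrow> listed TE 6 c)
    \<and> (listed TE 6 c \<longrightarrow> eval_E TE 6 (dual_hw TE 6 c) = 1)
    \<and> (TE = TE \<and> (6::nat) = 8 \<and> c \<noteq> (\<lambda>_. 0) \<longrightarrow> eval_E TE 6 c > 1)"
proof (rule finish[where m = "\<lambda>k. Mx M_E6 2 k"])
  show "grading_set TE 6 = expected_I TE 6" using gr_E6 by (simp add: expected_I_def)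
  show "\<And>c. eval_E TE 6 c = (\<Sum>k\<in>{1..6}. Mx M_E6 2 k * of_int (c k))" by (rule ev_E6)
  show "\<And>k. k \<in> {1..6} \<Longrightarrow> 1 \<le> Mx M_E6 2 k" using m_E6 by fastforce
  show "\<And>c. listed TE 6 c = (\<exists>k\<in>{1..6}. c = unitv k \<and> Mx M_E6 2 k = 1)"
    using m_E6 by (auto simp: listed_def)
  show "\<And>k. k \<in> {1..6} \<Longrightarrow> Mx M_E6 2 k = 1 \<Longrightarrow> \<exists>k'\<in>{1..6}. Mx M_E6 2 k' = 1 \<and> dual_hw TE 6 (unitv k) = unitv k'"
    using m_E6 du_E6_1 du_E6_6 by auto
  show "TE = TE \<and> (6::nat) = 8 \<Longrightarrow> \<forall>k\<in>{1..6}. 2 \<le> Mx M_E6 2 k" using m_E6 by auto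
qed (rule assms)

definition R_E7 :: "int list list" where "R_E7 = [[-2,-2,-3,-4,-3,-2,-1], [-1,-2,-3,-4,-3,-2,-1], [-1,-2,-2,-4,-3,-2,-1], [-1,-2,-2,-3,-3,-2,-1], [-1,-2,-2,-3,-2,-2,-1], [-1,-2,-2,-3,-2,-1,-1], [-1,-2,-2,-3,-2,-1,0], [-1,-1,-2,-3,-3,-2,-1], [-1,-1,-2,-3,-2,-2,-1], [-1,-1,-2,-3,-2,-1,-1], [-1,-1,-2,-3,-2,-1,0], [-1,-1,-2,-2,-2,-2,-1], [-1,-1,-2,-2,-2,-1,-1], [-1,-1,-2,-2,-2,-1,0], [-1,-1,-2,-2,-1,-1,-1], [-1,-1,-2,-2,-1,-1,0], [-1,-1,-2,-2,-1,0,0], [-1,-1,-1,-2,-2,-2,-1], [-1,-1,-1,-2,-2,-1,-1], [-1,-1,-1,-2,-2,-1,0], [-1,-1,-1,-2,-1,-1,-1], [-1,-1,-1,-2,-1,-1,0], [-1,-1,-1,-2,-1,0,0], [-1,-1,-1,-1,-1,-1,-1], [-1,-1,-1,-1,-1,-1,0], [-1,-1,-1,-1,-1,0,0], [-1,-1,-1,-1,0,0,0], [-1,0,-1,-1,-1,-1,-1], [-1,0,-1,-1,-1,-1,0], [-1,0,-1,-1,-1,0,0], [-1,0,-1,-1,0,0,0], [-1,0,-1,0,0,0,0], [-1,0,0,0,0,0,0], [0,-1,-1,-2,-2,-2,-1], [0,-1,-1,-2,-2,-1,-1], [0,-1,-1,-2,-2,-1,0], [0,-1,-1,-2,-1,-1,-1],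 [0,-1,-1,-2,-1,-1,0], [0,-1,-1,-2,-1,0,0], [0,-1,-1,-1,-1,-1,-1], [0,-1,-1,-1,-1,-1,0], [0,-1,-1,-1,-1,0,0], [0,-1,-1,-1,0,0,0], [0,-1,0,-1,-1,-1,-1], [0,-1,0,-1,-1,-1,0], [0,-1,0,-1,-1,0,0], [0,-1,0,-1,0,0,0], [0,-1,0,0,0,0,0], [0,0,-1,-1,-1,-1,-1], [0,0,-1,-1,-1,-1,0], [0,0,-1,-1,-1,0,0], [0,0,-1,-1,0,0,0], [0,0,-1,0,0,0,0], [0,0,0,-1,-1,-1,-1], [0,0,0,-1,-1,-1,0], [0,0,0,-1,-1,0,0], [0,0,0,-1,0,0,0], [0,0,0,0,-1,-1,-1], [0,0,0,0,-1,-1,0], [0,0,0,0,-1,0,0], [0,0,0,0,0,-1,-1], [0,0,0,0,0,-1,0], [0,0,0,0,0,0,-1], [0,0,0,0,0,0,1], [0,0,0,0,0,1,0], [0,0,0,0,0,1,1], [0,0,0,0,1,0,0], [0,0,0,0,1,1,0], [0,0,0,0,1,1,1], [0,0,0,1,0,0,0], [0,0,0,1,1,0,0], [0,0,0,1,1,1,0], [0,0,0,1,1,1,1], [0,0,1,0,0,0,0], [0,0,1,1,0,0,0], [0,0,1,1,1,0,0], [0,0,1,1,1,1,0], [0,0,1,1,1,1,1], [0,1,0,0,0,0,0], [0,1,0,1,0,0,0], [0,1,0,1,1,0,0], [0,1,0,1,1,1,0], [0,1,0,1,1,1,1], [0,1,1,1,0,0,0], [0,1,1,1,1,0,0], [0,1,1,1,1,1,0],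 [0,1,1,1,1,1,1], [0,1,1,2,1,0,0], [0,1,1,2,1,1,0], [0,1,1,2,1,1,1], [0,1,1,2,2,1,0], [0,1,1,2,2,1,1], [0,1,1,2,2,2,1], [1,0,0,0,0,0,0], [1,0,1,0,0,0,0], [1,0,1,1,0,0,0], [1,0,1,1,1,0,0], [1,0,1,1,1,1,0], [1,0,1,1,1,1,1], [1,1,1,1,0,0,0], [1,1,1,1,1,0,0], [1,1,1,1,1,1,0], [1,1,1,1,1,1,1], [1,1,1,2,1,0,0], [1,1,1,2,1,1,0], [1,1,1,2,1,1,1], [1,1,1,2,2,1,0], [1,1,1,2,2,1,1], [1,1,1,2,2,2,1], [1,1,2,2,1,0,0], [1,1,2,2,1,1,0], [1,1,2,2,1,1,1], [1,1,2,2,2,1,0], [1,1,2,2,2,1,1], [1,1,2,2,2,2,1], [1,1,2,3,2,1,0], [1,1,2,3,2,1,1], [1,1,2,3,2,2,1], [1,1,2,3,3,2,1], [1,2,2,3,2,1,0], [1,2,2,3,2,1,1], [1,2,2,3,2,2,1], [1,2,2,3,3,2,1], [1,2,2,4,3,2,1], [1,2,3,4,3,2,1], [2,2,3,4,3,2,1]]"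
definition M_E7 :: "real list list" where "M_E7 = [[2, 2, 3, 4, 3, 2, 1], [2, 7/2, 4, 6, 9/2, 3, 3/2], [3, 4, 6, 8, 6, 4, 2], [4, 6, 8, 12, 9, 6, 3], [3, 9/2, 6, 9, 15/2, 5, 5/2], [2, 3, 4, 6, 5, 4, 2], [1, 3/2, 2, 3, 5/2, 2, 3/2]]"

lemma hr_E7: "highest_root TE 7 = vf [2,2,3,4,3,2,1]"
  by (rule highest_root_list[where ist=1 and ps="[3,4,2,5,4,3,6,5,4,2,7,6,5,4,3,1]" and R=R_E7]; code_simp)

lemma gr_E7: "grading_set TE 7 = {1}"
proof -
  have "grading_set TE 7 = set [1]" by (rule grading_list[OF hr_E7]; code_simp)
  then show ?thesis by simp
qed

lemma co_E7: "root_coords TE 7 c = (\<lambda>j. if j \<in> {1..7} then \<Sum>k\<in>{1..7}. Mx M_E7 j k * of_int (c k) else 0)"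
  by (rule coords_list(1); code_simp)

lemma w_E7: "j \<in> {1..7} \<Longrightarrow> (\<Sum>k\<in>{1..7}. (\<Sum>i\<in>{1..7}. Mx M_E7 i k) * of_int (cartan TE 7 k j)) > 0"
  by (rule coords_list(2)) (assumption | code_simp)+

lemma ev_E7: "eval_E TE 7 c = (\<Sum>k\<in>{1..7}. Mx M_E7 1 k * of_int (c k))"
  using eval_E_eq[OF co_E7] gr_E7 by simp

lemma mc_E7: "\<forall>k\<in>set [1..<8]. 1 \<le> Mx M_E7 1 k \<and> (Mx M_E7 1 k = 1 \<longleftrightarrow> k \<in> set [7])"
  by code_simp

lemma m_E7: "k \<in> {1..7} \<Longrightarrow> 1 \<le> Mx M_E7 1 k \<and> (Mx M_E7 1 k = 1 \<longleftrightarrow> k \<in> set [7])"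
proof -
  assume "k \<in> {1..7}"
  then have "k \<in> set [1..<8]" by auto
  then show ?thesis using mc_E7 by blast
qed

definition O_E7_7 :: "int list list" where "O_E7_7 = [[-1,-1,0,1,0,0,0], [-1,-1,1,0,0,0,0], [-1,0,0,0,0,0,1], [-1,0,0,0,0,1,-1], [-1,0,0,0,1,-1,0], [-1,0,0,1,-1,0,0], [-1,0,1,-1,1,0,0], [-1,0,1,0,-1,1,0], [-1,0,1,0,0,-1,1], [-1,0,1,0,0,0,-1], [-1,1,0,0,0,0,0], [-1,1,1,-1,0,0,0], [0,-1,-1,1,0,0,0], [0,-1,0,0,0,1,0], [0,-1,0,0,1,-1,1], [0,-1,0,0,1,0,-1], [0,-1,0,1,-1,0,1], [0,-1,0,1,-1,1,-1], [0,-1,0,1,0,-1,0], [0,-1,1,0,0,0,0], [0,0,-1,0,1,0,0], [0,0,-1,1,-1,1,0], [0,0,-1,1,0,-1,1], [0,0,-1,1,0,0,-1], [0,0,0,-1,1,0,0], [0,0,0,0,-1,1,0], [0,0,0,0,0,-1,1], [0,0,0,0,0,0,-1], [0,0,0,0,0,0,1], [0,0,0,0,0,1,-1], [0,0,0,0,1,-1,0], [0,0,0,1,-1,0,0], [0,0,1,-1,0,0,1], [0,0,1,-1,0,1,-1], [0,0,1,-1,1,-1,0], [0,0,1,0,-1,0,0], [0,1,-1,0,0,0,0], [0,1,0,-1,0,1,0], [0,1,0,-1,1,-1,1], [0,1,0,-1,1,0,-1], [0,1,0,0,-1,0,1], [0,1,0,0,-1,1,-1], [0,1,0,0,0,-1,0],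 [0,1,1,-1,0,0,0], [1,-1,-1,1,0,0,0], [1,-1,0,0,0,0,0], [1,0,-1,0,0,0,1], [1,0,-1,0,0,1,-1], [1,0,-1,0,1,-1,0], [1,0,-1,1,-1,0,0], [1,0,0,-1,1,0,0], [1,0,0,0,-1,1,0], [1,0,0,0,0,-1,1], [1,0,0,0,0,0,-1], [1,1,-1,0,0,0,0], [1,1,0,-1,0,0,0]]"

lemma du_E7_7: "dual_hw TE 7 (unitv 7) = unitv 7"
proof -
  have "dual_hw TE 7 (unitv 7) = vf (unitL 7 7)"
    by (rule dual_list[OF w_E7, where OL = O_E7_7]) (code_simp | simp)+
  then show ?thesis using unitv_vf[of 7 7] by simp
qed


lemma main_E7:
  assumes "dominant 7 c"
  shows "grading_set TE 7 = expected_I TE 7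
    \<and> (eval_E TE 7 c = 1 \<longleftrightarrow> listed TE 7 c)
    \<and> (listed TE 7 c \<longrightarrow> eval_E TE 7 (dual_hw TE 7 c) = 1)
    \<and> (TE = TE \<and> (7::nat) = 8 \<and> c \<noteq> (\<lambda>_. 0) \<longrightarrow> eval_E TE 7 c > 1)"
proof (rule finish[where m = "\<lambda>k. Mx M_E7 1 k"])
  show "grading_set TE 7 = expected_I TE 7" using gr_E7 by (simp add: expected_I_def)
  show "\<And>c. eval_E TE 7 c = (\<Sum>k\<in>{1..7}. Mx M_E7 1 k * of_int (c k))" by (rule ev_E7)
  show "\<And>k. k \<in> {1..7} \<Longrightarrow> 1 \<le> Mx M_E7 1 k" using m_E7 by fastforce
  show "\<And>c. listed TE 7 c = (\<exists>k\<in>{1..7}. c = unitv k \<and> Mx M_E7 1 k = 1)"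
    using m_E7 by (auto simp: listed_def)
  show "\<And>k. k \<in> {1..7} \<Longrightarrow> Mx M_E7 1 k = 1 \<Longrightarrow> \<exists>k'\<in>{1..7}. Mx M_E7 1 k' = 1 \<and> dual_hw TE 7 (unitv k) = unitv k'"
    using m_E7 du_E7_7 by auto
  show "TE = TE \<and> (7::nat) = 8 \<Longrightarrow> \<forall>k\<in>{1..7}. 2 \<le> Mx M_E7 1 k" using m_E7 by auto
qed (rule assms)

definition R_E8 :: "int list list" where "R_E8 = [[-2,-3,-4,-6,-5,-4,-3,-2], [-2,-3,-4,-6,-5,-4,-3,-1], [-2,-3,-4,-6,-5,-4,-2,-1], [-2,-3,-4,-6,-5,-3,-2,-1], [-2,-3,-4,-6,-4,-3,-2,-1], [-2,-3,-4,-5,-4,-3,-2,-1], [-2,-3,-3,-5,-4,-3,-2,-1], [-2,-2,-4,-5,-4,-3,-2,-1], [-2,-2,-3,-5,-4,-3,-2,-1], [-2,-2,-3,-4,-4,-3,-2,-1], [-2,-2,-3,-4,-3,-3,-2,-1], [-2,-2,-3,-4,-3,-2,-2,-1], [-2,-2,-3,-4,-3,-2,-1,-1], [-2,-2,-3,-4,-3,-2,-1,0], [-1,-3,-3,-5,-4,-3,-2,-1], [-1,-2,-3,-5,-4,-3,-2,-1], [-1,-2,-3,-4,-4,-3,-2,-1], [-1,-2,-3,-4,-3,-3,-2,-1], [-1,-2,-3,-4,-3,-2,-2,-1], [-1,-2,-3,-4,-3,-2,-1,-1], [-1,-2,-3,-4,-3,-2,-1,0], [-1,-2,-2,-4,-4,-3,-2,-1],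 [-1,-2,-2,-4,-3,-3,-2,-1], [-1,-2,-2,-4,-3,-2,-2,-1], [-1,-2,-2,-4,-3,-2,-1,-1], [-1,-2,-2,-4,-3,-2,-1,0], [-1,-2,-2,-3,-3,-3,-2,-1], [-1,-2,-2,-3,-3,-2,-2,-1], [-1,-2,-2,-3,-3,-2,-1,-1], [-1,-2,-2,-3,-3,-2,-1,0], [-1,-2,-2,-3,-2,-2,-2,-1], [-1,-2,-2,-3,-2,-2,-1,-1], [-1,-2,-2,-3,-2,-2,-1,0], [-1,-2,-2,-3,-2,-1,-1,-1], [-1,-2,-2,-3,-2,-1,-1,0], [-1,-2,-2,-3,-2,-1,0,0], [-1,-1,-2,-3,-3,-3,-2,-1], [-1,-1,-2,-3,-3,-2,-2,-1], [-1,-1,-2,-3,-3,-2,-1,-1], [-1,-1,-2,-3,-3,-2,-1,0], [-1,-1,-2,-3,-2,-2,-2,-1], [-1,-1,-2,-3,-2,-2,-1,-1], [-1,-1,-2,-3,-2,-2,-1,0], [-1,-1,-2,-3,-2,-1,-1,-1], [-1,-1,-2,-3,-2,-1,-1,0], [-1,-1,-2,-3,-2,-1,0,0], [-1,-1,-2,-2,-2,-2,-2,-1], [-1,-1,-2,-2,-2,-2,-1,-1], [-1,-1,-2,-2,-2,-2,-1,0], [-1,-1,-2,-2,-2,-1,-1,-1], [-1,-1,-2,-2,-2,-1,-1,0], [-1,-1,-2,-2,-2,-1,0,0], [-1,-1,-2,-2,-1,-1,-1,-1], [-1,-1,-2,-2,-1,-1,-1,0], [-1,-1,-2,-2,-1,-1,0,0],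 [-1,-1,-2,-2,-1,0,0,0], [-1,-1,-1,-2,-2,-2,-2,-1], [-1,-1,-1,-2,-2,-2,-1,-1], [-1,-1,-1,-2,-2,-2,-1,0], [-1,-1,-1,-2,-2,-1,-1,-1], [-1,-1,-1,-2,-2,-1,-1,0], [-1,-1,-1,-2,-2,-1,0,0], [-1,-1,-1,-2,-1,-1,-1,-1], [-1,-1,-1,-2,-1,-1,-1,0], [-1,-1,-1,-2,-1,-1,0,0], [-1,-1,-1,-2,-1,0,0,0], [-1,-1,-1,-1,-1,-1,-1,-1], [-1,-1,-1,-1,-1,-1,-1,0], [-1,-1,-1,-1,-1,-1,0,0], [-1,-1,-1,-1,-1,0,0,0], [-1,-1,-1,-1,0,0,0,0], [-1,0,-1,-1,-1,-1,-1,-1], [-1,0,-1,-1,-1,-1,-1,0], [-1,0,-1,-1,-1,-1,0,0], [-1,0,-1,-1,-1,0,0,0], [-1,0,-1,-1,0,0,0,0], [-1,0,-1,0,0,0,0,0], [-1,0,0,0,0,0,0,0], [0,-1,-1,-2,-2,-2,-2,-1], [0,-1,-1,-2,-2,-2,-1,-1], [0,-1,-1,-2,-2,-2,-1,0], [0,-1,-1,-2,-2,-1,-1,-1], [0,-1,-1,-2,-2,-1,-1,0], [0,-1,-1,-2,-2,-1,0,0], [0,-1,-1,-2,-1,-1,-1,-1], [0,-1,-1,-2,-1,-1,-1,0], [0,-1,-1,-2,-1,-1,0,0], [0,-1,-1,-2,-1,0,0,0], [0,-1,-1,-1,-1,-1,-1,-1], [0,-1,-1,-1,-1,-1,-1,0],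 [0,-1,-1,-1,-1,-1,0,0], [0,-1,-1,-1,-1,0,0,0], [0,-1,-1,-1,0,0,0,0], [0,-1,0,-1,-1,-1,-1,-1], [0,-1,0,-1,-1,-1,-1,0], [0,-1,0,-1,-1,-1,0,0], [0,-1,0,-1,-1,0,0,0], [0,-1,0,-1,0,0,0,0], [0,-1,0,0,0,0,0,0], [0,0,-1,-1,-1,-1,-1,-1], [0,0,-1,-1,-1,-1,-1,0], [0,0,-1,-1,-1,-1,0,0], [0,0,-1,-1,-1,0,0,0], [0,0,-1,-1,0,0,0,0], [0,0,-1,0,0,0,0,0], [0,0,0,-1,-1,-1,-1,-1], [0,0,0,-1,-1,-1,-1,0], [0,0,0,-1,-1,-1,0,0], [0,0,0,-1,-1,0,0,0], [0,0,0,-1,0,0,0,0], [0,0,0,0,-1,-1,-1,-1], [0,0,0,0,-1,-1,-1,0], [0,0,0,0,-1,-1,0,0], [0,0,0,0,-1,0,0,0], [0,0,0,0,0,-1,-1,-1], [0,0,0,0,0,-1,-1,0], [0,0,0,0,0,-1,0,0], [0,0,0,0,0,0,-1,-1], [0,0,0,0,0,0,-1,0], [0,0,0,0,0,0,0,-1], [0,0,0,0,0,0,0,1], [0,0,0,0,0,0,1,0], [0,0,0,0,0,0,1,1], [0,0,0,0,0,1,0,0], [0,0,0,0,0,1,1,0], [0,0,0,0,0,1,1,1], [0,0,0,0,1,0,0,0], [0,0,0,0,1,1,0,0], [0,0,0,0,1,1,1,0], [0,0,0,0,1,1,1,1], [0,0,0,1,0,0,0,0], [0,0,0,1,1,0,0,0],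 [0,0,0,1,1,1,0,0], [0,0,0,1,1,1,1,0], [0,0,0,1,1,1,1,1], [0,0,1,0,0,0,0,0], [0,0,1,1,0,0,0,0], [0,0,1,1,1,0,0,0], [0,0,1,1,1,1,0,0], [0,0,1,1,1,1,1,0], [0,0,1,1,1,1,1,1], [0,1,0,0,0,0,0,0], [0,1,0,1,0,0,0,0], [0,1,0,1,1,0,0,0], [0,1,0,1,1,1,0,0], [0,1,0,1,1,1,1,0], [0,1,0,1,1,1,1,1], [0,1,1,1,0,0,0,0], [0,1,1,1,1,0,0,0], [0,1,1,1,1,1,0,0], [0,1,1,1,1,1,1,0], [0,1,1,1,1,1,1,1], [0,1,1,2,1,0,0,0], [0,1,1,2,1,1,0,0], [0,1,1,2,1,1,1,0], [0,1,1,2,1,1,1,1], [0,1,1,2,2,1,0,0], [0,1,1,2,2,1,1,0], [0,1,1,2,2,1,1,1], [0,1,1,2,2,2,1,0], [0,1,1,2,2,2,1,1], [0,1,1,2,2,2,2,1], [1,0,0,0,0,0,0,0], [1,0,1,0,0,0,0,0], [1,0,1,1,0,0,0,0], [1,0,1,1,1,0,0,0], [1,0,1,1,1,1,0,0], [1,0,1,1,1,1,1,0], [1,0,1,1,1,1,1,1], [1,1,1,1,0,0,0,0], [1,1,1,1,1,0,0,0], [1,1,1,1,1,1,0,0], [1,1,1,1,1,1,1,0], [1,1,1,1,1,1,1,1], [1,1,1,2,1,0,0,0], [1,1,1,2,1,1,0,0], [1,1,1,2,1,1,1,0], [1,1,1,2,1,1,1,1], [1,1,1,2,2,1,0,0],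 [1,1,1,2,2,1,1,0], [1,1,1,2,2,1,1,1], [1,1,1,2,2,2,1,0], [1,1,1,2,2,2,1,1], [1,1,1,2,2,2,2,1], [1,1,2,2,1,0,0,0], [1,1,2,2,1,1,0,0], [1,1,2,2,1,1,1,0], [1,1,2,2,1,1,1,1], [1,1,2,2,2,1,0,0], [1,1,2,2,2,1,1,0], [1,1,2,2,2,1,1,1], [1,1,2,2,2,2,1,0], [1,1,2,2,2,2,1,1], [1,1,2,2,2,2,2,1], [1,1,2,3,2,1,0,0], [1,1,2,3,2,1,1,0], [1,1,2,3,2,1,1,1], [1,1,2,3,2,2,1,0], [1,1,2,3,2,2,1,1], [1,1,2,3,2,2,2,1], [1,1,2,3,3,2,1,0], [1,1,2,3,3,2,1,1], [1,1,2,3,3,2,2,1], [1,1,2,3,3,3,2,1], [1,2,2,3,2,1,0,0], [1,2,2,3,2,1,1,0], [1,2,2,3,2,1,1,1], [1,2,2,3,2,2,1,0], [1,2,2,3,2,2,1,1], [1,2,2,3,2,2,2,1], [1,2,2,3,3,2,1,0], [1,2,2,3,3,2,1,1], [1,2,2,3,3,2,2,1], [1,2,2,3,3,3,2,1], [1,2,2,4,3,2,1,0], [1,2,2,4,3,2,1,1], [1,2,2,4,3,2,2,1], [1,2,2,4,3,3,2,1], [1,2,2,4,4,3,2,1], [1,2,3,4,3,2,1,0], [1,2,3,4,3,2,1,1], [1,2,3,4,3,2,2,1], [1,2,3,4,3,3,2,1], [1,2,3,4,4,3,2,1], [1,2,3,5,4,3,2,1], [1,3,3,5,4,3,2,1],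 [2,2,3,4,3,2,1,0], [2,2,3,4,3,2,1,1], [2,2,3,4,3,2,2,1], [2,2,3,4,3,3,2,1], [2,2,3,4,4,3,2,1], [2,2,3,5,4,3,2,1], [2,2,4,5,4,3,2,1], [2,3,3,5,4,3,2,1], [2,3,4,5,4,3,2,1], [2,3,4,6,4,3,2,1], [2,3,4,6,5,3,2,1], [2,3,4,6,5,4,2,1], [2,3,4,6,5,4,3,1], [2,3,4,6,5,4,3,2]]"
definition M_E8 :: "real list list" where "M_E8 = [[4, 5, 7, 10, 8, 6, 4, 2], [5, 8, 10, 15, 12, 9, 6, 3], [7, 10, 14, 20, 16, 12, 8, 4], [10, 15, 20, 30, 24, 18, 12, 6], [8, 12, 16, 24, 20, 15, 10, 5], [6, 9, 12, 18, 15, 12, 8, 4], [4, 6, 8, 12, 10, 8, 6, 3], [2, 3, 4, 6, 5, 4, 3, 2]]"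

lemma hr_E8: "highest_root TE 8 = vf [2,3,4,6,5,4,3,2]"
  by (rule highest_root_list[where ist=1 and ps="[3,4,2,5,4,3,6,5,4,2,7,6,5,4,3,1,8,7,6,5,4,2,3,4,5,6,7,8]" and R=R_E8]; code_simp)

lemma gr_E8: "grading_set TE 8 = {8}"
proof -
  have "grading_set TE 8 = set [8]" by (rule grading_list[OF hr_E8]; code_simp)
  then show ?thesis by simp
qed

lemma co_E8: "root_coords TE 8 c = (\<lambda>j. if j \<in> {1..8} then \<Sum>k\<in>{1..8}. Mx M_E8 j k * of_int (c k) else 0)"
  by (rule coords_list(1); code_simp)

lemma w_E8: "j \<in> {1..8} \<Longrightarrow> (\<Sum>k\<in>{1..8}. (\<Sum>i\<in>{1..8}. Mx M_E8 i k) * of_int (cartan TE 8 k j)) > 0"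
  by (rule coords_list(2)) (assumption | code_simp)+

lemma ev_E8: "eval_E TE 8 c = (\<Sum>k\<in>{1..8}. Mx M_E8 8 k * of_int (c k))"
  using eval_E_eq[OF co_E8] gr_E8 by simp

lemma mc_E8: "\<forall>k\<in>set [1..<9]. 2 \<le> Mx M_E8 8 k \<and> (Mx M_E8 8 k = 1 \<longleftrightarrow> k \<in> set [])"
  by code_simp

lemma m_E8: "k \<in> {1..8} \<Longrightarrow> 2 \<le> Mx M_E8 8 k \<and> (Mx M_E8 8 k = 1 \<longleftrightarrow> k \<in> set [])"
proof -
  assume "k \<in> {1..8}"
  then have "k \<in> set [1..<9]" by auto
  then show ?thesis using mc_E8 by blast
qed


lemma main_E8:
  assumes "dominant 8 c"
  shows "grading_set TE 8 = expected_I TE 8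
    \<and> (eval_E TE 8 c = 1 \<longleftrightarrow> listed TE 8 c)
    \<and> (listed TE 8 c \<longrightarrow> eval_E TE 8 (dual_hw TE 8 c) = 1)
    \<and> (TE = TE \<and> (8::nat) = 8 \<and> c \<noteq> (\<lambda>_. 0) \<longrightarrow> eval_E TE 8 c > 1)"
proof (rule finish[where m = "\<lambda>k. Mx M_E8 8 k"])
  show "grading_set TE 8 = expected_I TE 8" using gr_E8 by (simp add: expected_I_def)
  show "\<And>c. eval_E TE 8 c = (\<Sum>k\<in>{1..8}. Mx M_E8 8 k * of_int (c k))" by (rule ev_E8)
  show "\<And>k. k \<in> {1..8} \<Longrightarrow> 1 \<le> Mx M_E8 8 k" using m_E8 by fastforce
  show "\<And>c. listed TE 8 c = (\<exists>k\<in>{1..8}. c = unitv k \<and> Mx M_E8 8 k = 1)"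
    using m_E8 by (auto simp: listed_def)
  show "\<And>k. k \<in> {1..8} \<Longrightarrow> Mx M_E8 8 k = 1 \<Longrightarrow> \<exists>k'\<in>{1..8}. Mx M_E8 8 k' = 1 \<and> dual_hw TE 8 (unitv k) = unitv k'"
    using m_E8  by auto
  show "TE = TE \<and> (8::nat) = 8 \<Longrightarrow> \<forall>k\<in>{1..8}. 2 \<le> Mx M_E8 8 k" using m_E8 by auto
qed (rule assms)

definition R_F4 :: "int list list" where "R_F4 = [[-2,-3,-4,-2], [-1,-3,-4,-2], [-1,-2,-4,-2], [-1,-2,-3,-2], [-1,-2,-3,-1], [-1,-2,-2,-2], [-1,-2,-2,-1], [-1,-2,-2,0], [-1,-1,-2,-2], [-1,-1,-2,-1], [-1,-1,-2,0], [-1,-1,-1,-1], [-1,-1,-1,0], [-1,-1,0,0], [-1,0,0,0], [0,-1,-2,-2], [0,-1,-2,-1], [0,-1,-2,0], [0,-1,-1,-1], [0,-1,-1,0], [0,-1,0,0], [0,0,-1,-1], [0,0,-1,0], [0,0,0,-1], [0,0,0,1], [0,0,1,0], [0,0,1,1], [0,1,0,0], [0,1,1,0], [0,1,1,1], [0,1,2,0], [0,1,2,1], [0,1,2,2], [1,0,0,0], [1,1,0,0], [1,1,1,0], [1,1,1,1], [1,1,2,0], [1,1,2,1], [1,1,2,2], [1,2,2,0], [1,2,2,1], [1,2,2,2], [1,2,3,1], [1,2,3,2], [1,2,4,2], [1,3,4,2], [2,3,4,2]]"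
definition M_F4 :: "real list list" where "M_F4 = [[2, 3, 2, 1], [3, 6, 4, 2], [4, 8, 6, 3], [2, 4, 3, 2]]"

lemma hr_F4: "highest_root TF 4 = vf [2,3,4,2]"
  by (rule highest_root_list[where ist=1 and ps="[2,3,2,4,3,2,1]" and R=R_F4]; code_simp)

lemma gr_F4: "grading_set TF 4 = {1}"
proof -
  have "grading_set TF 4 = set [1]" by (rule grading_list[OF hr_F4]; code_simp)
  then show ?thesis by simp
qed

lemma co_F4: "root_coords TF 4 c = (\<lambda>j. if j \<in> {1..4} then \<Sum>k\<in>{1..4}. Mx M_F4 j k * of_int (c k) else 0)"
  by (rule coords_list(1); code_simp)

lemma w_F4: "j \<in> {1..4} \<Longrightarrow> (\<Sum>k\<in>{1..4}. (\<Sum>i\<in>{1..4}. Mx M_F4 i k) * of_int (cartan TF 4 k j)) > 0"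
  by (rule coords_list(2)) (assumption | code_simp)+

lemma ev_F4: "eval_E TF 4 c = (\<Sum>k\<in>{1..4}. Mx M_F4 1 k * of_int (c k))"
  using eval_E_eq[OF co_F4] gr_F4 by simp

lemma mc_F4: "\<forall>k\<in>set [1..<5]. 1 \<le> Mx M_F4 1 k \<and> (Mx M_F4 1 k = 1 \<longleftrightarrow> k \<in> set [4])"
  by code_simp

lemma m_F4: "k \<in> {1..4} \<Longrightarrow> 1 \<le> Mx M_F4 1 k \<and> (Mx M_F4 1 k = 1 \<longleftrightarrow> k \<in> set [4])"
proof -
  assume "k \<in> {1..4}"
  then have "k \<in> set [1..<5]" by auto
  then show ?thesis using mc_F4 by blast
qed

definition O_F4_4 :: "int list list" where "O_F4_4 = [[-1,0,0,1], [-1,0,1,-1], [-1,0,1,0], [-1,1,-1,0], [-1,1,-1,1], [-1,1,0,-1], [0,-1,1,0], [0,-1,1,1], [0,-1,2,-1], [0,0,-1,1], [0,0,-1,2], [0,0,0,-1], [0,0,0,1], [0,0,1,-2], [0,0,1,-1], [0,1,-2,1], [0,1,-1,-1], [0,1,-1,0], [1,-1,0,1], [1,-1,1,-1], [1,-1,1,0], [1,0,-1,0], [1,0,-1,1], [1,0,0,-1]]"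

lemma du_F4_4: "dual_hw TF 4 (unitv 4) = unitv 4"
proof -
  have "dual_hw TF 4 (unitv 4) = vf (unitL 4 4)"
    by (rule dual_list[OF w_F4, where OL = O_F4_4]) (code_simp | simp)+
  then show ?thesis using unitv_vf[of 4 4] by simp
qed


lemma main_F4:
  assumes "dominant 4 c"
  shows "grading_set TF 4 = expected_I TF 4
    \<and> (eval_E TF 4 c = 1 \<longleftrightarrow> listed TF 4 c)
    \<and> (listed TF 4 c \<longrightarrow> eval_E TF 4 (dual_hw TF 4 c) = 1)
    \<and> (TF = TE \<and> (4::nat) = 8 \<and> c \<noteq> (\<lambda>_. 0) \<longrightarrow> eval_E TF 4 c > 1)"
proof (rule finish[where m = "\<lambda>k. Mx M_F4 1 k"])
  show "grading_set TF 4 = expected_I TF 4" using gr_F4 by (simp add: expected_I_def)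
  show "\<And>c. eval_E TF 4 c = (\<Sum>k\<in>{1..4}. Mx M_F4 1 k * of_int (c k))" by (rule ev_F4)
  show "\<And>k. k \<in> {1..4} \<Longrightarrow> 1 \<le> Mx M_F4 1 k" using m_F4 by fastforce
  show "\<And>c. listed TF 4 c = (\<exists>k\<in>{1..4}. c = unitv k \<and> Mx M_F4 1 k = 1)"
    using m_F4 by (auto simp: listed_def)
  show "\<And>k. k \<in> {1..4} \<Longrightarrow> Mx M_F4 1 k = 1 \<Longrightarrow> \<exists>k'\<in>{1..4}. Mx M_F4 1 k' = 1 \<and> dual_hw TF 4 (unitv k) = unitv k'"
    using m_F4 du_F4_4 by auto
  show "TF = TE \<and> (4::nat) = 8 \<Longrightarrow> \<forall>k\<in>{1..4}. 2 \<le> Mx M_F4 1 k" using m_F4 by auto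
qed (rule assms)

definition R_G2 :: "int list list" where "R_G2 = [[-3,-2], [-3,-1], [-2,-1], [-1,-1], [-1,0], [0,-1], [0,1], [1,0], [1,1], [2,1], [3,1], [3,2]]"
definition M_G2 :: "real list list" where "M_G2 = [[2, 3], [1, 2]]"

lemma hr_G2: "highest_root TG 2 = vf [3,2]"
  by (rule highest_root_list[where ist=2 and ps="[1,2]" and R=R_G2]; code_simp)

lemma gr_G2: "grading_set TG 2 = {2}"
proof -
  have "grading_set TG 2 = set [2]" by (rule grading_list[OF hr_G2]; code_simp)
  then show ?thesis by simp
qed

lemma co_G2: "root_coords TG 2 c = (\<lambda>j. if j \<in> {1..2} then \<Sum>k\<in>{1..2}. Mx M_G2 j k * of_int (c k) else 0)"
  by (rule coords_list(1); code_simp)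

lemma w_G2: "j \<in> {1..2} \<Longrightarrow> (\<Sum>k\<in>{1..2}. (\<Sum>i\<in>{1..2}. Mx M_G2 i k) * of_int (cartan TG 2 k j)) > 0"
  by (rule coords_list(2)) (assumption | code_simp)+

lemma ev_G2: "eval_E TG 2 c = (\<Sum>k\<in>{1..2}. Mx M_G2 2 k * of_int (c k))"
  using eval_E_eq[OF co_G2] gr_G2 by simp

lemma mc_G2: "\<forall>k\<in>set [1..<3]. 1 \<le> Mx M_G2 2 k \<and> (Mx M_G2 2 k = 1 \<longleftrightarrow> k \<in> set [1])"
  by code_simp

lemma m_G2: "k \<in> {1..2} \<Longrightarrow> 1 \<le> Mx M_G2 2 k \<and> (Mx M_G2 2 k = 1 \<longleftrightarrow> k \<in> set [1])"
proof -
  assume "k \<in> {1..2}"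
  then have "k \<in> set [1..<3]" by auto
  then show ?thesis using mc_G2 by blast
qed

definition O_G2_1 :: "int list list" where "O_G2_1 = [[-2,1], [-1,0], [-1,1], [1,-1], [1,0], [2,-1]]"

lemma du_G2_1: "dual_hw TG 2 (unitv 1) = unitv 1"
proof -
  have "dual_hw TG 2 (unitv 1) = vf (unitL 2 1)"
    by (rule dual_list[OF w_G2, where OL = O_G2_1]) (code_simp | simp)+
  then show ?thesis using unitv_vf[of 1 2] by simp
qed


lemma main_G2:
  assumes "dominant 2 c"
  shows "grading_set TG 2 = expected_I TG 2
    \<and> (eval_E TG 2 c = 1 \<longleftrightarrow> listed TG 2 c)
    \<and> (listed TG 2 c \<longrightarrow> eval_E TG 2 (dual_hw TG 2 c) = 1)
    \<and> (TG = TE \<and> (2::nat) = 8 \<and> c \<noteq> (\<lambda>_. 0) \<longrightarrow> eval_E TG 2 c > 1)"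
proof (rule finish[where m = "\<lambda>k. Mx M_G2 2 k"])
  show "grading_set TG 2 = expected_I TG 2" using gr_G2 by (simp add: expected_I_def)
  show "\<And>c. eval_E TG 2 c = (\<Sum>k\<in>{1..2}. Mx M_G2 2 k * of_int (c k))" by (rule ev_G2)
  show "\<And>k. k \<in> {1..2} \<Longrightarrow> 1 \<le> Mx M_G2 2 k" using m_G2 by fastforce
  show "\<And>c. listed TG 2 c = (\<exists>k\<in>{1..2}. c = unitv k \<and> Mx M_G2 2 k = 1)"
    using m_G2 by (auto simp: listed_def)
  show "\<And>k. k \<in> {1..2} \<Longrightarrow> Mx M_G2 2 k = 1 \<Longrightarrow> \<exists>k'\<in>{1..2}. Mx M_G2 2 k' = 1 \<and> dual_hw TG 2 (unitv k) = unitv k'"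
    using m_G2 du_G2_1 by auto
  show "TG = TE \<and> (2::nat) = 8 \<Longrightarrow> \<forall>k\<in>{1..2}. 2 \<le> Mx M_G2 2 k" using m_G2 by auto
qed (rule assms)



theorem lemma3p12:
  fixes t :: ltype and r :: nat and c :: "nat \<Rightarrow> int"
  assumes "valid_type t r"
    and "dominant r c"
  shows "grading_set t r = expected_I t r
    \<and> (eval_E t r c = 1 \<longleftrightarrow> listed t r c)
    \<and> (listed t r c \<longrightarrow> eval_E t r (dual_hw t r c) = 1)
    \<and> (t = TE \<and> r = 8 \<and> c \<noteq> (\<lambda>_. 0) \<longrightarrow> eval_E t r c > 1)"
proof (cases t)
  case TA then show ?thesis using main_A[of r c] assms by simp
next
  case TB then show ?thesis using main_B[of r c] assms by simp
next
  case TC then show ?thesis using main_C[of r c] assms by simp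
next
  case TD then show ?thesis using main_D[of r c] assms by simp
next
  case TE
  then have "r = 6 \<or> r = 7 \<or> r = 8" using assms(1) by (simp add: valid_type_def)
  then show ?thesis
  proof (elim disjE)
    assume "r = 6" then show ?thesis using main_E6[of c] assms TE by simp
  next
    assume "r = 7" then show ?thesis using main_E7[of c] assms TE by simp
  next
    assume "r = 8" then show ?thesis using main_E8[of c] assms TE by simp
  qed
next
  case TF
  then have "r = 4" using assms(1) by (simp add: valid_type_def)
  then show ?thesis using main_F4[of c] assms TF by simp
next
  case TG
  then have "r = 2" using assms(1) by (simp add: valid_type_def)
  then show ?thesis using main_G2[of c] assms TG by simp
qed

end
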